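(* Given a triangle-free plane graph $G$ (represented by rotation-ordered doubly linked adjacency lists) and a vertex $v\in V(G)$, it can be decided in constant time whether $G$ has a secure multigram with pivot $v$.
   Context: Representation: for each vertex, its neighbors are listed in the clockwise cyclic order around it, and the two occurrences of each edge are linked to each other. All graphs are finite and simple; a plane graph is drawn in the plane without crossings. A cycle is facial if it bounds a face of some connected component of $G$. A vertex is big if it has degree at least $60$, and small otherwise; here "admissible" means small, "forbidden" means big. Multigrams: a monogram is $(v_1)$ with $\deg(v_1)\le 2$. A tetragram (resp. hexagram) is a sequence $(v_1,\dots,v_4)$ (resp. $(v_1,\dots,v_6)$) of vertices forming a facial cycle in that order. A pentagram is a sequence $(v_1,\dots,v_5)$ forming a facial cycle in that order with $v_1,\dots,v_4$ of degree exactly $3$. A decagram is a pentagram with $\deg(v_5)=3$; an octagram is a tetragram all of whose vertices have degree $3$. The pivot is $v_1$. For pentagrams and decagrams, $x_i$ ($i=1,\dots,4$) is the neighbor of $v_i$ other than $v_{i-1},v_{i+1}$ ($v_0=v_5$). Secure multigrams: a monogram is always secure. A tetragram is secure if every path in $G$ of length at most $3$ with ends $v_1,v_3$ lies in the cycle $v_1v_2v_3v_4$ (safety), $v_1$ is small of degree exactly $3$, the neighbor $x$ of $v_1$ other than $v_2,v_4$ is small, and either $v_3$ is small or every neighbor $w$ of $x$ is small or lies on a $4$-face $v_1v_2wx$ or $v_1v_4wx$. An octagram is secure if $v_1,\dots,v_4$ are small. A decagram is secure if $x_1,x_3$ are distinct, non-adjacent, have no common neighbor, and $v_1,\dots,v_5,x_1,x_3$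 are small. A pentagram is secure if $x_1,\dots,x_4$ are pairwise distinct and non-adjacent, there is no path in $G\setminus\{v_1,\dots,v_4\}$ of length at most $3$ from $x_2$ to $v_5$, every path in $G\setminus\{v_1,\dots,v_4\}$ of length at most $3$ from $x_3$ to $x_4$ has length exactly $2$ and with $x_3v_3v_4x_4$ forms a facial $5$-cycle, the vertices $v_1,\dots,v_5,x_1,\dots,x_4$ are small, at least one of $v_5,x_2$ has no big neighbor, and at least one of $x_3,x_4$ has no big neighbor. A hexagram is secure if every path of length at most $3$ in $G$ between $v_1$ and $v_3$ is $v_1v_2v_3$, $v_1,v_3,v_6$ are small, $v_1$ has degree exactly $3$, and the neighbor of $v_1$ other than $v_2,v_6$ is small. *)

theory Defs
  imports Main
begin

text \<open>Each dart d is one occurrence of an edge in the adjacency list of its tail vertex.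
  twin links the two occurrences of an edge, succ gives the next entry in the clockwise
  cyclic order around the tail (its inverse, the previous entry, is also accessible).\<close>

record ('v, 'd) rotsys =
  verts :: "'v set"
  darts :: "'d set"
  tail  :: "'d \<Rightarrow> 'v"
  twin  :: "'d \<Rightarrow> 'd"
  succ  :: "'d \<Rightarrow> 'd"

definition pred_dart :: "('v, 'd) rotsys \<Rightarrow> 'd \<Rightarrow> 'd" where
  "pred_dart G = inv_into (darts G) (succ G)"

definition wf_rotsys :: "('v, 'd) rotsys \<Rightarrow> bool" where
  "wf_rotsys G \<longleftrightarrow>
     finite (verts G) \<and> finite (darts G) \<and>
     (\<forall>d\<in>darts G. tail G d \<in> verts G \<and> twin G d \<in> darts G \<and> twin G d \<noteq> d \<and>
                   twin G (twin G d) = d \<and> succ G d \<in> darts G \<and> tail G (succ G d) = tail G d) \<and>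
     bij_betw (succ G) (darts G) (darts G) \<and>
     (\<forall>d\<in>darts G. \<forall>d'\<in>darts G. tail G d = tail G d' \<longrightarrow> (\<exists>n. (succ G ^^ n) d = d'))"

definition head :: "('v, 'd) rotsys \<Rightarrow> 'd \<Rightarrow> 'v" where
  "head G d = tail G (twin G d)"

definition simple_rotsys :: "('v, 'd) rotsys \<Rightarrow> bool" where
  "simple_rotsys G \<longleftrightarrow>
     (\<forall>d\<in>darts G. head G d \<noteq> tail G d) \<and>
     (\<forall>d\<in>darts G. \<forall>d'\<in>darts G. tail G d = tail G d' \<and> head G d = head G d' \<longrightarrow> d = d')"

definition adj :: "('v, 'd) rotsys \<Rightarrow> 'v \<Rightarrow> 'v \<Rightarrow> bool" where
  "adj G u w \<longleftrightarrow> (\<exists>d\<in>darts G. tail G d = u \<and> head G d = w)"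

definition deg :: "('v, 'd) rotsys \<Rightarrow> 'v \<Rightarrow> nat" where
  "deg G v = card {d\<in>darts G. tail G d = v}"

text \<open>Face traversal permutation: faces are the orbits of phi.\<close>
definition phi :: "('v, 'd) rotsys \<Rightarrow> 'd \<Rightarrow> 'd" where
  "phi G d = succ G (twin G d)"

definition face_orbit :: "('v, 'd) rotsys \<Rightarrow> 'd \<Rightarrow> 'd set" where
  "face_orbit G d = {(phi G ^^ n) d | n. True}"

definition component :: "('v, 'd) rotsys \<Rightarrow> 'v \<Rightarrow> 'v set" where
  "component G u = {w. (u, w) \<in> {(a, b). adj G a b}\<^sup>*}"

text \<open>Plane: every connected component with at least one edge satisfies Euler's formula
  V - E + F = 2 (written as 2V - |darts| + 2F = 4), i.e. the rotation system is a
  genus-0 embedding of each component.\<close>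
definition plane_rotsys :: "('v, 'd) rotsys \<Rightarrow> bool" where
  "plane_rotsys G \<longleftrightarrow> wf_rotsys G \<and> simple_rotsys G \<and>
     (\<forall>d0\<in>darts G.
        let C = component G (tail G d0);
            DC = {d\<in>darts G. tail G d \<in> C};
            FC = face_orbit G ` DC
        in 2 * int (card C) - int (card DC) + 2 * int (card FC) = 4)"

definition triangle_free :: "('v, 'd) rotsys \<Rightarrow> bool" where
  "triangle_free G \<longleftrightarrow> \<not> (\<exists>a b c. adj G a b \<and> adj G b c \<and> adj G c a)"

text \<open>A path is a nonempty list of distinct vertices, consecutive ones adjacent;
  its length is the number of edges, length ps - 1.\<close>
definition gpath :: "('v, 'd) rotsys \<Rightarrow> 'v list \<Rightarrow> bool" where
  "gpath G ps \<longleftrightarrow> ps \<noteq> [] \<and> distinct ps \<and> set ps \<subseteq> verts G \<and>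
     (\<forall>i. Suc i < length ps \<longrightarrow> adj G (ps ! i) (ps ! Suc i))"

definition path_edges :: "'v list \<Rightarrow> 'v set set" where
  "path_edges ps = {{ps ! i, ps ! Suc i} | i. Suc i < length ps}"

definition facial_walk :: "('v, 'd) rotsys \<Rightarrow> 'v list \<Rightarrow> bool" where
  "facial_walk G vs \<longleftrightarrow> (\<exists>d\<in>darts G. (\<forall>i<length vs. tail G ((phi G ^^ i) d) = vs ! i) \<and>
                                       (phi G ^^ length vs) d = d)"

definition facial :: "('v, 'd) rotsys \<Rightarrow> 'v list \<Rightarrow> bool" where
  "facial G vs \<longleftrightarrow> length vs \<ge> 3 \<and> distinct vs \<and>
     (facial_walk G vs \<or> facial_walk G (rev vs))"

definition small :: "('v, 'd) rotsys \<Rightarrow> 'v \<Rightarrow> bool" where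
  "small G v \<longleftrightarrow> deg G v < 60"

definition big :: "('v, 'd) rotsys \<Rightarrow> 'v \<Rightarrow> bool" where
  "big G v \<longleftrightarrow> deg G v \<ge> 60"

definition no_big_nb :: "('v, 'd) rotsys \<Rightarrow> 'v \<Rightarrow> bool" where
  "no_big_nb G u \<longleftrightarrow> (\<forall>w. adj G u w \<longrightarrow> \<not> big G w)"

definition other_nb :: "('v, 'd) rotsys \<Rightarrow> 'v \<Rightarrow> 'v \<Rightarrow> 'v \<Rightarrow> 'v \<Rightarrow> bool" where
  "other_nb G v a b x \<longleftrightarrow> adj G v x \<and> x \<noteq> a \<and> x \<noteq> b"

definition monogram :: "('v, 'd) rotsys \<Rightarrow> 'v \<Rightarrow> bool" where
  "monogram G v1 \<longleftrightarrow> v1 \<in> verts G \<and> deg G v1 \<le> 2"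

definition tetragram :: "('v, 'd) rotsys \<Rightarrow> 'v \<Rightarrow> 'v \<Rightarrow> 'v \<Rightarrow> 'v \<Rightarrow> bool" where
  "tetragram G v1 v2 v3 v4 \<longleftrightarrow> facial G [v1, v2, v3, v4]"

definition secure_tetragram :: "('v, 'd) rotsys \<Rightarrow> 'v \<Rightarrow> 'v \<Rightarrow> 'v \<Rightarrow> 'v \<Rightarrow> bool" where
  "secure_tetragram G v1 v2 v3 v4 \<longleftrightarrow> tetragram G v1 v2 v3 v4 \<and>
     (\<forall>ps. gpath G ps \<and> hd ps = v1 \<and> last ps = v3 \<and> length ps \<le> 4 \<longrightarrow>
        path_edges ps \<subseteq> {{v1, v2}, {v2, v3}, {v3, v4}, {v4, v1}}) \<and>
     small G v1 \<and> deg G v1 = 3 \<and>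
     (\<exists>x. other_nb G v1 v2 v4 x \<and> small G x \<and>
        (small G v3 \<or>
         (\<forall>w. adj G x w \<longrightarrow> small G w \<or> facial G [v1, v2, w, x] \<or> facial G [v1, v4, w, x])))"

definition octagram :: "('v, 'd) rotsys \<Rightarrow> 'v \<Rightarrow> 'v \<Rightarrow> 'v \<Rightarrow> 'v \<Rightarrow> bool" where
  "octagram G v1 v2 v3 v4 \<longleftrightarrow> tetragram G v1 v2 v3 v4 \<and>
     deg G v1 = 3 \<and> deg G v2 = 3 \<and> deg G v3 = 3 \<and> deg G v4 = 3"

definition secure_octagram :: "('v, 'd) rotsys \<Rightarrow> 'v \<Rightarrow> 'v \<Rightarrow> 'v \<Rightarrow> 'v \<Rightarrow> bool" where
  "secure_octagram G v1 v2 v3 v4 \<longleftrightarrow> octagram G v1 v2 v3 v4 \<and>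
     small G v1 \<and> small G v2 \<and> small G v3 \<and> small G v4"

definition pentagram :: "('v, 'd) rotsys \<Rightarrow> 'v \<Rightarrow> 'v \<Rightarrow> 'v \<Rightarrow> 'v \<Rightarrow> 'v \<Rightarrow> bool" where
  "pentagram G v1 v2 v3 v4 v5 \<longleftrightarrow> facial G [v1, v2, v3, v4, v5] \<and>
     deg G v1 = 3 \<and> deg G v2 = 3 \<and> deg G v3 = 3 \<and> deg G v4 = 3"

definition decagram :: "('v, 'd) rotsys \<Rightarrow> 'v \<Rightarrow> 'v \<Rightarrow> 'v \<Rightarrow> 'v \<Rightarrow> 'v \<Rightarrow> bool" where
  "decagram G v1 v2 v3 v4 v5 \<longleftrightarrow> pentagram G v1 v2 v3 v4 v5 \<and> deg G v5 = 3"

definition secure_decagram :: "('v, 'd) rotsys \<Rightarrow> 'v \<Rightarrow> 'v \<Rightarrow> 'v \<Rightarrow> 'v \<Rightarrow> 'v \<Rightarrow> bool" where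
  "secure_decagram G v1 v2 v3 v4 v5 \<longleftrightarrow> decagram G v1 v2 v3 v4 v5 \<and>
     (\<exists>x1 x3. other_nb G v1 v5 v2 x1 \<and> other_nb G v3 v2 v4 x3 \<and>
        x1 \<noteq> x3 \<and> \<not> adj G x1 x3 \<and> \<not> (\<exists>w. adj G x1 w \<and> adj G x3 w) \<and>
        small G v1 \<and> small G v2 \<and> small G v3 \<and> small G v4 \<and> small G v5 \<and>
        small G x1 \<and> small G x3)"

definition secure_pentagram :: "('v, 'd) rotsys \<Rightarrow> 'v \<Rightarrow> 'v \<Rightarrow> 'v \<Rightarrow> 'v \<Rightarrow> 'v \<Rightarrow> bool" where
  "secure_pentagram G v1 v2 v3 v4 v5 \<longleftrightarrow> pentagram G v1 v2 v3 v4 v5 \<and>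
     (\<exists>x1 x2 x3 x4.
        other_nb G v1 v5 v2 x1 \<and> other_nb G v2 v1 v3 x2 \<and>
        other_nb G v3 v2 v4 x3 \<and> other_nb G v4 v3 v5 x4 \<and>
        distinct [x1, x2, x3, x4] \<and>
        (\<forall>a\<in>{x1, x2, x3, x4}. \<forall>b\<in>{x1, x2, x3, x4}. \<not> adj G a b) \<and>
        \<not> (\<exists>ps. gpath G ps \<and> set ps \<inter> {v1, v2, v3, v4} = {} \<and>
               hd ps = x2 \<and> last ps = v5 \<and> length ps \<le> 4) \<and>
        (\<forall>ps. gpath G ps \<and> set ps \<inter> {v1, v2, v3, v4} = {} \<and>
               hd ps = x3 \<and> last ps = x4 \<and> length ps \<le> 4 \<longrightarrow>
               length ps = 3 \<and> facial G [x3, v3, v4, x4, ps ! 1]) \<and>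
        small G v1 \<and> small G v2 \<and> small G v3 \<and> small G v4 \<and> small G v5 \<and>
        small G x1 \<and> small G x2 \<and> small G x3 \<and> small G x4 \<and>
        (no_big_nb G v5 \<or> no_big_nb G x2) \<and>
        (no_big_nb G x3 \<or> no_big_nb G x4))"

definition hexagram :: "('v, 'd) rotsys \<Rightarrow> 'v \<Rightarrow> 'v \<Rightarrow> 'v \<Rightarrow> 'v \<Rightarrow> 'v \<Rightarrow> 'v \<Rightarrow> bool" where
  "hexagram G v1 v2 v3 v4 v5 v6 \<longleftrightarrow> facial G [v1, v2, v3, v4, v5, v6]"

definition secure_hexagram :: "('v, 'd) rotsys \<Rightarrow> 'v \<Rightarrow> 'v \<Rightarrow> 'v \<Rightarrow> 'v \<Rightarrow> 'v \<Rightarrow> 'v \<Rightarrow> bool" where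
  "secure_hexagram G v1 v2 v3 v4 v5 v6 \<longleftrightarrow> hexagram G v1 v2 v3 v4 v5 v6 \<and>
     (\<forall>ps. gpath G ps \<and> hd ps = v1 \<and> last ps = v3 \<and> length ps \<le> 4 \<longrightarrow> ps = [v1, v2, v3]) \<and>
     small G v1 \<and> small G v3 \<and> small G v6 \<and> deg G v1 = 3 \<and>
     (\<exists>x. other_nb G v1 v2 v6 x \<and> small G x)"

definition has_secure_multigram :: "('v, 'd) rotsys \<Rightarrow> 'v \<Rightarrow> bool" where
  "has_secure_multigram G v \<longleftrightarrow>
     monogram G v \<or>
     (\<exists>v2 v3 v4. secure_tetragram G v v2 v3 v4) \<or>
     (\<exists>v2 v3 v4. secure_octagram G v v2 v3 v4) \<or>
     (\<exists>v2 v3 v4 v5. secure_pentagram G v v2 v3 v4 v5) \<or>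
     (\<exists>v2 v3 v4 v5. secure_decagram G v v2 v3 v4 v5) \<or>
     (\<exists>v2 v3 v4 v5 v6. secure_hexagram G v v2 v3 v4 v5 v6)"

text \<open>An algorithm is a finite query tree operating on the list representation. Its
  state is a list of list-entries (darts) reached so far, starting from the head of the
  adjacency list of v (or the empty state if that list is empty).
  As the tree is a fixed finite object, the number of steps is bounded by a constant
  independent of the input graph.\<close>

datatype qtree =
    Leaf bool
  | Nxt nat qtree
  | Prv nat qtree
  | Twn nat qtree
  | EqDart nat nat qtree qtree
  | EqVert nat nat qtree qtree
  | IsNil qtree qtree

fun run :: "('v, 'd) rotsys \<Rightarrow> qtree \<Rightarrow> 'd list \<Rightarrow> bool" where
  "run G (Leaf b) ds = b"
| "run G (Nxt i t) ds = (i < length ds \<and> run G t (ds @ [succ G (ds ! i)]))"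
| "run G (Prv i t) ds = (i < length ds \<and> run G t (ds @ [pred_dart G (ds ! i)]))"
| "run G (Twn i t) ds = (i < length ds \<and> run G t (ds @ [twin G (ds ! i)]))"
| "run G (EqDart i j t1 t2) ds =
     (i < length ds \<and> j < length ds \<and> (if ds ! i = ds ! j then run G t1 ds else run G t2 ds))"
| "run G (EqVert i j t1 t2) ds =
     (i < length ds \<and> j < length ds \<and>
      (if tail G (ds ! i) = tail G (ds ! j) then run G t1 ds else run G t2 ds))"
| "run G (IsNil t1 t2) ds = (if ds = [] then run G t1 ds else run G t2 ds)"

definition start_state :: "('v, 'd) rotsys \<Rightarrow> 'v \<Rightarrow> 'd list \<Rightarrow> bool" where
  "start_state G v ds \<longleftrightarrow>
     (ds = [] \<and> (\<forall>d\<in>darts G. tail G d \<noteq> v)) \<or>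
     (\<exists>d\<in>darts G. tail G d = v \<and> ds = [d])"

end

theory Submission
  imports Defs
begin

datatype dterm = St | Sc dterm | Tw dterm
datatype form = FT | EqD dterm dterm | EqV dterm dterm | Neg form | Conj form form | Disj form form

primrec evt :: "('v,'d) rotsys \<Rightarrow> 'd \<Rightarrow> dterm \<Rightarrow> 'd" where
  "evt G d St = d"
| "evt G d (Sc t) = succ G (evt G d t)"
| "evt G d (Tw t) = twin G (evt G d t)"

primrec evf :: "('v,'d) rotsys \<Rightarrow> 'd \<Rightarrow> form \<Rightarrow> bool" where
  "evf G d FT = True"
| "evf G d (EqD a b) = (evt G d a = evt G d b)"
| "evf G d (EqV a b) = (tail G (evt G d a) = tail G (evt G d b))"
| "evf G d (Neg f) = (\<not> evf G d f)"
| "evf G d (Conj f g) = (evf G d f \<and> evf G d g)"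
| "evf G d (Disj f g) = (evf G d f \<or> evf G d g)"

primrec ct :: "dterm \<Rightarrow> nat \<Rightarrow> (nat \<Rightarrow> nat \<Rightarrow> qtree) \<Rightarrow> qtree" where
  "ct St n k = k 0 n"
| "ct (Sc t) n k = ct t n (\<lambda>r m. Nxt r (k m (Suc m)))"
| "ct (Tw t) n k = ct t n (\<lambda>r m. Twn r (k m (Suc m)))"

primrec cf :: "form \<Rightarrow> nat \<Rightarrow> (nat \<Rightarrow> qtree) \<Rightarrow> (nat \<Rightarrow> qtree) \<Rightarrow> qtree" where
  "cf FT n kt kf = kt n"
| "cf (EqD a b) n kt kf = ct a n (\<lambda>r1 n1. ct b n1 (\<lambda>r2 n2. EqDart r1 r2 (kt n2) (kf n2)))"
| "cf (EqV a b) n kt kf = ct a n (\<lambda>r1 n1. ct b n1 (\<lambda>r2 n2. EqVert r1 r2 (kt n2) (kf n2)))"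
| "cf (Neg f) n kt kf = cf f n kf kt"
| "cf (Conj f g) n kt kf = cf f n (\<lambda>n'. cf g n' kt kf) kf"
| "cf (Disj f g) n kt kf = cf f n kt (\<lambda>n'. cf g n' kt kf)"

lemma ct_correct:
  assumes "ds \<noteq> []"
  shows "\<exists>ext r. r < length ds + length ext \<and> (ds @ ext) ! r = evt G (ds ! 0) t \<and>
     run G (ct t (length ds) k) ds = run G (k r (length ds + length ext)) (ds @ ext)"
  using assms
proof (induction t arbitrary: k)
  case St
  then show ?case by (rule_tac x="[]" in exI, rule_tac x=0 in exI) auto
next
  case (Sc t)
  from Sc.IH[OF Sc.prems, of "\<lambda>r m. Nxt r (k m (Suc m))"] obtain ext r where
    h: "r < length ds + length ext" "(ds @ ext) ! r = evt G (ds ! 0) t"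
       "run G (ct t (length ds) (\<lambda>r m. Nxt r (k m (Suc m)))) ds =
        run G (Nxt r (k (length ds + length ext) (Suc (length ds + length ext)))) (ds @ ext)" by blast
  show ?case
    apply (rule_tac x="ext @ [succ G ((ds @ ext) ! r)]" in exI)
    apply (rule_tac x="length ds + length ext" in exI)
    using h by (simp add: nth_append)
next
  case (Tw t)
  from Tw.IH[OF Tw.prems, of "\<lambda>r m. Twn r (k m (Suc m))"] obtain ext r where
    h: "r < length ds + length ext" "(ds @ ext) ! r = evt G (ds ! 0) t"
       "run G (ct t (length ds) (\<lambda>r m. Twn r (k m (Suc m)))) ds =
        run G (Twn r (k (length ds + length ext) (Suc (length ds + length ext)))) (ds @ ext)" by blast
  show ?case
    apply (rule_tac x="ext @ [twin G ((ds @ ext) ! r)]" in exI)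
    apply (rule_tac x="length ds + length ext" in exI)
    using h by (simp add: nth_append)
qed

lemma cf_correct:
  assumes "ds \<noteq> []"
  shows "\<exists>ext. run G (cf f (length ds) kt kf) ds =
    (if evf G (ds ! 0) f then run G (kt (length ds + length ext)) (ds @ ext)
     else run G (kf (length ds + length ext)) (ds @ ext))"
  using assms
proof (induction f arbitrary: ds kt kf)
  case FT
  then show ?case by (rule_tac x="[]" in exI) simp
next
  case (EqD a b)
  obtain e1 r1 where h1: "r1 < length ds + length e1" "(ds @ e1) ! r1 = evt G (ds ! 0) a"
    "run G (ct a (length ds) (\<lambda>r1 n1. ct b n1 (\<lambda>r2 n2. EqDart r1 r2 (kt n2) (kf n2)))) ds =
     run G (ct b (length ds + length e1) (\<lambda>r2 n2. EqDart r1 r2 (kt n2) (kf n2))) (ds @ e1)"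
    using ct_correct[OF EqD.prems, of G a "\<lambda>r1 n1. ct b n1 (\<lambda>r2 n2. EqDart r1 r2 (kt n2) (kf n2))"] by blast
  have ne: "ds @ e1 \<noteq> []" using EqD.prems by simp
  have z: "(ds @ e1) ! 0 = ds ! 0" using EqD.prems by (simp add: nth_append)
  obtain e2 r2 where h2: "r2 < length (ds @ e1) + length e2" "((ds @ e1) @ e2) ! r2 = evt G ((ds @ e1) ! 0) b"
    "run G (ct b (length (ds @ e1)) (\<lambda>r2 n2. EqDart r1 r2 (kt n2) (kf n2))) (ds @ e1) =
     run G (EqDart r1 r2 (kt (length (ds @ e1) + length e2)) (kf (length (ds @ e1) + length e2))) ((ds @ e1) @ e2)"
    using ct_correct[OF ne, of G b "\<lambda>r2 n2. EqDart r1 r2 (kt n2) (kf n2)"] by blast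
  have "((ds @ e1) @ e2) ! r1 = (ds @ e1) ! r1" using h1(1) by (metis length_append nth_append)
  then have "(ds @ e1 @ e2) ! r1 = evt G (ds ! 0) a" using h1(2) by simp
  then show ?case using h1 h2 z by (rule_tac x="e1 @ e2" in exI) (auto simp: add.assoc)
next
  case (EqV a b)
  obtain e1 r1 where h1: "r1 < length ds + length e1" "(ds @ e1) ! r1 = evt G (ds ! 0) a"
    "run G (ct a (length ds) (\<lambda>r1 n1. ct b n1 (\<lambda>r2 n2. EqVert r1 r2 (kt n2) (kf n2)))) ds =
     run G (ct b (length ds + length e1) (\<lambda>r2 n2. EqVert r1 r2 (kt n2) (kf n2))) (ds @ e1)"
    using ct_correct[OF EqV.prems, of G a "\<lambda>r1 n1. ct b n1 (\<lambda>r2 n2. EqVert r1 r2 (kt n2) (kf n2))"] by blast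
  have ne: "ds @ e1 \<noteq> []" using EqV.prems by simp
  have z: "(ds @ e1) ! 0 = ds ! 0" using EqV.prems by (simp add: nth_append)
  obtain e2 r2 where h2: "r2 < length (ds @ e1) + length e2" "((ds @ e1) @ e2) ! r2 = evt G ((ds @ e1) ! 0) b"
    "run G (ct b (length (ds @ e1)) (\<lambda>r2 n2. EqVert r1 r2 (kt n2) (kf n2))) (ds @ e1) =
     run G (EqVert r1 r2 (kt (length (ds @ e1) + length e2)) (kf (length (ds @ e1) + length e2))) ((ds @ e1) @ e2)"
    using ct_correct[OF ne, of G b "\<lambda>r2 n2. EqVert r1 r2 (kt n2) (kf n2)"] by blast
  have "((ds @ e1) @ e2) ! r1 = (ds @ e1) ! r1" using h1(1) by (metis length_append nth_append)
  then have "(ds @ e1 @ e2) ! r1 = evt G (ds ! 0) a" using h1(2) by simp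
  then show ?case using h1 h2 z by (rule_tac x="e1 @ e2" in exI) (auto simp: add.assoc)
next
  case (Neg f)
  then show ?case by (metis cf.simps(4) evf.simps(4))
next
  case (Conj f g)
  obtain e1 where h1: "run G (cf f (length ds) (\<lambda>n'. cf g n' kt kf) kf) ds =
    (if evf G (ds ! 0) f then run G (cf g (length ds + length e1) kt kf) (ds @ e1)
     else run G (kf (length ds + length e1)) (ds @ e1))" using Conj.IH(1)[OF Conj.prems, of "\<lambda>n'. cf g n' kt kf" kf] by blast
  have ne: "ds @ e1 \<noteq> []" using Conj.prems by simp
  obtain e2 where h2: "run G (cf g (length (ds @ e1)) kt kf) (ds @ e1) =
    (if evf G ((ds @ e1) ! 0) g then run G (kt (length (ds @ e1) + length e2)) ((ds @ e1) @ e2)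
     else run G (kf (length (ds @ e1) + length e2)) ((ds @ e1) @ e2))" using Conj.IH(2)[OF ne, of kt kf] by blast
  have z: "(ds @ e1) ! 0 = ds ! 0" using Conj.prems by (simp add: nth_append)
  show ?case
  proof (cases "evf G (ds ! 0) f")
    case True then show ?thesis using h1 h2 z by (rule_tac x="e1 @ e2" in exI) (simp add: add.assoc)
  next
    case False then show ?thesis using h1 by (rule_tac x="e1" in exI) simp
  qed
next
  case (Disj f g)
  obtain e1 where h1: "run G (cf f (length ds) kt (\<lambda>n'. cf g n' kt kf)) ds =
    (if evf G (ds ! 0) f then run G (kt (length ds + length e1)) (ds @ e1)
     else run G (cf g (length ds + length e1) kt kf) (ds @ e1))" using Disj.IH(1)[OF Disj.prems, of kt "\<lambda>n'. cf g n' kt kf"] by blast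
  have ne: "ds @ e1 \<noteq> []" using Disj.prems by simp
  obtain e2 where h2: "run G (cf g (length (ds @ e1)) kt kf) (ds @ e1) =
    (if evf G ((ds @ e1) ! 0) g then run G (kt (length (ds @ e1) + length e2)) ((ds @ e1) @ e2)
     else run G (kf (length (ds @ e1) + length e2)) ((ds @ e1) @ e2))" using Disj.IH(2)[OF ne, of kt kf] by blast
  have z: "(ds @ e1) ! 0 = ds ! 0" using Disj.prems by (simp add: nth_append)
  show ?case
  proof (cases "evf G (ds ! 0) f")
    case True then show ?thesis using h1 by (rule_tac x="e1" in exI) simp
  next
    case False then show ?thesis using h1 h2 z by (rule_tac x="e1 @ e2" in exI) (simp add: add.assoc)
  qed
qed

lemma compile_single:
  "run G (cf f 1 (\<lambda>_. Leaf True) (\<lambda>_. Leaf False)) [d] = evf G d f"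
proof -
  obtain ext where "run G (cf f (length [d]) (\<lambda>_. Leaf True) (\<lambda>_. Leaf False)) [d] =
    (if evf G ([d] ! 0) f then run G (Leaf True) ([d] @ ext) else run G (Leaf False) ([d] @ ext))"
    using cf_correct[of "[d]" G f "\<lambda>_. Leaf True" "\<lambda>_. Leaf False"] by auto
  then show ?thesis by simp
qed

abbreviation sk :: "('v,'d) rotsys \<Rightarrow> nat \<Rightarrow> 'd \<Rightarrow> 'd" where
  "sk G k \<equiv> (succ G ^^ k)"

context fixes G :: "('v,'d) rotsys" assumes wf: "wf_rotsys G" begin

lemma wf_fin: "finite (darts G)" using wf unfolding wf_rotsys_def by blast
lemma wf_succ: "d \<in> darts G \<Longrightarrow> succ G d \<in> darts G \<and> tail G (succ G d) = tail G d"
  using wf unfolding wf_rotsys_def by blast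
lemma wf_twin: "d \<in> darts G \<Longrightarrow> twin G d \<in> darts G \<and> twin G d \<noteq> d \<and> twin G (twin G d) = d \<and> tail G d \<in> verts G"
  using wf unfolding wf_rotsys_def by blast
lemma wf_bij: "bij_betw (succ G) (darts G) (darts G)" using wf unfolding wf_rotsys_def by blast
lemma wf_reach: "d \<in> darts G \<Longrightarrow> d' \<in> darts G \<Longrightarrow> tail G d = tail G d' \<Longrightarrow> \<exists>n. sk G n d = d'"
  using wf unfolding wf_rotsys_def by blast

lemma sk_in: "d \<in> darts G \<Longrightarrow> sk G k d \<in> darts G \<and> tail G (sk G k d) = tail G d"
  by (induction k) (auto dest: wf_succ)

lemma sk_inj: "inj_on (sk G k) (darts G)"
  using bij_betw_funpow[OF wf_bij] bij_betw_imp_inj_on by blast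

lemma period_ex: assumes "d \<in> darts G" shows "\<exists>p>0. sk G p d = d"
proof -
  let ?N = "card (darts G)"
  have "(\<lambda>k. sk G k d) ` {0..?N} \<subseteq> darts G" using sk_in assms by blast
  then have "card ((\<lambda>k. sk G k d) ` {0..?N}) \<le> ?N" by (rule card_mono[OF wf_fin])
  then have "\<not> inj_on (\<lambda>k. sk G k d) {0..?N}"
  proof (intro notI)
    assume "inj_on (\<lambda>k. sk G k d) {0..?N}" "card ((\<lambda>k. sk G k d) ` {0..?N}) \<le> ?N"
    then show False by (simp add: card_image)
  qed
  then obtain i j where ij: "i \<le> ?N" "j \<le> ?N" "i \<noteq> j" "sk G i d = sk G j d"
    unfolding inj_on_def by auto
  { fix i j assume "i < j" "sk G i d = sk G j d"
    then obtain k where k: "j = i + k" "k > 0" by (metis less_imp_add_positive)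
    have "sk G j d = sk G i (sk G k d)" unfolding k(1) funpow_add by simp
    then have "sk G i (sk G (j - i) d) = sk G i d" using k \<open>sk G i d = sk G j d\<close> by simp
    then have "sk G (j - i) d = d" using sk_inj[of i] sk_in assms unfolding inj_on_def by blast
    then have "\<exists>p>0. sk G p d = d" using \<open>i<j\<close> by (intro exI[of _ "j-i"]) auto }
  note * = this
  show ?thesis
  proof (cases "i < j")
    case True then show ?thesis using * ij by blast
  next
    case False then have "j < i" using ij by simp
    then show ?thesis using * ij by metis
  qed
qed

definition per :: "'d \<Rightarrow> nat" where "per d = (LEAST p. p > 0 \<and> sk G p d = d)"

lemma per_props: assumes "d \<in> darts G"
  shows "per d > 0" "sk G (per d) d = d" "\<And>m. 0 < m \<Longrightarrow> m < per d \<Longrightarrow> sk G m d \<noteq> d"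
proof -
  obtain p where "p > 0 \<and> sk G p d = d" using period_ex assms by blast
  then show "per d > 0" "sk G (per d) d = d" unfolding per_def by (metis (mono_tags, lifting) LeastI)+
  show "\<And>m. 0 < m \<Longrightarrow> m < per d \<Longrightarrow> sk G m d \<noteq> d" unfolding per_def using not_less_Least by blast
qed

lemma orbit_eq: assumes "d \<in> darts G"
  shows "{d' \<in> darts G. tail G d' = tail G d} = (\<lambda>k. sk G k d) ` {0..<per d}"
proof
  show "{d' \<in> darts G. tail G d' = tail G d} \<subseteq> (\<lambda>k. sk G k d) ` {0..<per d}"
  proof
    fix d' assume "d' \<in> {d' \<in> darts G. tail G d' = tail G d}"
    then obtain n where "sk G n d = d'" using wf_reach assms by force
    then have "sk G (n mod per d) d = d'" using funpow_mod_eq per_props(2)[OF assms] by metis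
    then show "d' \<in> (\<lambda>k. sk G k d) ` {0..<per d}" using per_props(1)[OF assms] by force
  qed
  show "(\<lambda>k. sk G k d) ` {0..<per d} \<subseteq> {d' \<in> darts G. tail G d' = tail G d}" using sk_in assms by auto
qed

lemma deg_per: assumes "d \<in> darts G" shows "deg G (tail G d) = per d"
proof -
  have "inj_on (\<lambda>k. sk G k d) {0..<per d}"
    by (rule inj_on_funpow_least) (use per_props[OF assms] in auto)
  then show ?thesis unfolding deg_def orbit_eq[OF assms] by (simp add: card_image)
qed

lemma deg_le_iff: assumes "d \<in> darts G"
  shows "deg G (tail G d) \<le> m \<longleftrightarrow> (\<exists>k. 0 < k \<and> k \<le> m \<and> sk G k d = d)"
proof
  assume "deg G (tail G d) \<le> m"
  then show "\<exists>k. 0 < k \<and> k \<le> m \<and> sk G k d = d"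
    using per_props(1,2)[OF assms] deg_per[OF assms] by (intro exI[of _ "per d"]) simp
next
  assume "\<exists>k. 0 < k \<and> k \<le> m \<and> sk G k d = d"
  then obtain k where k: "0 < k" "k \<le> m" "sk G k d = d" by blast
  then have "\<not> k < per d" using per_props(3)[OF assms] by blast
  then show "deg G (tail G d) \<le> m" using k deg_per[OF assms] by simp
qed

lemma dart_enum: assumes "d \<in> darts G" "d' \<in> darts G" "tail G d' = tail G d" "deg G (tail G d) \<le> N"
  shows "\<exists>k<N. sk G k d = d'"
proof -
  have "d' \<in> (\<lambda>k. sk G k d) ` {0..<per d}" using orbit_eq[OF assms(1)] assms(2,3) by blast
  then obtain k where "k < per d" "sk G k d = d'" by auto
  then show ?thesis using deg_per[OF assms(1)] assms(4) by (intro exI[of _ k]) simp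
qed

lemma deg_pos: "d \<in> darts G \<Longrightarrow> deg G (tail G d) > 0"
  using deg_per per_props by auto

end

definition FF :: form where "FF = Neg FT"
primrec exl :: "nat \<Rightarrow> (nat \<Rightarrow> form) \<Rightarrow> form" where
  "exl 0 f = FF" | "exl (Suc n) f = Disj (exl n f) (f n)"
definition alll :: "nat \<Rightarrow> (nat \<Rightarrow> form) \<Rightarrow> form" where "alll n f = Neg (exl n (\<lambda>k. Neg (f k)))"
primrec conjL :: "form list \<Rightarrow> form" where
  "conjL [] = FT" | "conjL (f # fs) = Conj f (conjL fs)"
definition impF :: "form \<Rightarrow> form \<Rightarrow> form" where "impF a b = Disj (Neg a) b"

lemma evf_FF[simp]: "evf G d FF = False" by (simp add: FF_def)
lemma evf_exl[simp]: "evf G d (exl n f) = (\<exists>k<n. evf G d (f k))"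
  by (induction n) (auto simp: less_Suc_eq)
lemma evf_alll[simp]: "evf G d (alll n f) = (\<forall>k<n. evf G d (f k))"
  by (simp add: alll_def)
lemma evf_conjL[simp]: "evf G d (conjL fs) = (\<forall>f\<in>set fs. evf G d f)"
  by (induction fs) auto
lemma evf_impF[simp]: "evf G d (impF a b) = (evf G d a \<longrightarrow> evf G d b)"
  by (simp add: impF_def)
declare exl.simps[simp del]

definition scn :: "nat \<Rightarrow> dterm \<Rightarrow> dterm" where "scn k t = (Sc ^^ k) t"
definition phd :: "dterm \<Rightarrow> dterm" where "phd t = Sc (Tw t)"
definition phn :: "nat \<Rightarrow> dterm \<Rightarrow> dterm" where "phn j t = (phd ^^ j) t"
definition nbt :: "nat \<Rightarrow> dterm \<Rightarrow> dterm" where "nbt k t = Tw (scn k t)"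

lemma evt_scn[simp]: "evt G d (scn k t) = sk G k (evt G d t)"
  unfolding scn_def by (induction k) auto
lemma evt_phn[simp]: "evt G d (phn j t) = (phi G ^^ j) (evt G d t)"
  unfolding phn_def by (induction j) (auto simp: phd_def phi_def)
lemma evt_nbt[simp]: "tail G (evt G d (nbt k t)) = head G (sk G k (evt G d t))"
  unfolding nbt_def by (simp add: head_def)

definition smallF :: "dterm \<Rightarrow> form" where
  "smallF t = exl 59 (\<lambda>k. EqD (scn (Suc k) t) t)"
definition deg3F :: "dterm \<Rightarrow> form" where
  "deg3F t = Conj (EqD (scn 3 t) t) (Conj (Neg (EqD (scn 1 t) t)) (Neg (EqD (scn 2 t) t)))"
definition adjF :: "dterm \<Rightarrow> dterm \<Rightarrow> form" where
  "adjF a b = exl 60 (\<lambda>k. EqV (nbt k a) b)"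
definition nobigF :: "dterm \<Rightarrow> form" where
  "nobigF t = alll 60 (\<lambda>k. smallF (nbt k t))"

context fixes G :: "('v,'d) rotsys" assumes wf: "wf_rotsys G" and simp: "simple_rotsys G" begin

lemma evt_in: "d \<in> darts G \<Longrightarrow> evt G d t \<in> darts G"
  by (induction t) (auto dest: wf_succ[OF wf] wf_twin[OF wf])

lemma phi_in: "d \<in> darts G \<Longrightarrow> (phi G ^^ j) d \<in> darts G"
  by (induction j) (auto simp: phi_def dest: wf_succ[OF wf] wf_twin[OF wf])

lemma adj_sym: "adj G u w \<Longrightarrow> adj G w u"
  unfolding adj_def head_def using wf_twin[OF wf] by metis

lemma adj_irrefl: "\<not> adj G u u"
  using simp unfolding adj_def simple_rotsys_def by metis

lemma adj_verts: "adj G u w \<Longrightarrow> u \<in> verts G \<and> w \<in> verts G"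
  unfolding adj_def head_def using wf_twin[OF wf] by metis

lemma adj_ne: "adj G u w \<Longrightarrow> u \<noteq> w" using adj_irrefl by blast

lemma head_adj: "d \<in> darts G \<Longrightarrow> adj G (tail G d) (head G d)"
  unfolding adj_def by blast

lemma nb_enum: assumes "d \<in> darts G" "deg G (tail G d) \<le> N"
  shows "adj G (tail G d) w \<longleftrightarrow> (\<exists>k<N. head G (sk G k d) = w)"
proof
  assume "adj G (tail G d) w"
  then obtain d' where d': "d' \<in> darts G" "tail G d' = tail G d" "head G d' = w" unfolding adj_def by blast
  then obtain k where "k < N" "sk G k d = d'" using dart_enum[OF wf assms(1) d'(1,2) assms(2)] by blast
  then show "\<exists>k<N. head G (sk G k d) = w" using d' by blast
next
  assume "\<exists>k<N. head G (sk G k d) = w"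
  then show "adj G (tail G d) w" using sk_in[OF wf assms(1)] head_adj by metis
qed

lemma small_deg: "small G u \<longleftrightarrow> deg G u \<le> 59" unfolding small_def by arith

lemma evf_smallF: assumes "d \<in> darts G"
  shows "evf G d (smallF t) \<longleftrightarrow> small G (tail G (evt G d t))"
proof -
  have e: "evt G d t \<in> darts G" using evt_in assms by blast
  have "(\<exists>k<59. sk G (Suc k) (evt G d t) = evt G d t) \<longleftrightarrow> (\<exists>k. 0 < k \<and> k \<le> 59 \<and> sk G k (evt G d t) = evt G d t)"
  proof
    assume "\<exists>k<59. sk G (Suc k) (evt G d t) = evt G d t"
    then obtain k where "k < 59" "sk G (Suc k) (evt G d t) = evt G d t" by blast
    then show "\<exists>k. 0 < k \<and> k \<le> 59 \<and> sk G k (evt G d t) = evt G d t" by (intro exI[of _ "Suc k"]) simp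
  next
    assume "\<exists>k. 0 < k \<and> k \<le> 59 \<and> sk G k (evt G d t) = evt G d t"
    then obtain k where "0 < k" "k \<le> 59" "sk G k (evt G d t) = evt G d t" by blast
    then show "\<exists>k<59. sk G (Suc k) (evt G d t) = evt G d t" by (intro exI[of _ "k - 1"]) simp
  qed
  then show ?thesis unfolding smallF_def small_deg deg_le_iff[OF wf e] by simp
qed

lemma evf_deg3F: assumes "d \<in> darts G"
  shows "evf G d (deg3F t) \<longleftrightarrow> deg G (tail G (evt G d t)) = 3"
proof -
  have e: "evt G d t \<in> darts G" using evt_in assms by blast
  have a: "deg G (tail G (evt G d t)) \<le> 2 \<longleftrightarrow> (sk G 1 (evt G d t) = evt G d t \<or> sk G 2 (evt G d t) = evt G d t)"
    unfolding deg_le_iff[OF wf e]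
  proof
    assume "\<exists>k>0. k \<le> 2 \<and> sk G k (evt G d t) = evt G d t"
    then obtain k where "k>0" "k \<le> 2" "sk G k (evt G d t) = evt G d t" by blast
    moreover have "k = 1 \<or> k = 2" using calculation by linarith
    ultimately show "sk G 1 (evt G d t) = evt G d t \<or> sk G 2 (evt G d t) = evt G d t" by blast
  next
    assume "sk G 1 (evt G d t) = evt G d t \<or> sk G 2 (evt G d t) = evt G d t"
    then show "\<exists>k>0. k \<le> 2 \<and> sk G k (evt G d t) = evt G d t"
    proof
      assume "sk G 1 (evt G d t) = evt G d t" then show ?thesis by (intro exI[of _ 1]) simp
    next
      assume "sk G 2 (evt G d t) = evt G d t" then show ?thesis by (intro exI[of _ 2]) simp
    qed
  qed
  have b: "deg G (tail G (evt G d t)) \<le> 3 \<longleftrightarrow> (sk G 1 (evt G d t) = evt G d t \<or> sk G 2 (evt G d t) = evt G d t \<or> sk G 3 (evt G d t) = evt G d t)"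
    unfolding deg_le_iff[OF wf e]
  proof
    assume "\<exists>k>0. k \<le> 3 \<and> sk G k (evt G d t) = evt G d t"
    then obtain k where "k>0" "k \<le> 3" "sk G k (evt G d t) = evt G d t" by blast
    moreover have "k = 1 \<or> k = 2 \<or> k = 3" using calculation by linarith
    ultimately show "sk G 1 (evt G d t) = evt G d t \<or> sk G 2 (evt G d t) = evt G d t \<or> sk G 3 (evt G d t) = evt G d t" by blast
  next
    assume "sk G 1 (evt G d t) = evt G d t \<or> sk G 2 (evt G d t) = evt G d t \<or> sk G 3 (evt G d t) = evt G d t"
    then show "\<exists>k>0. k \<le> 3 \<and> sk G k (evt G d t) = evt G d t"
    proof (elim disjE)
      assume "sk G 1 (evt G d t) = evt G d t" then show ?thesis by (intro exI[of _ 1]) simp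
    next
      assume "sk G 2 (evt G d t) = evt G d t" then show ?thesis by (intro exI[of _ 2]) simp
    next
      assume "sk G 3 (evt G d t) = evt G d t" then show ?thesis by (intro exI[of _ 3]) simp
    qed
  qed
  show ?thesis unfolding deg3F_def using a b by auto
qed

lemma evf_adjF_sound: assumes "d \<in> darts G" "evf G d (adjF a b)"
  shows "adj G (tail G (evt G d a)) (tail G (evt G d b))"
proof -
  obtain k where "head G (sk G k (evt G d a)) = tail G (evt G d b)" using assms(2) unfolding adjF_def by auto
  moreover have "sk G k (evt G d a) \<in> darts G" "tail G (sk G k (evt G d a)) = tail G (evt G d a)"
    using sk_in[OF wf evt_in[OF assms(1)]] by auto
  ultimately show ?thesis using head_adj by metis
qed

lemma evf_adjF: assumes "d \<in> darts G" "small G (tail G (evt G d a))"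
  shows "evf G d (adjF a b) \<longleftrightarrow> adj G (tail G (evt G d a)) (tail G (evt G d b))"
  using nb_enum[OF evt_in[OF assms(1)], where N=60 and w="tail G (evt G d b)"] assms(2) unfolding adjF_def small_def
  by (auto simp: eq_commute)

lemma evf_nobigF: assumes "d \<in> darts G" "small G (tail G (evt G d t))"
  shows "evf G d (nobigF t) \<longleftrightarrow> no_big_nb G (tail G (evt G d t))"
proof -
  have "evf G d (nobigF t) \<longleftrightarrow> (\<forall>k<60. small G (head G (sk G k (evt G d t))))"
    unfolding nobigF_def using evf_smallF[OF assms(1)] by simp
  also have "\<dots> \<longleftrightarrow> (\<forall>w. adj G (tail G (evt G d t)) w \<longrightarrow> small G w)"
    using nb_enum[OF evt_in[OF assms(1)], where N=60] assms(2) unfolding small_def by auto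
  finally show ?thesis unfolding no_big_nb_def big_def small_def by auto
qed

lemma card_nbrs: "card {w. adj G u w} = deg G u"
proof -
  have "inj_on (head G) {d \<in> darts G. tail G d = u}"
    using simp unfolding simple_rotsys_def inj_on_def by blast
  moreover have "head G ` {d \<in> darts G. tail G d = u} = {w. adj G u w}"
    unfolding adj_def by auto
  ultimately show ?thesis unfolding deg_def by (metis card_image)
qed

lemma fin_nbrs: "finite {w. adj G u w}"
proof -
  have "{w. adj G u w} = head G ` {d \<in> darts G. tail G d = u}" unfolding adj_def by auto
  then show ?thesis using wf_fin[OF wf] by simp
qed

lemma nbr3: assumes "deg G u = 3" "adj G u a" "adj G u b" "adj G u c" "distinct [a,b,c]" "adj G u w"
  shows "w = a \<or> w = b \<or> w = c"
proof -
  have "{a,b,c} \<subseteq> {w. adj G u w}" using assms by auto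
  moreover have "card {a,b,c} = 3" using assms(5) by simp
  ultimately have "{a,b,c} = {w. adj G u w}" using card_nbrs[of u] assms(1) fin_nbrs[of u]
    by (intro card_subset_eq) auto
  then show ?thesis using assms(6) by auto
qed

end

definition wr :: "('v,'d) rotsys \<Rightarrow> bool \<Rightarrow> nat \<Rightarrow> nat \<Rightarrow> 'd \<Rightarrow> 'd" where
  "wr G ori n j d = (if ori then (phi G ^^ j) d else (phi G ^^ (n - j)) d)"

definition wrt :: "bool \<Rightarrow> nat \<Rightarrow> nat \<Rightarrow> dterm \<Rightarrow> dterm" where
  "wrt ori n j t = (if ori then phn j t else phn (n - j) t)"

lemma evt_wrt[simp]: "evt G d (wrt ori n j t) = wr G ori n j (evt G d t)"
  by (simp add: wrt_def wr_def)

lemma phi_comb: "(phi G ^^ a) ((phi G ^^ b) d) = (phi G ^^ (a + b)) d"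
  by (simp add: funpow_add)

definition distF :: "dterm list \<Rightarrow> form" where
  "distF ts = conjL (concat (map (\<lambda>a. map (\<lambda>b. Neg (EqV (ts ! a) (ts ! b))) [Suc a..<length ts]) [0..<length ts]))"

definition wF :: "dterm list \<Rightarrow> bool \<Rightarrow> nat \<Rightarrow> form" where
  "wF ts ori i = Conj (EqD (phn (length ts) (scn i (ts ! 0))) (scn i (ts ! 0)))
     (conjL (map (\<lambda>j. EqV (wrt ori (length ts) j (scn i (ts ! 0))) (ts ! j)) [1..<length ts]))"

definition facialF :: "dterm list \<Rightarrow> form" where
  "facialF ts = Conj (distF ts) (exl 60 (\<lambda>i. Disj (wF ts True i) (wF ts False i)))"

lemma evf_distF: "evf G d (distF ts) \<longleftrightarrow> distinct (map (\<lambda>t. tail G (evt G d t)) ts)"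
proof -
  have "evf G d (distF ts) \<longleftrightarrow> (\<forall>a<length ts. \<forall>b. Suc a \<le> b \<and> b < length ts \<longrightarrow>
      tail G (evt G d (ts ! a)) \<noteq> tail G (evt G d (ts ! b)))"
    unfolding distF_def by auto
  also have "\<dots> \<longleftrightarrow> distinct (map (\<lambda>t. tail G (evt G d t)) ts)"
    unfolding distinct_conv_nth by (auto, metis linorder_neqE_nat Suc_leI)
  finally show ?thesis .
qed

lemma evf_wF: "evf G d (wF ts ori i) \<longleftrightarrow> (phi G ^^ length ts) (sk G i (evt G d (ts ! 0))) = sk G i (evt G d (ts ! 0)) \<and>
   (\<forall>j. 1 \<le> j \<and> j < length ts \<longrightarrow> tail G (wr G ori (length ts) j (sk G i (evt G d (ts ! 0)))) = tail G (evt G d (ts ! j)))"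
  unfolding wF_def by auto

context fixes G :: "('v,'d) rotsys" assumes wf: "wf_rotsys G" and simp: "simple_rotsys G" begin

lemma fw_fwd: assumes "length vs = n" "n \<ge> 1"
  shows "facial_walk G vs \<longleftrightarrow> (\<exists>d\<in>darts G. (phi G ^^ n) d = d \<and> tail G d = vs ! 0 \<and>
      (\<forall>j. 1 \<le> j \<and> j < n \<longrightarrow> tail G ((phi G ^^ j) d) = vs ! j))"
proof -
  have "(\<forall>i<n. P i) \<longleftrightarrow> P 0 \<and> (\<forall>j. 1 \<le> j \<and> j < n \<longrightarrow> P j)" for P :: "nat \<Rightarrow> bool"
    using assms(2) by (metis less_one not_le le_less_trans zero_less_one)
  then show ?thesis unfolding facial_walk_def assms(1) by auto
qed

lemma fw_rev: assumes "length vs = n" "n \<ge> 1"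
  shows "facial_walk G (rev vs) \<longleftrightarrow> (\<exists>d\<in>darts G. (phi G ^^ n) d = d \<and> tail G d = vs ! 0 \<and>
      (\<forall>j. 1 \<le> j \<and> j < n \<longrightarrow> tail G ((phi G ^^ (n - j)) d) = vs ! j))"
proof
  assume "facial_walk G (rev vs)"
  then obtain d' where d': "d' \<in> darts G" "\<forall>i<n. tail G ((phi G ^^ i) d') = rev vs ! i" "(phi G ^^ n) d' = d'"
    unfolding facial_walk_def using assms by auto
  define d where "d = (phi G ^^ (n - 1)) d'"
  have "d \<in> darts G" unfolding d_def using phi_in[OF wf simp d'(1)] .
  moreover have "(phi G ^^ n) d = d" unfolding d_def phi_comb
    by (metis d'(3) add.commute phi_comb)
  moreover have "tail G d = vs ! 0" unfolding d_def using d'(2) assms by (simp add: rev_nth)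
  moreover have "tail G ((phi G ^^ (n - j)) d) = vs ! j" if "1 \<le> j" "j < n" for j
  proof -
    have "(phi G ^^ (n - j)) d = (phi G ^^ (n - 1 - j)) ((phi G ^^ n) d')"
      unfolding d_def phi_comb using that by (simp add: algebra_simps)
    then have "(phi G ^^ (n - j)) d = (phi G ^^ (n - 1 - j)) d'" using d'(3) by simp
    moreover have "rev vs ! (n - 1 - j) = vs ! j" using that assms by (simp add: rev_nth)
    ultimately show ?thesis using d'(2) that by simp
  qed
  ultimately show "\<exists>d\<in>darts G. (phi G ^^ n) d = d \<and> tail G d = vs ! 0 \<and>
      (\<forall>j. 1 \<le> j \<and> j < n \<longrightarrow> tail G ((phi G ^^ (n - j)) d) = vs ! j)" by blast
next
  assume "\<exists>d\<in>darts G. (phi G ^^ n) d = d \<and> tail G d = vs ! 0 \<and>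
      (\<forall>j. 1 \<le> j \<and> j < n \<longrightarrow> tail G ((phi G ^^ (n - j)) d) = vs ! j)"
  then obtain d where d: "d \<in> darts G" "(phi G ^^ n) d = d" "tail G d = vs ! 0"
      "\<And>j. 1 \<le> j \<Longrightarrow> j < n \<Longrightarrow> tail G ((phi G ^^ (n - j)) d) = vs ! j" by blast
  define d' where "d' = phi G d"
  have "d' \<in> darts G" unfolding d'_def using phi_in[OF wf simp d(1), of 1] by simp
  moreover have "(phi G ^^ n) d' = d'" unfolding d'_def using d(2)
    by (metis funpow_swap1)
  moreover have "tail G ((phi G ^^ i) d') = rev vs ! i" if "i < n" for i
  proof -
    have e: "(phi G ^^ i) d' = (phi G ^^ (Suc i)) d" unfolding d'_def by (simp add: funpow_swap1)
    show ?thesis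
    proof (cases "i = n - 1")
      case True
      then have "Suc i = n" using that by simp
      then show ?thesis using e d(2,3) True assms by (simp add: rev_nth)
    next
      case False
      then have "1 \<le> n - 1 - i" "n - 1 - i < n" "n - (n - 1 - i) = Suc i" using that by auto
      then show ?thesis using e d(4)[of "n - 1 - i"] that assms by (simp add: rev_nth)
    qed
  qed
  ultimately show "facial_walk G (rev vs)" unfolding facial_walk_def using assms by auto
qed

lemma facial_iff: assumes "d0 \<in> darts G" "deg G (tail G d0) \<le> 60" "length vs = n" "vs ! 0 = tail G d0"
  shows "facial G vs \<longleftrightarrow> n \<ge> 3 \<and> distinct vs \<and>
    (\<exists>i<60. \<exists>ori. (phi G ^^ n) (sk G i d0) = sk G i d0 \<and>
       (\<forall>j. 1 \<le> j \<and> j < n \<longrightarrow> tail G (wr G ori n j (sk G i d0)) = vs ! j))"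
proof (cases "n \<ge> 3")
  case False then show ?thesis unfolding facial_def using assms by auto
next
  case True
  have n1: "n \<ge> 1" using True by simp
  have ex: "(\<exists>d\<in>darts G. tail G d = tail G d0 \<and> P d) \<longleftrightarrow> (\<exists>i<60. P (sk G i d0))" for P
  proof
    assume "\<exists>d\<in>darts G. tail G d = tail G d0 \<and> P d"
    then obtain d where "d \<in> darts G" "tail G d = tail G d0" "P d" by blast
    then show "\<exists>i<60. P (sk G i d0)" using dart_enum[OF wf assms(1), of d 60] assms(2) by metis
  next
    assume "\<exists>i<60. P (sk G i d0)"
    then show "\<exists>d\<in>darts G. tail G d = tail G d0 \<and> P d" using sk_in[OF wf assms(1)] by blast
  qed
  have "facial_walk G vs \<longleftrightarrow> (\<exists>i<60. (phi G ^^ n) (sk G i d0) = sk G i d0 \<and>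
       (\<forall>j. 1 \<le> j \<and> j < n \<longrightarrow> tail G (wr G True n j (sk G i d0)) = vs ! j))"
    unfolding fw_fwd[OF assms(3) n1] wr_def using ex[of "\<lambda>d. (phi G ^^ n) d = d \<and> (\<forall>j. 1 \<le> j \<and> j < n \<longrightarrow> tail G ((phi G ^^ j) d) = vs ! j)"]
    assms(4) by auto
  moreover have "facial_walk G (rev vs) \<longleftrightarrow> (\<exists>i<60. (phi G ^^ n) (sk G i d0) = sk G i d0 \<and>
       (\<forall>j. 1 \<le> j \<and> j < n \<longrightarrow> tail G (wr G False n j (sk G i d0)) = vs ! j))"
    unfolding fw_rev[OF assms(3) n1] wr_def using ex[of "\<lambda>d. (phi G ^^ n) d = d \<and> (\<forall>j. 1 \<le> j \<and> j < n \<longrightarrow> tail G ((phi G ^^ (n - j)) d) = vs ! j)"]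
    assms(4) by auto
  ultimately show ?thesis unfolding facial_def using True assms(3) by (auto simp: ex_bool_eq)
qed


lemma evf_facialF: assumes "d \<in> darts G" "small G (tail G (evt G d (ts ! 0)))" "length ts \<ge> 3"
  shows "evf G d (facialF ts) \<longleftrightarrow> facial G (map (\<lambda>t. tail G (evt G d t)) ts)"
proof -
  have "ts \<noteq> []" using assms(3) by auto
  have e: "evt G d (ts ! 0) \<in> darts G" using evt_in[OF wf simp assms(1)] .
  have dg: "deg G (tail G (evt G d (ts ! 0))) \<le> 60" using assms(2) unfolding small_def by simp
  have n0: "map (\<lambda>t. tail G (evt G d t)) ts ! 0 = tail G (evt G d (ts ! 0))" using \<open>ts \<noteq> []\<close> by simp
  show ?thesis
    unfolding facial_iff[OF e dg _ n0, where n="length ts", simplified] facialF_def evf.simps evf_exl evf_distF evf_wF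
    using assms(3) by (auto simp: ex_bool_eq)
qed

lemma all_1_4: "(\<forall>j. 1 \<le> j \<and> j < (4::nat) \<longrightarrow> P j) \<longleftrightarrow> P 1 \<and> P 2 \<and> P 3"
  by (auto simp: numeral_eq_Suc less_Suc_eq le_Suc_eq)
lemma all_1_5: "(\<forall>j. 1 \<le> j \<and> j < (5::nat) \<longrightarrow> P j) \<longleftrightarrow> P 1 \<and> P 2 \<and> P 3 \<and> P 4"
  by (auto simp: numeral_eq_Suc less_Suc_eq le_Suc_eq)
lemma all_1_6: "(\<forall>j. 1 \<le> j \<and> j < (6::nat) \<longrightarrow> P j) \<longleftrightarrow> P 1 \<and> P 2 \<and> P 3 \<and> P 4 \<and> P 5"
  by (auto simp: numeral_eq_Suc less_Suc_eq le_Suc_eq)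

lemma ex4: assumes "d0 \<in> darts G" "deg G (tail G d0) \<le> 60"
  shows "(\<exists>v2 v3 v4. facial G [tail G d0, v2, v3, v4] \<and> Q v2 v3 v4) \<longleftrightarrow>
    (\<exists>i<60. \<exists>ori. (phi G ^^ 4) (sk G i d0) = sk G i d0 \<and>
      distinct [tail G d0, tail G (wr G ori 4 1 (sk G i d0)), tail G (wr G ori 4 2 (sk G i d0)), tail G (wr G ori 4 3 (sk G i d0))] \<and>
      Q (tail G (wr G ori 4 1 (sk G i d0))) (tail G (wr G ori 4 2 (sk G i d0))) (tail G (wr G ori 4 3 (sk G i d0))))"
  (is "?L \<longleftrightarrow> ?R")
proof
  assume ?L
  then obtain v2 v3 v4 where f: "facial G [tail G d0, v2, v3, v4]" "Q v2 v3 v4" by blast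
  then show ?R using facial_iff[OF assms, of "[tail G d0, v2, v3, v4]" 4] unfolding all_1_4 by auto
next
  assume ?R
  then obtain i ori where "i < 60" "(phi G ^^ 4) (sk G i d0) = sk G i d0"
    "distinct [tail G d0, tail G (wr G ori 4 1 (sk G i d0)), tail G (wr G ori 4 2 (sk G i d0)), tail G (wr G ori 4 3 (sk G i d0))]"
    "Q (tail G (wr G ori 4 1 (sk G i d0))) (tail G (wr G ori 4 2 (sk G i d0))) (tail G (wr G ori 4 3 (sk G i d0)))" by blast
  then show ?L using facial_iff[OF assms, of "[tail G d0, tail G (wr G ori 4 1 (sk G i d0)), tail G (wr G ori 4 2 (sk G i d0)), tail G (wr G ori 4 3 (sk G i d0))]" 4]
    unfolding all_1_4 by (intro exI conjI) auto
qed

lemma ex5: assumes "d0 \<in> darts G" "deg G (tail G d0) \<le> 60"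
  shows "(\<exists>v2 v3 v4 v5. facial G [tail G d0, v2, v3, v4, v5] \<and> Q v2 v3 v4 v5) \<longleftrightarrow>
    (\<exists>i<60. \<exists>ori. (phi G ^^ 5) (sk G i d0) = sk G i d0 \<and>
      distinct [tail G d0, tail G (wr G ori 5 1 (sk G i d0)), tail G (wr G ori 5 2 (sk G i d0)), tail G (wr G ori 5 3 (sk G i d0)), tail G (wr G ori 5 4 (sk G i d0))] \<and>
      Q (tail G (wr G ori 5 1 (sk G i d0))) (tail G (wr G ori 5 2 (sk G i d0))) (tail G (wr G ori 5 3 (sk G i d0))) (tail G (wr G ori 5 4 (sk G i d0))))"
  (is "?L \<longleftrightarrow> ?R")
proof
  assume ?L
  then obtain v2 v3 v4 v5 where f: "facial G [tail G d0, v2, v3, v4, v5]" "Q v2 v3 v4 v5" by blast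
  then show ?R using facial_iff[OF assms, of "[tail G d0, v2, v3, v4, v5]" 5] unfolding all_1_5 by auto
next
  assume ?R
  then obtain i ori where "i < 60" "(phi G ^^ 5) (sk G i d0) = sk G i d0"
    "distinct [tail G d0, tail G (wr G ori 5 1 (sk G i d0)), tail G (wr G ori 5 2 (sk G i d0)), tail G (wr G ori 5 3 (sk G i d0)), tail G (wr G ori 5 4 (sk G i d0))]"
    "Q (tail G (wr G ori 5 1 (sk G i d0))) (tail G (wr G ori 5 2 (sk G i d0))) (tail G (wr G ori 5 3 (sk G i d0))) (tail G (wr G ori 5 4 (sk G i d0)))" by blast
  then show ?L using facial_iff[OF assms, of "[tail G d0, tail G (wr G ori 5 1 (sk G i d0)), tail G (wr G ori 5 2 (sk G i d0)), tail G (wr G ori 5 3 (sk G i d0)), tail G (wr G ori 5 4 (sk G i d0))]" 5]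
    unfolding all_1_5 by (intro exI conjI) auto
qed

lemma ex6: assumes "d0 \<in> darts G" "deg G (tail G d0) \<le> 60"
  shows "(\<exists>v2 v3 v4 v5 v6. facial G [tail G d0, v2, v3, v4, v5, v6] \<and> Q v2 v3 v4 v5 v6) \<longleftrightarrow>
    (\<exists>i<60. \<exists>ori. (phi G ^^ 6) (sk G i d0) = sk G i d0 \<and>
      distinct [tail G d0, tail G (wr G ori 6 1 (sk G i d0)), tail G (wr G ori 6 2 (sk G i d0)), tail G (wr G ori 6 3 (sk G i d0)), tail G (wr G ori 6 4 (sk G i d0)), tail G (wr G ori 6 5 (sk G i d0))] \<and>
      Q (tail G (wr G ori 6 1 (sk G i d0))) (tail G (wr G ori 6 2 (sk G i d0))) (tail G (wr G ori 6 3 (sk G i d0))) (tail G (wr G ori 6 4 (sk G i d0))) (tail G (wr G ori 6 5 (sk G i d0))))"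
  (is "?L \<longleftrightarrow> ?R")
proof
  assume ?L
  then obtain v2 v3 v4 v5 v6 where f: "facial G [tail G d0, v2, v3, v4, v5, v6]" "Q v2 v3 v4 v5 v6" by blast
  then show ?R using facial_iff[OF assms, of "[tail G d0, v2, v3, v4, v5, v6]" 6] unfolding all_1_6 by auto
next
  assume ?R
  then obtain i ori where "i < 60" "(phi G ^^ 6) (sk G i d0) = sk G i d0"
    "distinct [tail G d0, tail G (wr G ori 6 1 (sk G i d0)), tail G (wr G ori 6 2 (sk G i d0)), tail G (wr G ori 6 3 (sk G i d0)), tail G (wr G ori 6 4 (sk G i d0)), tail G (wr G ori 6 5 (sk G i d0))]"
    "Q (tail G (wr G ori 6 1 (sk G i d0))) (tail G (wr G ori 6 2 (sk G i d0))) (tail G (wr G ori 6 3 (sk G i d0))) (tail G (wr G ori 6 4 (sk G i d0))) (tail G (wr G ori 6 5 (sk G i d0)))" by blast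
  then show ?L using facial_iff[OF assms, of "[tail G d0, tail G (wr G ori 6 1 (sk G i d0)), tail G (wr G ori 6 2 (sk G i d0)), tail G (wr G ori 6 3 (sk G i d0)), tail G (wr G ori 6 4 (sk G i d0)), tail G (wr G ori 6 5 (sk G i d0))]" 6]
    unfolding all_1_6 by (intro exI conjI) auto
qed

end

definition adjS :: "('v,'d) rotsys \<Rightarrow> 'd \<Rightarrow> 'v \<Rightarrow> bool" where
  "adjS G d w = (\<exists>k<60. head G (sk G k d) = w)"

lemma evf_adjF'[simp]: "evf G d (adjF a b) = adjS G (evt G d a) (tail G (evt G d b))"
  unfolding adjF_def adjS_def by simp

lemma gpath1: "gpath G [a] \<longleftrightarrow> a \<in> verts G" unfolding gpath_def by auto
lemma gpath2: "gpath G [a,b] \<longleftrightarrow> a \<noteq> b \<and> a \<in> verts G \<and> b \<in> verts G \<and> adj G a b"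
  unfolding gpath_def by (auto simp: less_Suc_eq)
lemma gpath3: "gpath G [a,b,c] \<longleftrightarrow> distinct [a,b,c] \<and> a \<in> verts G \<and> b \<in> verts G \<and> c \<in> verts G \<and> adj G a b \<and> adj G b c"
  unfolding gpath_def by (auto simp: less_Suc_eq numeral_eq_Suc)
lemma gpath4: "gpath G [a,b,c,e] \<longleftrightarrow> distinct [a,b,c,e] \<and> a \<in> verts G \<and> b \<in> verts G \<and> c \<in> verts G \<and> e \<in> verts G \<and>
   adj G a b \<and> adj G b c \<and> adj G c e"
  unfolding gpath_def by (auto simp: less_Suc_eq numeral_eq_Suc)

lemma pe2: "path_edges [a,b] = {{a,b}}" unfolding path_edges_def by (auto simp: less_Suc_eq)
lemma pe3: "path_edges [a,b,c] = {{a,b},{b,c}}" unfolding path_edges_def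
  by (simp add: less_Suc_eq numeral_eq_Suc conj_disj_distribL ex_disj_distrib insert_commute, blast)
lemma pe4: "path_edges [a,b,c,e] = {{a,b},{b,c},{c,e}}" unfolding path_edges_def
  by (simp add: less_Suc_eq numeral_eq_Suc conj_disj_distribL ex_disj_distrib insert_commute, blast)

lemma list_cases4: assumes "ps \<noteq> []" "length ps \<le> 4"
  shows "(\<exists>a. ps = [a]) \<or> (\<exists>a b. ps = [a,b]) \<or> (\<exists>a b c. ps = [a,b,c]) \<or> (\<exists>a b c e. ps = [a,b,c,e])"
proof -
  obtain a ps1 where "ps = a # ps1" using assms(1) by (cases ps) auto
  then show ?thesis using assms(2)
    by (cases ps1; cases "tl ps1"; cases "tl (tl ps1)"; cases "tl (tl (tl ps1))") auto
qed

context fixes G :: "('v,'d) rotsys" assumes wf: "wf_rotsys G" and simp: "simple_rotsys G"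
   and tf: "triangle_free G" begin

lemma tri: "adj G a b \<Longrightarrow> adj G b c \<Longrightarrow> adj G c a \<Longrightarrow> False"
  using tf unfolding triangle_free_def by blast

lemma adjS_sound: "d \<in> darts G \<Longrightarrow> adjS G d w \<Longrightarrow> adj G (tail G d) w"
  unfolding adjS_def using sk_in[OF wf] head_adj[OF wf simp] by metis

lemma adjS_iff: "d \<in> darts G \<Longrightarrow> small G (tail G d) \<Longrightarrow> adjS G d w \<longleftrightarrow> adj G (tail G d) w"
  unfolding adjS_def using nb_enum[OF wf simp, where N=60] unfolding small_def by auto

lemma nbq_all: "d \<in> darts G \<Longrightarrow> deg G (tail G d) \<le> 60 \<Longrightarrow>
   (\<forall>m<60. P (head G (sk G m d))) \<longleftrightarrow> (\<forall>w. adj G (tail G d) w \<longrightarrow> P w)"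
  using nb_enum[OF wf simp, where N=60] by metis

lemma nbq_ex: "d \<in> darts G \<Longrightarrow> deg G (tail G d) \<le> 60 \<Longrightarrow>
   (\<exists>m<60. P (head G (sk G m d))) \<longleftrightarrow> (\<exists>w. adj G (tail G d) w \<and> P w)"
  using nb_enum[OF wf simp, where N=60] by metis

lemma fw_adj: assumes "facial_walk G ws" "j < length ws"
  shows "adj G (ws ! j) (ws ! (Suc j mod length ws))"
proof -
  obtain d where d: "d \<in> darts G" "\<forall>i<length ws. tail G ((phi G ^^ i) d) = ws ! i" "(phi G ^^ length ws) d = d"
    using assms(1) unfolding facial_walk_def by blast
  have dj: "(phi G ^^ j) d \<in> darts G" using phi_in[OF wf simp d(1)] .
  have "head G ((phi G ^^ j) d) = tail G ((phi G ^^ Suc j) d)"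
    using wf_succ[OF wf] wf_twin[OF wf dj] by (simp add: head_def phi_def)
  also have "\<dots> = ws ! (Suc j mod length ws)"
  proof (cases "Suc j < length ws")
    case True then show ?thesis using d(2)[rule_format, OF True] by simp
  next
    case False then have "Suc j = length ws" using assms(2) by simp
    moreover have "ws \<noteq> []" using assms(2) by (metis list.size(3) not_less0)
    ultimately show ?thesis using d(2)[rule_format, of 0] d(3) by auto
  qed
  finally show ?thesis using head_adj[OF wf simp dj] d(2) assms(2) by metis
qed

lemma facial_adj_gen: assumes "facial G vs" "j < length vs"
  shows "adj G (vs ! j) (vs ! (Suc j mod length vs))"
proof -
  from assms(1) have "facial_walk G vs \<or> facial_walk G (rev vs)" unfolding facial_def by blast
  then show ?thesis
  proof
    assume "facial_walk G vs" then show ?thesis using fw_adj assms(2) by blast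
  next
    assume r: "facial_walk G (rev vs)"
    let ?n = "length vs"
    have ne: "vs \<noteq> []" using assms(2) by (metis list.size(3) not_less0)
    have n0: "?n > 0" using ne by simp
    define i where "i = ?n - 1 - (Suc j mod ?n)"
    have i: "i < ?n" unfolding i_def using n0 by simp
    have "adj G (rev vs ! i) (rev vs ! (Suc i mod ?n))" using fw_adj[OF r] i ne by simp
    moreover have "rev vs ! i = vs ! (Suc j mod ?n)"
    proof -
      have m: "Suc j mod ?n < ?n" using n0 by simp
      then have "?n - Suc i = Suc j mod ?n" unfolding i_def by linarith
      then show ?thesis using i by (simp add: rev_nth)
    qed
    moreover have "Suc i mod ?n = ?n - 1 - j"
    proof (cases "Suc j < ?n")
      case True then show ?thesis unfolding i_def using ne by simp
    next
      case False then have "Suc j = ?n" using assms(2) by simp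
      then show ?thesis unfolding i_def using ne by simp
    qed
    moreover have "rev vs ! (?n - 1 - j) = vs ! j" using assms(2) by (simp add: rev_nth)
    ultimately show ?thesis using adj_sym[OF wf simp] by metis
  qed
qed

lemma facial4_adj: assumes "facial G [a,b,c,e]"
  shows "adj G a b \<and> adj G b c \<and> adj G c e \<and> adj G e a"
  using facial_adj_gen[OF assms, of 0] facial_adj_gen[OF assms, of 1] facial_adj_gen[OF assms, of 2]
    facial_adj_gen[OF assms, of 3] by simp

lemma facial5_adj: assumes "facial G [a,b,c,e,f]"
  shows "adj G a b \<and> adj G b c \<and> adj G c e \<and> adj G e f \<and> adj G f a"
  using facial_adj_gen[OF assms, of 0] facial_adj_gen[OF assms, of 1] facial_adj_gen[OF assms, of 2]
    facial_adj_gen[OF assms, of 3] facial_adj_gen[OF assms, of 4] by simp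

lemma facial6_adj: assumes "facial G [a,b,c,e,f,g]"
  shows "adj G a b \<and> adj G b c \<and> adj G c e \<and> adj G e f \<and> adj G f g \<and> adj G g a"
  using facial_adj_gen[OF assms, of 0] facial_adj_gen[OF assms, of 1] facial_adj_gen[OF assms, of 2]
    facial_adj_gen[OF assms, of 3] facial_adj_gen[OF assms, of 4] facial_adj_gen[OF assms, of 5] by simp

end

lemma evt_nbt_d[simp]: "evt G d (nbt k t) = twin G (sk G k (evt G d t))" by (simp add: nbt_def)
lemma tail_twin[simp]: "tail G (twin G x) = head G x" by (simp add: head_def)

definition tetBody :: "dterm \<Rightarrow> dterm \<Rightarrow> dterm \<Rightarrow> dterm \<Rightarrow> dterm \<Rightarrow> form" where
  "tetBody r1 r2 r3 r4 x = conjL [Neg (EqV x r2), Neg (EqV x r4), smallF x,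
    Disj (smallF r3) (alll 60 (\<lambda>m. Disj (smallF (nbt m x)) (Disj (facialF [r1, r2, nbt m x, x]) (facialF [r1, r4, nbt m x, x])))),
    Neg (adjF x r3),
    alll 60 (\<lambda>m. Disj (EqV (nbt m x) r1) (Conj (Neg (adjF r3 (nbt m x))) (Neg (adjF (nbt m x) r3))))]"

definition tetR :: "dterm \<Rightarrow> dterm \<Rightarrow> dterm \<Rightarrow> dterm \<Rightarrow> form" where
  "tetR r1 r2 r3 r4 = exl 60 (\<lambda>k. tetBody r1 r2 r3 r4 (nbt k r1))"

definition TetX :: "('v,'d) rotsys \<Rightarrow> 'v \<Rightarrow> 'v \<Rightarrow> 'v \<Rightarrow> 'v \<Rightarrow> 'v \<Rightarrow> bool" where
  "TetX G V1 V2 V3 V4 x \<longleftrightarrow> x \<noteq> V2 \<and> x \<noteq> V4 \<and> small G x \<and>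
     (small G V3 \<or> (\<forall>w. adj G x w \<longrightarrow> small G w \<or> facial G [V1, V2, w, x] \<or> facial G [V1, V4, w, x])) \<and>
     \<not> adj G x V3 \<and> (\<forall>b. adj G x b \<longrightarrow> b = V1 \<or> \<not> adj G b V3)"

context fixes G :: "('v,'d) rotsys" assumes wf: "wf_rotsys G" and simp: "simple_rotsys G"
   and tf: "triangle_free G" begin

lemma safety_tet: assumes f: "facial G [V1,V2,V3,V4]" and dg: "deg G V1 = 3" and x: "adj G V1 x" "x \<noteq> V2" "x \<noteq> V4"
  shows "(\<forall>ps. gpath G ps \<and> hd ps = V1 \<and> last ps = V3 \<and> length ps \<le> 4 \<longrightarrow>
           path_edges ps \<subseteq> {{V1, V2}, {V2, V3}, {V3, V4}, {V4, V1}}) \<longleftrightarrow>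
         (\<not> adj G x V3 \<and> (\<forall>b. adj G x b \<longrightarrow> b = V1 \<or> \<not> adj G b V3))"
proof -
  have a: "adj G V1 V2" "adj G V2 V3" "adj G V3 V4" "adj G V4 V1" using facial4_adj[OF wf simp tf f] by auto
  have ds: "distinct [V1,V2,V3,V4]" using f unfolding facial_def by blast
  have nb: "w = V2 \<or> w = V4 \<or> w = x" if "adj G V1 w" for w
    using nbr3[OF wf simp dg a(1) adj_sym[OF wf simp a(4)] x(1) _ that] ds x by auto
  have n13: "\<not> adj G V1 V3" using tri[OF wf simp tf a(1) a(2)] adj_sym[OF wf simp] by blast
  have n31: "\<not> adj G V3 V1" using n13 adj_sym[OF wf simp] by blast
  have xV3: "x \<noteq> V3" using n13 x(1) by blast
  have xV1: "x \<noteq> V1" using adj_ne[OF wf simp x(1)] by blast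
  have vv: "V1 \<in> verts G" "x \<in> verts G" "V3 \<in> verts G" using adj_verts[OF wf simp] x(1) a by blast+
  show ?thesis
  proof
    assume S: "\<forall>ps. gpath G ps \<and> hd ps = V1 \<and> last ps = V3 \<and> length ps \<le> 4 \<longrightarrow>
           path_edges ps \<subseteq> {{V1, V2}, {V2, V3}, {V3, V4}, {V4, V1}}"
    have "\<not> adj G x V3"
    proof
      assume "adj G x V3"
      then have "gpath G [V1, x, V3]" unfolding gpath3 using x(1) vv xV3 xV1 ds by simp
      then have "path_edges [V1, x, V3] \<subseteq> {{V1, V2}, {V2, V3}, {V3, V4}, {V4, V1}}" using S by simp
      then have "{V1, x} \<in> {{V1, V2}, {V2, V3}, {V3, V4}, {V4, V1}}" unfolding pe3 by blast
      then show False using ds x xV1 xV3 by (simp add: doubleton_eq_iff)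
    qed
    moreover have "b = V1 \<or> \<not> adj G b V3" if "adj G x b" for b
    proof (rule ccontr)
      assume "\<not> (b = V1 \<or> \<not> adj G b V3)"
      then have b: "b \<noteq> V1" "adj G b V3" by auto
      have "b \<noteq> x" "b \<noteq> V3" using adj_ne[OF wf simp] that b by blast+
      moreover have "b \<in> verts G" using adj_verts[OF wf simp that] by blast
      ultimately have "gpath G [V1, x, b, V3]" unfolding gpath4 using x(1) vv xV3 xV1 ds b that by simp
      then have "path_edges [V1, x, b, V3] \<subseteq> {{V1, V2}, {V2, V3}, {V3, V4}, {V4, V1}}" using S by simp
      then have "{V1, x} \<in> {{V1, V2}, {V2, V3}, {V3, V4}, {V4, V1}}" unfolding pe4 by blast
      then show False using ds x xV1 xV3 by (simp add: doubleton_eq_iff)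
    qed
    ultimately show "\<not> adj G x V3 \<and> (\<forall>b. adj G x b \<longrightarrow> b = V1 \<or> \<not> adj G b V3)" by blast
  next
    assume R: "\<not> adj G x V3 \<and> (\<forall>b. adj G x b \<longrightarrow> b = V1 \<or> \<not> adj G b V3)"
    show "\<forall>ps. gpath G ps \<and> hd ps = V1 \<and> last ps = V3 \<and> length ps \<le> 4 \<longrightarrow>
           path_edges ps \<subseteq> {{V1, V2}, {V2, V3}, {V3, V4}, {V4, V1}}"
    proof (intro allI impI)
      fix ps assume p: "gpath G ps \<and> hd ps = V1 \<and> last ps = V3 \<and> length ps \<le> 4"
      have "ps \<noteq> []" using p unfolding gpath_def by blast
      moreover have "length ps \<le> 4" using p by blast
      ultimately have lc: "(\<exists>a. ps = [a]) \<or> (\<exists>a b. ps = [a,b]) \<or> (\<exists>a b c. ps = [a,b,c]) \<or> (\<exists>a b c e. ps = [a,b,c,e])"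
        by (rule list_cases4)
      consider (c1) a where "ps = [a]" | (c2) a b where "ps = [a,b]" | (c3) a b c where "ps = [a,b,c]"
        | (c4) a b c e where "ps = [a,b,c,e]" using lc by blast
      then show "path_edges ps \<subseteq> {{V1, V2}, {V2, V3}, {V3, V4}, {V4, V1}}"
      proof cases
        case c1 then have False using p ds by auto
        then show ?thesis ..
      next
        case c2 then have False using p n13 by (auto simp: gpath2)
        then show ?thesis ..
      next
        case (c3 a b c)
        then have "a = V1" "c = V3" "adj G V1 b" "adj G b V3" using p by (auto simp: gpath3)
        then have "b = V2 \<or> b = V4" using nb R by blast
        then have "ps = [V1,V2,V3] \<or> ps = [V1,V4,V3]" using c3 \<open>a = V1\<close> \<open>c = V3\<close> by blast
        then show ?thesis
        proof
          assume "ps = [V1,V2,V3]"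
          then have "path_edges ps = {{V1,V2},{V2,V3}}" using pe3 by simp
          then show ?thesis by blast
        next
          assume "ps = [V1,V4,V3]"
          then have "path_edges ps = {{V1,V4},{V4,V3}}" using pe3 by simp
          moreover have "{V1,V4} = {V4,V1}" "{V4,V3} = {V3,V4}" by blast+
          ultimately show ?thesis by simp
        qed
      next
        case (c4 a b c e)
        have g: "gpath G [a,b,c,e]" "a = V1" "e = V3" using p c4 by auto
        have gg: "distinct [a,b,c,e] \<and> a \<in> verts G \<and> b \<in> verts G \<and> c \<in> verts G \<and> e \<in> verts G \<and>
          adj G a b \<and> adj G b c \<and> adj G c e" using g(1) by (simp only: gpath4)
        have "a = V1" "e = V3" "adj G V1 b" "adj G b c" "adj G c V3" "c \<noteq> V1"
          using gg g(2,3) by auto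
        moreover have "b \<noteq> V2"
        proof
          assume "b = V2" then show False
            using tri[OF wf simp tf, of V2 c V3] adj_sym[OF wf simp a(2)] calculation by blast
        qed
        moreover have "b \<noteq> V4"
        proof
          assume "b = V4" then show False
            using tri[OF wf simp tf, of V4 c V3] a(3) calculation by blast
        qed
        ultimately have "b = x" using nb by blast
        then have False using R \<open>adj G b c\<close> \<open>adj G c V3\<close> \<open>c \<noteq> V1\<close> by blast
        then show ?thesis ..
      qed
    qed
  qed
qed

lemma tet_graph: assumes f: "facial G [V1,V2,V3,V4]" and dg: "deg G V1 = 3"
  shows "secure_tetragram G V1 V2 V3 V4 \<longleftrightarrow> (\<exists>x. adj G V1 x \<and> TetX G V1 V2 V3 V4 x)"
proof -
  have sm: "small G V1" using dg unfolding small_def by simp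
  show ?thesis
  proof
    assume st: "secure_tetragram G V1 V2 V3 V4"
    have S: "\<forall>ps. gpath G ps \<and> hd ps = V1 \<and> last ps = V3 \<and> length ps \<le> 4 \<longrightarrow>
           path_edges ps \<subseteq> {{V1, V2}, {V2, V3}, {V3, V4}, {V4, V1}}" using st unfolding secure_tetragram_def by (elim conjE) assumption
    have "\<exists>x. other_nb G V1 V2 V4 x \<and> small G x \<and>
        (small G V3 \<or> (\<forall>w. adj G x w \<longrightarrow> small G w \<or> facial G [V1, V2, w, x] \<or> facial G [V1, V4, w, x]))"
      using st unfolding secure_tetragram_def by (elim conjE) assumption
    then obtain x where x0: "other_nb G V1 V2 V4 x" and x: "small G x"
      "small G V3 \<or> (\<forall>w. adj G x w \<longrightarrow> small G w \<or> facial G [V1, V2, w, x] \<or> facial G [V1, V4, w, x])" by blast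
    have x1: "adj G V1 x" "x \<noteq> V2" "x \<noteq> V4" using x0 unfolding other_nb_def by blast+
    have "\<not> adj G x V3 \<and> (\<forall>b. adj G x b \<longrightarrow> b = V1 \<or> \<not> adj G b V3)"
      using safety_tet[OF f dg x1] S by blast
    then show "\<exists>x. adj G V1 x \<and> TetX G V1 V2 V3 V4 x"
      unfolding TetX_def using x x1 by blast
  next
    assume "\<exists>x. adj G V1 x \<and> TetX G V1 V2 V3 V4 x"
    then obtain x where x: "adj G V1 x" "TetX G V1 V2 V3 V4 x" by blast
    then have t: "x \<noteq> V2" "x \<noteq> V4" "small G x"
      "small G V3 \<or> (\<forall>w. adj G x w \<longrightarrow> small G w \<or> facial G [V1, V2, w, x] \<or> facial G [V1, V4, w, x])"
      "\<not> adj G x V3 \<and> (\<forall>b. adj G x b \<longrightarrow> b = V1 \<or> \<not> adj G b V3)" unfolding TetX_def by blast+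
    have S: "\<forall>ps. gpath G ps \<and> hd ps = V1 \<and> last ps = V3 \<and> length ps \<le> 4 \<longrightarrow>
           path_edges ps \<subseteq> {{V1, V2}, {V2, V3}, {V3, V4}, {V4, V1}}"
      using safety_tet[OF f dg x(1) t(1,2)] t(5) by (rule iffD2)
    have "other_nb G V1 V2 V4 x" unfolding other_nb_def using x(1) t by blast
    then show "secure_tetragram G V1 V2 V3 V4"
      unfolding secure_tetragram_def tetragram_def
      apply (intro conjI)
      using f apply assumption
      using S apply assumption
      using sm apply assumption
      using dg apply assumption
      using t(3,4) by blast
  qed
qed


lemma tet_body: assumes d: "d \<in> darts G"
  and f: "facial G [tail G (evt G d r1), tail G (evt G d r2), tail G (evt G d r3), tail G (evt G d r4)]"
  and dg: "deg G (tail G (evt G d r1)) = 3"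
  shows "evf G d (tetBody r1 r2 r3 r4 (nbt k r1)) \<longleftrightarrow>
     TetX G (tail G (evt G d r1)) (tail G (evt G d r2)) (tail G (evt G d r3)) (tail G (evt G d r4)) (head G (sk G k (evt G d r1)))"
proof -
  define V1 where "V1 = tail G (evt G d r1)"
  define V2 where "V2 = tail G (evt G d r2)"
  define V3 where "V3 = tail G (evt G d r3)"
  define V4 where "V4 = tail G (evt G d r4)"
  define e1 where "e1 = evt G d r1"
  define e3 where "e3 = evt G d r3"
  define dx where "dx = twin G (sk G k e1)"
  define x where "x = head G (sk G k e1)"
  have e1: "e1 \<in> darts G" unfolding e1_def using evt_in[OF wf simp d] .
  have e3: "e3 \<in> darts G" unfolding e3_def using evt_in[OF wf simp d] .
  have dx: "dx \<in> darts G" "tail G dx = x" unfolding dx_def x_def using sk_in[OF wf e1] wf_twin[OF wf] by auto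
  have xadj: "adj G V1 x" unfolding x_def V1_def e1_def using sk_in[OF wf evt_in[OF wf simp d]] head_adj[OF wf simp] by metis
  have sm1: "small G V1" using dg unfolding small_def V1_def by simp
  have sm1': "small G (tail G (evt G d ([r1, r2, nbt m (nbt k r1), nbt k r1] ! 0)))"
     "small G (tail G (evt G d ([r1, r4, nbt m (nbt k r1), nbt k r1] ! 0)))" for m
    using sm1 unfolding V1_def by simp_all
  have a: "adj G V1 V2" "adj G V2 V3" "adj G V3 V4" "adj G V4 V1"
    using facial4_adj[OF wf simp tf f] unfolding V1_def V2_def V3_def V4_def by auto
  have sem: "evf G d (tetBody r1 r2 r3 r4 (nbt k r1)) \<longleftrightarrow>
    x \<noteq> V2 \<and> x \<noteq> V4 \<and> small G x \<and>
    (small G V3 \<or> (\<forall>m<60. small G (head G (sk G m dx)) \<or> facial G [V1, V2, head G (sk G m dx), x] \<or>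
        facial G [V1, V4, head G (sk G m dx), x])) \<and>
    \<not> adjS G dx V3 \<and>
    (\<forall>m<60. head G (sk G m dx) = V1 \<or> (\<not> adjS G e3 (head G (sk G m dx)) \<and> \<not> adjS G (twin G (sk G m dx)) V3))"
    unfolding tetBody_def V1_def V2_def V3_def V4_def x_def dx_def e1_def e3_def
    using evf_smallF[OF wf simp d] evf_facialF[OF wf simp d sm1'(1)] evf_facialF[OF wf simp d sm1'(2)]
    by simp
  show ?thesis
  proof (cases "small G x")
    case False
    then show ?thesis unfolding sem TetX_def V1_def[symmetric] V2_def[symmetric] V3_def[symmetric] V4_def[symmetric]
       e1_def[symmetric] x_def[symmetric] by simp
  next
    case True
    have dgx: "deg G (tail G dx) \<le> 60" using True dx(2) unfolding small_def by simp
    have q1: "(\<forall>m<60. small G (head G (sk G m dx)) \<or> facial G [V1, V2, head G (sk G m dx), x] \<or>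
        facial G [V1, V4, head G (sk G m dx), x]) \<longleftrightarrow>
        (\<forall>w. adj G x w \<longrightarrow> small G w \<or> facial G [V1, V2, w, x] \<or> facial G [V1, V4, w, x])"
      using nbq_all[OF wf simp tf dx(1) dgx, of "\<lambda>w. small G w \<or> facial G [V1, V2, w, x] \<or> facial G [V1, V4, w, x]"] dx(2) by simp
    have q2: "adjS G dx V3 \<longleftrightarrow> adj G x V3" using adjS_iff[OF wf simp tf dx(1)] True dx(2) by simp
    have q3: "(\<forall>m<60. head G (sk G m dx) = V1 \<or> (\<not> adjS G e3 (head G (sk G m dx)) \<and> \<not> adjS G (twin G (sk G m dx)) V3))
       \<longleftrightarrow> (\<forall>b. adj G x b \<longrightarrow> b = V1 \<or> \<not> adj G b V3)"
      if cond: "small G V3 \<or> (\<forall>w. adj G x w \<longrightarrow> small G w \<or> facial G [V1, V2, w, x] \<or> facial G [V1, V4, w, x])"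
    proof -
      have pt: "(\<not> adjS G e3 (head G (sk G m dx)) \<and> \<not> adjS G (twin G (sk G m dx)) V3) \<longleftrightarrow> \<not> adj G (head G (sk G m dx)) V3"
        if m: "m < 60" for m
      proof -
        define w where "w = head G (sk G m dx)"
        define dw where "dw = twin G (sk G m dx)"
        have dw: "dw \<in> darts G" "tail G dw = w" unfolding dw_def w_def using sk_in[OF wf dx(1)] wf_twin[OF wf] by auto
        have xw: "adj G x w" unfolding w_def using sk_in[OF wf dx(1)] head_adj[OF wf simp] dx(2) by metis
        have s1: "adjS G e3 w \<Longrightarrow> adj G w V3" using adjS_sound[OF wf simp tf e3] adj_sym[OF wf simp] unfolding e3_def V3_def by blast
        have s2: "adjS G dw V3 \<Longrightarrow> adj G w V3" using adjS_sound[OF wf simp tf dw(1)] dw(2) by simp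
        have "adj G w V3 \<Longrightarrow> adjS G e3 w \<or> adjS G dw V3"
        proof -
          assume wv: "adj G w V3"
          show ?thesis
          proof (cases "small G V3")
            case True
            then show ?thesis using adjS_iff[OF wf simp tf e3] adj_sym[OF wf simp wv] unfolding e3_def V3_def by simp
          next
            case False
            then have "small G w \<or> facial G [V1, V2, w, x] \<or> facial G [V1, V4, w, x]" using cond xw by blast
            then show ?thesis
            proof (elim disjE)
              assume "small G w" then show ?thesis using adjS_iff[OF wf simp tf dw(1)] dw(2) wv by simp
            next
              assume "facial G [V1, V2, w, x]"
              then have "adj G V2 w" using facial4_adj[OF wf simp tf] by blast
              then show ?thesis using tri[OF wf simp tf \<open>adj G V2 w\<close> wv] adj_sym[OF wf simp a(2)] by blast
            next
              assume "facial G [V1, V4, w, x]"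
              then have "adj G V4 w" using facial4_adj[OF wf simp tf] by blast
              then show ?thesis using tri[OF wf simp tf \<open>adj G V4 w\<close> wv a(3)] by blast
            qed
          qed
        qed
        then show ?thesis using s1 s2 unfolding w_def[symmetric] dw_def[symmetric] by blast
      qed
      have "(\<forall>m<60. head G (sk G m dx) = V1 \<or> (\<not> adjS G e3 (head G (sk G m dx)) \<and> \<not> adjS G (twin G (sk G m dx)) V3))
         \<longleftrightarrow> (\<forall>m<60. head G (sk G m dx) = V1 \<or> \<not> adj G (head G (sk G m dx)) V3)"
        using pt by blast
      also have "\<dots> \<longleftrightarrow> (\<forall>b. adj G x b \<longrightarrow> b = V1 \<or> \<not> adj G b V3)"
        using nbq_all[OF wf simp tf dx(1) dgx, of "\<lambda>b. b = V1 \<or> \<not> adj G b V3"] dx(2) by simp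
      finally show ?thesis .
    qed
    have "evf G d (tetBody r1 r2 r3 r4 (nbt k r1)) \<longleftrightarrow> TetX G V1 V2 V3 V4 x"
      unfolding sem TetX_def q1 q2 using q3 True by blast
    then show ?thesis unfolding V1_def V2_def V3_def V4_def x_def e1_def .
  qed
qed

lemma tet_form: assumes d: "d \<in> darts G"
  and f: "facial G [tail G (evt G d r1), tail G (evt G d r2), tail G (evt G d r3), tail G (evt G d r4)]"
  and dg: "deg G (tail G (evt G d r1)) = 3"
  shows "evf G d (tetR r1 r2 r3 r4) \<longleftrightarrow>
     (\<exists>x. adj G (tail G (evt G d r1)) x \<and> TetX G (tail G (evt G d r1)) (tail G (evt G d r2)) (tail G (evt G d r3)) (tail G (evt G d r4)) x)"
proof -
  have e1: "evt G d r1 \<in> darts G" using evt_in[OF wf simp d] .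
  have "evf G d (tetR r1 r2 r3 r4) \<longleftrightarrow> (\<exists>k<60. TetX G (tail G (evt G d r1)) (tail G (evt G d r2)) (tail G (evt G d r3)) (tail G (evt G d r4)) (head G (sk G k (evt G d r1))))"
    unfolding tetR_def evf_exl using tet_body[OF d f dg] by simp
  also have "\<dots> \<longleftrightarrow> (\<exists>x. adj G (tail G (evt G d r1)) x \<and> TetX G (tail G (evt G d r1)) (tail G (evt G d r2)) (tail G (evt G d r3)) (tail G (evt G d r4)) x)" using nbq_ex[OF wf simp tf e1, of "TetX G (tail G (evt G d r1)) (tail G (evt G d r2)) (tail G (evt G d r3)) (tail G (evt G d r4))"] dg by simp
  finally show ?thesis .
qed

end

definition octR :: "dterm \<Rightarrow> dterm \<Rightarrow> dterm \<Rightarrow> dterm \<Rightarrow> form" where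
  "octR r1 r2 r3 r4 = conjL [deg3F r2, deg3F r3, deg3F r4]"

definition decBody :: "dterm \<Rightarrow> dterm \<Rightarrow> dterm \<Rightarrow> dterm \<Rightarrow> dterm \<Rightarrow> dterm \<Rightarrow> dterm \<Rightarrow> form" where
  "decBody r1 r2 r3 r4 r5 x1 x3 = conjL [Neg (EqV x1 r5), Neg (EqV x1 r2), Neg (EqV x3 r2), Neg (EqV x3 r4),
     Neg (EqV x1 x3), smallF x1, smallF x3, Neg (adjF x1 x3), alll 60 (\<lambda>m. Neg (adjF x3 (nbt m x1)))]"

definition decR :: "dterm \<Rightarrow> dterm \<Rightarrow> dterm \<Rightarrow> dterm \<Rightarrow> dterm \<Rightarrow> form" where
  "decR r1 r2 r3 r4 r5 = conjL [deg3F r2, deg3F r3, deg3F r4, deg3F r5,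
     exl 60 (\<lambda>k. exl 60 (\<lambda>l. decBody r1 r2 r3 r4 r5 (nbt k r1) (nbt l r3)))]"

definition DecX :: "('v,'d) rotsys \<Rightarrow> 'v \<Rightarrow> 'v \<Rightarrow> 'v \<Rightarrow> 'v \<Rightarrow> 'v \<Rightarrow> 'v \<Rightarrow> 'v \<Rightarrow> bool" where
  "DecX G V1 V2 V3 V4 V5 x1 x3 \<longleftrightarrow> x1 \<noteq> V5 \<and> x1 \<noteq> V2 \<and> x3 \<noteq> V2 \<and> x3 \<noteq> V4 \<and> x1 \<noteq> x3 \<and>
     small G x1 \<and> small G x3 \<and> \<not> adj G x1 x3 \<and> (\<forall>w. adj G x1 w \<longrightarrow> \<not> adj G x3 w)"

context fixes G :: "('v,'d) rotsys" assumes wf: "wf_rotsys G" and simp: "simple_rotsys G"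
   and tf: "triangle_free G" begin

lemma small3: "deg G u = 3 \<Longrightarrow> small G u" unfolding small_def by simp

lemma oct_graph: assumes "facial G [V1,V2,V3,V4]" "deg G V1 = 3"
  shows "secure_octagram G V1 V2 V3 V4 \<longleftrightarrow> deg G V2 = 3 \<and> deg G V3 = 3 \<and> deg G V4 = 3"
  unfolding secure_octagram_def octagram_def tetragram_def using assms small3 by blast

lemma oct_form: assumes "d \<in> darts G"
  shows "evf G d (octR r1 r2 r3 r4) \<longleftrightarrow> deg G (tail G (evt G d r2)) = 3 \<and> deg G (tail G (evt G d r3)) = 3 \<and> deg G (tail G (evt G d r4)) = 3"
  unfolding octR_def using evf_deg3F[OF wf simp assms] by simp

lemma dec_graph: assumes "facial G [V1,V2,V3,V4,V5]" "deg G V1 = 3"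
  shows "secure_decagram G V1 V2 V3 V4 V5 \<longleftrightarrow> deg G V2 = 3 \<and> deg G V3 = 3 \<and> deg G V4 = 3 \<and> deg G V5 = 3 \<and>
     (\<exists>x1. adj G V1 x1 \<and> (\<exists>x3. adj G V3 x3 \<and> DecX G V1 V2 V3 V4 V5 x1 x3))"
proof
  assume s: "secure_decagram G V1 V2 V3 V4 V5"
  then have dg: "deg G V2 = 3" "deg G V3 = 3" "deg G V4 = 3" "deg G V5 = 3"
    unfolding secure_decagram_def decagram_def pentagram_def by blast+
  from s obtain x1 x3 where x: "other_nb G V1 V5 V2 x1" "other_nb G V3 V2 V4 x3" "x1 \<noteq> x3" "\<not> adj G x1 x3"
    "\<not> (\<exists>w. adj G x1 w \<and> adj G x3 w)" "small G x1" "small G x3"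
    unfolding secure_decagram_def by blast
  then show "deg G V2 = 3 \<and> deg G V3 = 3 \<and> deg G V4 = 3 \<and> deg G V5 = 3 \<and>
     (\<exists>x1. adj G V1 x1 \<and> (\<exists>x3. adj G V3 x3 \<and> DecX G V1 V2 V3 V4 V5 x1 x3))"
    using dg unfolding DecX_def other_nb_def by blast
next
  assume r: "deg G V2 = 3 \<and> deg G V3 = 3 \<and> deg G V4 = 3 \<and> deg G V5 = 3 \<and>
     (\<exists>x1. adj G V1 x1 \<and> (\<exists>x3. adj G V3 x3 \<and> DecX G V1 V2 V3 V4 V5 x1 x3))"
  then obtain x1 x3 where x: "adj G V1 x1" "adj G V3 x3" "DecX G V1 V2 V3 V4 V5 x1 x3" by blast
  have o: "other_nb G V1 V5 V2 x1" "other_nb G V3 V2 V4 x3" using x unfolding other_nb_def DecX_def by blast+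
  have sm: "small G V1" "small G V2" "small G V3" "small G V4" "small G V5" using r assms(2) small3 by blast+
  have dec: "decagram G V1 V2 V3 V4 V5" unfolding decagram_def pentagram_def using r assms by blast
  show "secure_decagram G V1 V2 V3 V4 V5"
    unfolding secure_decagram_def using dec o sm x(3) unfolding DecX_def by blast
qed

lemma dec_body: assumes d: "d \<in> darts G" and dg3: "deg G (tail G (evt G d r3)) = 3"
  shows "evf G d (decBody r1 r2 r3 r4 r5 (nbt k r1) (nbt l r3)) \<longleftrightarrow>
    DecX G (tail G (evt G d r1)) (tail G (evt G d r2)) (tail G (evt G d r3)) (tail G (evt G d r4)) (tail G (evt G d r5))
      (head G (sk G k (evt G d r1))) (head G (sk G l (evt G d r3)))"
proof -
  define e1 where "e1 = evt G d r1"
  define e3 where "e3 = evt G d r3"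
  have e1: "e1 \<in> darts G" unfolding e1_def using evt_in[OF wf simp d] .
  have e3: "e3 \<in> darts G" unfolding e3_def using evt_in[OF wf simp d] .
  define d1 where "d1 = twin G (sk G k e1)"
  define d3 where "d3 = twin G (sk G l e3)"
  have d1: "d1 \<in> darts G" "tail G d1 = head G (sk G k e1)" unfolding d1_def using sk_in[OF wf e1] wf_twin[OF wf] by auto
  have d3: "d3 \<in> darts G" "tail G d3 = head G (sk G l e3)" unfolding d3_def using sk_in[OF wf e3] wf_twin[OF wf] by auto
  have sem: "evf G d (decBody r1 r2 r3 r4 r5 (nbt k r1) (nbt l r3)) \<longleftrightarrow>
     tail G d1 \<noteq> tail G (evt G d r5) \<and> tail G d1 \<noteq> tail G (evt G d r2) \<and> tail G d3 \<noteq> tail G (evt G d r2) \<and>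
     tail G d3 \<noteq> tail G (evt G d r4) \<and> tail G d1 \<noteq> tail G d3 \<and> small G (tail G d1) \<and> small G (tail G d3) \<and>
     \<not> adjS G d1 (tail G d3) \<and> (\<forall>m<60. \<not> adjS G d3 (head G (sk G m d1)))"
    unfolding decBody_def d1(2) d3(2) using evf_smallF[OF wf simp d] unfolding d1_def d3_def e1_def e3_def by simp
  have "evf G d (decBody r1 r2 r3 r4 r5 (nbt k r1) (nbt l r3)) \<longleftrightarrow>
    DecX G (tail G (evt G d r1)) (tail G (evt G d r2)) (tail G (evt G d r3)) (tail G (evt G d r4)) (tail G (evt G d r5))
      (tail G d1) (tail G d3)"
  proof (cases "small G (tail G d1) \<and> small G (tail G d3)")
    case False then show ?thesis unfolding sem DecX_def by auto
  next
    case True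
    have a1: "adjS G d1 (tail G d3) \<longleftrightarrow> adj G (tail G d1) (tail G d3)" using adjS_iff[OF wf simp tf d1(1)] True by blast
    have a2: "(\<forall>m<60. \<not> adjS G d3 (head G (sk G m d1))) \<longleftrightarrow> (\<forall>m<60. \<not> adj G (tail G d3) (head G (sk G m d1)))"
      using adjS_iff[OF wf simp tf d3(1)] True by blast
    have a3: "(\<forall>m<60. \<not> adj G (tail G d3) (head G (sk G m d1))) \<longleftrightarrow> (\<forall>w. adj G (tail G d1) w \<longrightarrow> \<not> adj G (tail G d3) w)"
      using nbq_all[OF wf simp tf d1(1), of "\<lambda>w. \<not> adj G (tail G d3) w"] True unfolding small_def by simp
    show ?thesis unfolding sem a1 a2 a3 DecX_def by blast
  qed
  then show ?thesis unfolding d1(2) d3(2) e1_def e3_def .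
qed

lemma dec_form: assumes d: "d \<in> darts G" and dg1: "deg G (tail G (evt G d r1)) = 3"
  shows "evf G d (decR r1 r2 r3 r4 r5) \<longleftrightarrow> deg G (tail G (evt G d r2)) = 3 \<and> deg G (tail G (evt G d r3)) = 3 \<and>
     deg G (tail G (evt G d r4)) = 3 \<and> deg G (tail G (evt G d r5)) = 3 \<and>
     (\<exists>x1. adj G (tail G (evt G d r1)) x1 \<and> (\<exists>x3. adj G (tail G (evt G d r3)) x3 \<and>
        DecX G (tail G (evt G d r1)) (tail G (evt G d r2)) (tail G (evt G d r3)) (tail G (evt G d r4)) (tail G (evt G d r5)) x1 x3))"
proof (cases "deg G (tail G (evt G d r3)) = 3")
  case False then show ?thesis unfolding decR_def using evf_deg3F[OF wf simp d] by simp
next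
  case True
  have e1: "evt G d r1 \<in> darts G" "evt G d r3 \<in> darts G" using evt_in[OF wf simp d] by auto
  have inner: "(\<exists>l<60. DecX G (tail G (evt G d r1)) (tail G (evt G d r2)) (tail G (evt G d r3)) (tail G (evt G d r4)) (tail G (evt G d r5)) x1 (head G (sk G l (evt G d r3))))
     \<longleftrightarrow> (\<exists>x3. adj G (tail G (evt G d r3)) x3 \<and> DecX G (tail G (evt G d r1)) (tail G (evt G d r2)) (tail G (evt G d r3)) (tail G (evt G d r4)) (tail G (evt G d r5)) x1 x3)" for x1
    using nbq_ex[OF wf simp tf e1(2), of "DecX G (tail G (evt G d r1)) (tail G (evt G d r2)) (tail G (evt G d r3)) (tail G (evt G d r4)) (tail G (evt G d r5)) x1"] True by simp
  have outer: "(\<exists>k<60. Q (head G (sk G k (evt G d r1)))) \<longleftrightarrow> (\<exists>x1. adj G (tail G (evt G d r1)) x1 \<and> Q x1)" for Q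
    using nbq_ex[OF wf simp tf e1(1), of Q] dg1 by simp
  have "evf G d (decR r1 r2 r3 r4 r5) \<longleftrightarrow> deg G (tail G (evt G d r2)) = 3 \<and> deg G (tail G (evt G d r3)) = 3 \<and>
     deg G (tail G (evt G d r4)) = 3 \<and> deg G (tail G (evt G d r5)) = 3 \<and>
     (\<exists>k<60. \<exists>l<60. evf G d (decBody r1 r2 r3 r4 r5 (nbt k r1) (nbt l r3)))"
    unfolding decR_def using evf_deg3F[OF wf simp d] by simp
  also have "\<dots> \<longleftrightarrow> deg G (tail G (evt G d r2)) = 3 \<and> deg G (tail G (evt G d r3)) = 3 \<and>
     deg G (tail G (evt G d r4)) = 3 \<and> deg G (tail G (evt G d r5)) = 3 \<and>
     (\<exists>k<60. \<exists>l<60. DecX G (tail G (evt G d r1)) (tail G (evt G d r2)) (tail G (evt G d r3)) (tail G (evt G d r4)) (tail G (evt G d r5))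
      (head G (sk G k (evt G d r1))) (head G (sk G l (evt G d r3))))"
    unfolding dec_body[OF d True] ..
  also have "\<dots> \<longleftrightarrow> deg G (tail G (evt G d r2)) = 3 \<and> deg G (tail G (evt G d r3)) = 3 \<and>
     deg G (tail G (evt G d r4)) = 3 \<and> deg G (tail G (evt G d r5)) = 3 \<and>
     (\<exists>x1. adj G (tail G (evt G d r1)) x1 \<and> (\<exists>x3. adj G (tail G (evt G d r3)) x3 \<and>
        DecX G (tail G (evt G d r1)) (tail G (evt G d r2)) (tail G (evt G d r3)) (tail G (evt G d r4)) (tail G (evt G d r5)) x1 x3))"
    unfolding inner using outer[of "\<lambda>x1. \<exists>x3. adj G (tail G (evt G d r3)) x3 \<and>
        DecX G (tail G (evt G d r1)) (tail G (evt G d r2)) (tail G (evt G d r3)) (tail G (evt G d r4)) (tail G (evt G d r5)) x1 x3"]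
    by simp
  finally show ?thesis .
qed

end

definition hexBody :: "dterm \<Rightarrow> dterm \<Rightarrow> dterm \<Rightarrow> dterm \<Rightarrow> dterm \<Rightarrow> dterm \<Rightarrow> dterm \<Rightarrow> form" where
  "hexBody r1 r2 r3 r4 r5 r6 x = conjL [Neg (EqV x r2), Neg (EqV x r6), smallF x, smallF r3, smallF r6,
     alll 60 (\<lambda>i. alll 60 (\<lambda>m. Conj (impF (EqV (nbt i r1) (nbt m r3)) (EqV (nbt i r1) r2))
        (impF (Conj (Neg (EqV (nbt i r1) r2)) (Neg (EqV (nbt m r3) r1))) (Neg (adjF (nbt i r1) (nbt m r3))))))]"

definition hexR :: "dterm \<Rightarrow> dterm \<Rightarrow> dterm \<Rightarrow> dterm \<Rightarrow> dterm \<Rightarrow> dterm \<Rightarrow> form" where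
  "hexR r1 r2 r3 r4 r5 r6 = exl 60 (\<lambda>k. hexBody r1 r2 r3 r4 r5 r6 (nbt k r1))"

definition HexC :: "('v,'d) rotsys \<Rightarrow> 'v \<Rightarrow> 'v \<Rightarrow> 'v \<Rightarrow> bool" where
  "HexC G V1 V2 V3 \<longleftrightarrow> (\<forall>a. adj G V1 a \<longrightarrow> (\<forall>b. adj G V3 b \<longrightarrow> (a = b \<longrightarrow> a = V2) \<and> (a \<noteq> V2 \<and> b \<noteq> V1 \<longrightarrow> \<not> adj G a b)))"

definition HexX :: "('v,'d) rotsys \<Rightarrow> 'v \<Rightarrow> 'v \<Rightarrow> 'v \<Rightarrow> 'v \<Rightarrow> 'v \<Rightarrow> 'v \<Rightarrow> 'v \<Rightarrow> bool" where
  "HexX G V1 V2 V3 V4 V5 V6 x \<longleftrightarrow> x \<noteq> V2 \<and> x \<noteq> V6 \<and> small G x \<and> small G V3 \<and> small G V6 \<and> HexC G V1 V2 V3"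

context fixes G :: "('v,'d) rotsys" assumes wf: "wf_rotsys G" and simp: "simple_rotsys G"
   and tf: "triangle_free G" begin

lemma safety_hex: assumes f: "facial G [V1,V2,V3,V4,V5,V6]"
  shows "(\<forall>ps. gpath G ps \<and> hd ps = V1 \<and> last ps = V3 \<and> length ps \<le> 4 \<longrightarrow> ps = [V1, V2, V3]) \<longleftrightarrow> HexC G V1 V2 V3"
proof -
  have a: "adj G V1 V2" "adj G V2 V3" using facial6_adj[OF wf simp tf f] by auto
  have ds: "distinct [V1,V2,V3,V4,V5,V6]" using f unfolding facial_def by blast
  have n13: "\<not> adj G V1 V3" using tri[OF wf simp tf a(1) a(2)] adj_sym[OF wf simp] by blast
  have v13: "V1 \<in> verts G" "V3 \<in> verts G" using adj_verts[OF wf simp] a by blast+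
  show ?thesis
  proof
    assume S: "\<forall>ps. gpath G ps \<and> hd ps = V1 \<and> last ps = V3 \<and> length ps \<le> 4 \<longrightarrow> ps = [V1, V2, V3]"
    show "HexC G V1 V2 V3" unfolding HexC_def
    proof (intro allI impI conjI)
      fix a b assume ab: "adj G V1 a" "adj G V3 b"
      have av: "a \<in> verts G" "b \<in> verts G" using adj_verts[OF wf simp] ab by blast+
      have a1: "a \<noteq> V1" using adj_ne[OF wf simp ab(1)] by blast
      have a3: "a \<noteq> V3" using ab(1) n13 by blast
      have b3: "b \<noteq> V3" using adj_ne[OF wf simp ab(2)] by blast
      show "a = V2" if "a = b"
      proof -
        have "gpath G [V1, a, V3]" unfolding gpath3 using ab that av v13 a1 a3 ds adj_sym[OF wf simp] by auto
        then have "[V1, a, V3] = [V1, V2, V3]" using S[rule_format, of "[V1, a, V3]"] by simp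
        then show ?thesis by simp
      qed
      show "\<not> adj G a b" if "a \<noteq> V2 \<and> b \<noteq> V1"
      proof
        assume "adj G a b"
        then have "a \<noteq> b" using adj_ne[OF wf simp] by blast
        then have "gpath G [V1, a, b, V3]" unfolding gpath4 using ab that av v13 a1 a3 b3 ds adj_sym[OF wf simp] \<open>adj G a b\<close> by auto
        then have "[V1, a, b, V3] = [V1, V2, V3]" using S[rule_format, of "[V1, a, b, V3]"] by simp
        then show False by simp
      qed
    qed
  next
    assume C: "HexC G V1 V2 V3"
    show "\<forall>ps. gpath G ps \<and> hd ps = V1 \<and> last ps = V3 \<and> length ps \<le> 4 \<longrightarrow> ps = [V1, V2, V3]"
    proof (intro allI impI)
      fix ps assume p: "gpath G ps \<and> hd ps = V1 \<and> last ps = V3 \<and> length ps \<le> 4"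
      have "ps \<noteq> []" using p unfolding gpath_def by blast
      moreover have "length ps \<le> 4" using p by blast
      ultimately have lc: "(\<exists>a. ps = [a]) \<or> (\<exists>a b. ps = [a,b]) \<or> (\<exists>a b c. ps = [a,b,c]) \<or> (\<exists>a b c e. ps = [a,b,c,e])"
        by (rule list_cases4)
      consider (c1) a where "ps = [a]" | (c2) a b where "ps = [a,b]" | (c3) a b c where "ps = [a,b,c]"
        | (c4) a b c e where "ps = [a,b,c,e]" using lc by blast
      then show "ps = [V1, V2, V3]"
      proof cases
        case c1 then have False using p ds by auto
        then show ?thesis ..
      next
        case c2 then have False using p n13 by (auto simp: gpath2)
        then show ?thesis ..
      next
        case (c3 a b c)
        have g: "gpath G [a,b,c]" "a = V1" "c = V3" using p c3 by auto
        have gg: "distinct [a,b,c] \<and> a \<in> verts G \<and> b \<in> verts G \<and> c \<in> verts G \<and> adj G a b \<and> adj G b c"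
          using g(1) by (simp only: gpath3)
        have "adj G V1 b" "adj G V3 b" using gg g(2,3) adj_sym[OF wf simp] by auto
        then have "b = V2" using C unfolding HexC_def by blast
        then show ?thesis using c3 g(2,3) by simp
      next
        case (c4 a b c e)
        have g: "gpath G [a,b,c,e]" "a = V1" "e = V3" using p c4 by auto
        have gg: "distinct [a,b,c,e] \<and> a \<in> verts G \<and> b \<in> verts G \<and> c \<in> verts G \<and> e \<in> verts G \<and>
          adj G a b \<and> adj G b c \<and> adj G c e" using g(1) by (simp only: gpath4)
        have h: "adj G V1 b" "adj G b c" "adj G c V3" "c \<noteq> V1"
          using gg g(2,3) by auto
        have "b \<noteq> V2"
        proof
          assume "b = V2" then show False
            using tri[OF wf simp tf, of V2 c V3] adj_sym[OF wf simp a(2)] h by blast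
        qed
        then have False using C h adj_sym[OF wf simp h(3)] unfolding HexC_def by blast
        then show ?thesis ..
      qed
    qed
  qed
qed

lemma hex_graph: assumes f: "facial G [V1,V2,V3,V4,V5,V6]" and dg: "deg G V1 = 3"
  shows "secure_hexagram G V1 V2 V3 V4 V5 V6 \<longleftrightarrow> (\<exists>x. adj G V1 x \<and> HexX G V1 V2 V3 V4 V5 V6 x)"
proof -
  have sm: "small G V1" using dg unfolding small_def by simp
  show ?thesis
    unfolding secure_hexagram_def hexagram_def HexX_def other_nb_def safety_hex[OF f]
    using f dg sm by blast
qed

lemma hex_form: assumes d: "d \<in> darts G"
  and f: "facial G [tail G (evt G d r1), tail G (evt G d r2), tail G (evt G d r3), tail G (evt G d r4), tail G (evt G d r5), tail G (evt G d r6)]"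
  and dg: "deg G (tail G (evt G d r1)) = 3"
  shows "evf G d (hexR r1 r2 r3 r4 r5 r6) \<longleftrightarrow>
     (\<exists>x. adj G (tail G (evt G d r1)) x \<and> HexX G (tail G (evt G d r1)) (tail G (evt G d r2)) (tail G (evt G d r3))
        (tail G (evt G d r4)) (tail G (evt G d r5)) (tail G (evt G d r6)) x)"
proof -
  define V1 where "V1 = tail G (evt G d r1)"
  define V2 where "V2 = tail G (evt G d r2)"
  define V3 where "V3 = tail G (evt G d r3)"
  define V4 where "V4 = tail G (evt G d r4)"
  define V5 where "V5 = tail G (evt G d r5)"
  define V6 where "V6 = tail G (evt G d r6)"
  define e1 where "e1 = evt G d r1"
  define e3 where "e3 = evt G d r3"
  have e1: "e1 \<in> darts G" "tail G e1 = V1" unfolding e1_def V1_def using evt_in[OF wf simp d] by auto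
  have e3: "e3 \<in> darts G" "tail G e3 = V3" unfolding e3_def V3_def using evt_in[OF wf simp d] by auto
  have ds: "distinct [V1,V2,V3,V4,V5,V6]" using f unfolding facial_def V1_def V2_def V3_def V4_def V5_def V6_def by blast
  have a: "adj G V1 V2" "adj G V1 V6" using facial6_adj[OF wf simp tf f] adj_sym[OF wf simp]
    unfolding V1_def V2_def V6_def by blast+
  have dg1: "deg G (tail G e1) \<le> 60" using dg e1(2) unfolding V1_def by simp
  have body: "evf G d (hexBody r1 r2 r3 r4 r5 r6 (nbt k r1)) \<longleftrightarrow> HexX G V1 V2 V3 V4 V5 V6 (head G (sk G k e1))" if "k < 60" for k
  proof -
    define x where "x = head G (sk G k e1)"
    have xadj: "adj G V1 x" unfolding x_def using sk_in[OF wf e1(1)] head_adj[OF wf simp] e1(2) by metis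
    have sem: "evf G d (hexBody r1 r2 r3 r4 r5 r6 (nbt k r1)) \<longleftrightarrow>
       x \<noteq> V2 \<and> x \<noteq> V6 \<and> small G x \<and> small G V3 \<and> small G V6 \<and>
       (\<forall>i<60. \<forall>m<60. (head G (sk G i e1) = head G (sk G m e3) \<longrightarrow> head G (sk G i e1) = V2) \<and>
          (head G (sk G i e1) \<noteq> V2 \<and> head G (sk G m e3) \<noteq> V1 \<longrightarrow> \<not> adjS G (twin G (sk G i e1)) (head G (sk G m e3))))"
      unfolding hexBody_def x_def V1_def V2_def V3_def V6_def e1_def e3_def using evf_smallF[OF wf simp d] by simp
    show ?thesis
    proof (cases "x \<noteq> V2 \<and> x \<noteq> V6 \<and> small G x \<and> small G V3 \<and> small G V6")
      case False then show ?thesis unfolding sem HexX_def x_def[symmetric] by blast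
    next
      case True
      have nb: "a = V2 \<or> a = V6 \<or> a = x" if "adj G V1 a" for a
        using nbr3[OF wf simp dg[folded V1_def] a(1) a(2) xadj _ that] ds True by auto
      have pt: "(\<forall>m<60. (head G (sk G i e1) = head G (sk G m e3) \<longrightarrow> head G (sk G i e1) = V2) \<and>
          (head G (sk G i e1) \<noteq> V2 \<and> head G (sk G m e3) \<noteq> V1 \<longrightarrow> \<not> adjS G (twin G (sk G i e1)) (head G (sk G m e3))))
         \<longleftrightarrow> (\<forall>b. adj G V3 b \<longrightarrow> (head G (sk G i e1) = b \<longrightarrow> head G (sk G i e1) = V2) \<and>
          (head G (sk G i e1) \<noteq> V2 \<and> b \<noteq> V1 \<longrightarrow> \<not> adj G (head G (sk G i e1)) b))" if "i < 60" for i
      proof -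
        define di where "di = twin G (sk G i e1)"
        have di: "di \<in> darts G" "tail G di = head G (sk G i e1)" unfolding di_def using sk_in[OF wf e1(1)] wf_twin[OF wf] by auto
        have aadj: "adj G V1 (head G (sk G i e1))" using sk_in[OF wf e1(1)] head_adj[OF wf simp] e1(2) by metis
        have q: "(head G (sk G i e1) \<noteq> V2 \<and> b \<noteq> V1 \<longrightarrow> \<not> adjS G di b) \<longleftrightarrow>
                 (head G (sk G i e1) \<noteq> V2 \<and> b \<noteq> V1 \<longrightarrow> \<not> adj G (head G (sk G i e1)) b)" for b
        proof (cases "head G (sk G i e1) = V2")
          case True then show ?thesis by simp
        next
          case False
          then have "small G (head G (sk G i e1))" using nb[OF aadj] True by auto
          then show ?thesis using adjS_iff[OF wf simp tf di(1)] di(2) by simp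
        qed
        have dg3: "deg G (tail G e3) \<le> 60" using True e3(2) unfolding small_def by simp
        show ?thesis
          unfolding di_def[symmetric] using q nbq_all[OF wf simp tf e3(1) dg3, of "\<lambda>b. (head G (sk G i e1) = b \<longrightarrow> head G (sk G i e1) = V2) \<and>
          (head G (sk G i e1) \<noteq> V2 \<and> b \<noteq> V1 \<longrightarrow> \<not> adj G (head G (sk G i e1)) b)"] e3(2) by simp
      qed
      have "(\<forall>i<60. \<forall>m<60. (head G (sk G i e1) = head G (sk G m e3) \<longrightarrow> head G (sk G i e1) = V2) \<and>
          (head G (sk G i e1) \<noteq> V2 \<and> head G (sk G m e3) \<noteq> V1 \<longrightarrow> \<not> adjS G (twin G (sk G i e1)) (head G (sk G m e3))))
         \<longleftrightarrow> (\<forall>i<60. \<forall>b. adj G V3 b \<longrightarrow> (head G (sk G i e1) = b \<longrightarrow> head G (sk G i e1) = V2) \<and>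
          (head G (sk G i e1) \<noteq> V2 \<and> b \<noteq> V1 \<longrightarrow> \<not> adj G (head G (sk G i e1)) b))"
        using pt by blast
      also have "\<dots> \<longleftrightarrow> HexC G V1 V2 V3"
        unfolding HexC_def using nbq_all[OF wf simp tf e1(1) dg1, of "\<lambda>a. \<forall>b. adj G V3 b \<longrightarrow> (a = b \<longrightarrow> a = V2) \<and>
          (a \<noteq> V2 \<and> b \<noteq> V1 \<longrightarrow> \<not> adj G a b)"] e1(2) by simp
      finally show ?thesis unfolding sem HexX_def x_def[symmetric] using True by blast
    qed
  qed
  have "evf G d (hexR r1 r2 r3 r4 r5 r6) \<longleftrightarrow> (\<exists>k<60. HexX G V1 V2 V3 V4 V5 V6 (head G (sk G k e1)))"
    unfolding hexR_def evf_exl using body by blast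
  also have "\<dots> \<longleftrightarrow> (\<exists>x. adj G V1 x \<and> HexX G V1 V2 V3 V4 V5 V6 x)"
    using nbq_ex[OF wf simp tf e1(1) dg1, of "HexX G V1 V2 V3 V4 V5 V6"] e1(2) by simp
  finally show ?thesis unfolding V1_def V2_def V3_def V4_def V5_def V6_def .
qed

end

definition NoAdjOut :: "('v,'d) rotsys \<Rightarrow> 'v \<Rightarrow> 'v \<Rightarrow> 'v set \<Rightarrow> bool" where
  "NoAdjOut G U W Vs \<longleftrightarrow> (\<forall>a. adj G U a \<longrightarrow> a \<notin> Vs \<longrightarrow> \<not> adj G a W)"
definition NoP3 :: "('v,'d) rotsys \<Rightarrow> 'v \<Rightarrow> 'v \<Rightarrow> 'v set \<Rightarrow> bool" where
  "NoP3 G U W Vs \<longleftrightarrow> (\<forall>a. adj G U a \<longrightarrow> (\<forall>b. adj G W b \<longrightarrow> a \<notin> Vs \<longrightarrow> b \<notin> Vs \<longrightarrow> a \<noteq> W \<longrightarrow> b \<noteq> U \<longrightarrow> \<not> adj G a b))"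
definition Q3a :: "('v,'d) rotsys \<Rightarrow> 'v \<Rightarrow> 'v \<Rightarrow> 'v \<Rightarrow> 'v \<Rightarrow> 'v set \<Rightarrow> bool" where
  "Q3a G X3 V3 V4 X4 Vs \<longleftrightarrow> (\<forall>a. adj G X3 a \<longrightarrow> a \<notin> Vs \<longrightarrow> adj G a X4 \<longrightarrow> facial G [X3, V3, V4, X4, a])"

definition PenX :: "('v,'d) rotsys \<Rightarrow> 'v \<Rightarrow> 'v \<Rightarrow> 'v \<Rightarrow> 'v \<Rightarrow> 'v \<Rightarrow> 'v \<Rightarrow> 'v \<Rightarrow> 'v \<Rightarrow> 'v \<Rightarrow> bool" where
  "PenX G V1 V2 V3 V4 V5 x1 x2 x3 x4 \<longleftrightarrow>
    (x1 \<noteq> V5 \<and> x1 \<noteq> V2 \<and> x2 \<noteq> V1 \<and> x2 \<noteq> V3 \<and> x3 \<noteq> V2 \<and> x3 \<noteq> V4 \<and> x4 \<noteq> V3 \<and> x4 \<noteq> V5 \<and>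
     distinct [x1, x2, x3, x4] \<and> small G V5 \<and> small G x1 \<and> small G x2 \<and> small G x3 \<and> small G x4) \<and>
    (\<not> adj G x1 x2 \<and> \<not> adj G x1 x3 \<and> \<not> adj G x1 x4 \<and> \<not> adj G x2 x3 \<and> \<not> adj G x2 x4 \<and> \<not> adj G x3 x4 \<and>
     (no_big_nb G V5 \<or> no_big_nb G x2) \<and> (no_big_nb G x3 \<or> no_big_nb G x4) \<and>
     x2 \<noteq> V5 \<and> \<not> adj G x2 V5 \<and> NoAdjOut G x2 V5 {V1, V2, V3, V4} \<and> NoP3 G x2 V5 {V1, V2, V3, V4} \<and>
     Q3a G x3 V3 V4 x4 {V1, V2, V3, V4} \<and> NoP3 G x3 x4 {V1, V2, V3, V4})"

context fixes G :: "('v,'d) rotsys" assumes wf: "wf_rotsys G" and simp: "simple_rotsys G"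
   and tf: "triangle_free G" begin

lemma np2: assumes u: "U \<in> verts G" "U \<notin> Vs" and w: "W \<in> verts G" "W \<notin> Vs"
  shows "(\<not> (\<exists>ps. gpath G ps \<and> set ps \<inter> Vs = {} \<and> hd ps = U \<and> last ps = W \<and> length ps \<le> 4)) \<longleftrightarrow>
     (U \<noteq> W \<and> \<not> adj G U W \<and> NoAdjOut G U W Vs \<and> NoP3 G U W Vs)"
proof
  assume N: "\<not> (\<exists>ps. gpath G ps \<and> set ps \<inter> Vs = {} \<and> hd ps = U \<and> last ps = W \<and> length ps \<le> 4)"
  have uw: "U \<noteq> W"
  proof
    assume "U = W"
    then have "gpath G [U] \<and> set [U] \<inter> Vs = {} \<and> hd [U] = U \<and> last [U] = W \<and> length [U] \<le> 4"
      using u by (simp add: gpath1)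
    then show False using N by blast
  qed
  moreover have "\<not> adj G U W"
  proof
    assume "adj G U W"
    then have "gpath G [U,W] \<and> set [U,W] \<inter> Vs = {} \<and> hd [U,W] = U \<and> last [U,W] = W \<and> length [U,W] \<le> 4"
      using u w uw by (simp add: gpath2)
    then show False using N by blast
  qed
  moreover have "NoAdjOut G U W Vs" unfolding NoAdjOut_def
  proof (intro allI impI notI)
    fix a assume a: "adj G U a" "a \<notin> Vs" "adj G a W"
    have "a \<noteq> U" "a \<noteq> W" using adj_ne[OF wf simp] a by blast+
    moreover have "a \<in> verts G" using adj_verts[OF wf simp a(1)] by blast
    ultimately have "gpath G [U,a,W] \<and> set [U,a,W] \<inter> Vs = {} \<and> hd [U,a,W] = U \<and> last [U,a,W] = W \<and> length [U,a,W] \<le> 4"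
      using u w uw a by (simp add: gpath3)
    then show False using N by blast
  qed
  moreover have "NoP3 G U W Vs" unfolding NoP3_def
  proof (intro allI impI notI)
    fix a b assume a: "adj G U a" "adj G W b" "a \<notin> Vs" "b \<notin> Vs" "a \<noteq> W" "b \<noteq> U" "adj G a b"
    have "a \<noteq> U" "b \<noteq> W" "a \<noteq> b" using adj_ne[OF wf simp] a by blast+
    moreover have "a \<in> verts G" "b \<in> verts G" using adj_verts[OF wf simp] a by blast+
    moreover have "adj G b W" using adj_sym[OF wf simp a(2)] .
    ultimately have "gpath G [U,a,b,W] \<and> set [U,a,b,W] \<inter> Vs = {} \<and> hd [U,a,b,W] = U \<and> last [U,a,b,W] = W \<and> length [U,a,b,W] \<le> 4"
      using u w uw a by (simp add: gpath4)
    then show False using N by blast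
  qed
  ultimately show "U \<noteq> W \<and> \<not> adj G U W \<and> NoAdjOut G U W Vs \<and> NoP3 G U W Vs" by blast
next
  assume R: "U \<noteq> W \<and> \<not> adj G U W \<and> NoAdjOut G U W Vs \<and> NoP3 G U W Vs"
  show "\<not> (\<exists>ps. gpath G ps \<and> set ps \<inter> Vs = {} \<and> hd ps = U \<and> last ps = W \<and> length ps \<le> 4)"
  proof
    assume "\<exists>ps. gpath G ps \<and> set ps \<inter> Vs = {} \<and> hd ps = U \<and> last ps = W \<and> length ps \<le> 4"
    then obtain ps where p: "gpath G ps" "set ps \<inter> Vs = {}" "hd ps = U" "last ps = W" "length ps \<le> 4" by blast
    have "ps \<noteq> []" using p unfolding gpath_def by blast
    then have lc: "(\<exists>a. ps = [a]) \<or> (\<exists>a b. ps = [a,b]) \<or> (\<exists>a b c. ps = [a,b,c]) \<or> (\<exists>a b c e. ps = [a,b,c,e])"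
      using p(5) by (rule list_cases4)
    consider (c1) a where "ps = [a]" | (c2) a b where "ps = [a,b]" | (c3) a b c where "ps = [a,b,c]"
      | (c4) a b c e where "ps = [a,b,c,e]" using lc by blast
    then show False
    proof cases
      case c1 then show False using p R by simp
    next
      case (c2 a b) then have "gpath G [U,W]" using p by simp
      then show False using R by (simp add: gpath2)
    next
      case (c3 a b c)
      then have g: "gpath G [U,b,W]" "b \<notin> Vs" using p by auto
      then have "adj G U b" "adj G b W" by (simp_all add: gpath3)
      then show False using R g(2) unfolding NoAdjOut_def by blast
    next
      case (c4 a b c e)
      then have g: "gpath G [U,b,c,W]" "b \<notin> Vs" "c \<notin> Vs" using p by auto
      then have gg: "distinct [U,b,c,W] \<and> adj G U b \<and> adj G b c \<and> adj G c W" by (simp add: gpath4)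
      then have "adj G W c" "b \<noteq> W" "c \<noteq> U" using adj_sym[OF wf simp] by auto
      then show False using R g(2,3) gg unfolding NoP3_def by blast
    qed
  qed
qed

lemma p3: assumes u: "U \<in> verts G" "U \<notin> Vs" and w: "W \<in> verts G" "W \<notin> Vs" and uw: "U \<noteq> W" "\<not> adj G U W"
  shows "(\<forall>ps. gpath G ps \<and> set ps \<inter> Vs = {} \<and> hd ps = U \<and> last ps = W \<and> length ps \<le> 4 \<longrightarrow>
            length ps = 3 \<and> facial G [U, A, B, W, ps ! 1]) \<longleftrightarrow>
     ((\<forall>a. adj G U a \<longrightarrow> a \<notin> Vs \<longrightarrow> adj G a W \<longrightarrow> facial G [U, A, B, W, a]) \<and> NoP3 G U W Vs)"
proof
  assume P: "\<forall>ps. gpath G ps \<and> set ps \<inter> Vs = {} \<and> hd ps = U \<and> last ps = W \<and> length ps \<le> 4 \<longrightarrow>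
            length ps = 3 \<and> facial G [U, A, B, W, ps ! 1]"
  have "facial G [U, A, B, W, a]" if a: "adj G U a" "a \<notin> Vs" "adj G a W" for a
  proof -
    have "a \<noteq> U" "a \<noteq> W" using adj_ne[OF wf simp] a by blast+
    moreover have "a \<in> verts G" using adj_verts[OF wf simp a(1)] by blast
    ultimately have "gpath G [U,a,W] \<and> set [U,a,W] \<inter> Vs = {} \<and> hd [U,a,W] = U \<and> last [U,a,W] = W \<and> length [U,a,W] \<le> 4"
      using u w uw a by (simp add: gpath3)
    then show ?thesis using P[rule_format, of "[U,a,W]"] by simp
  qed
  moreover have "NoP3 G U W Vs" unfolding NoP3_def
  proof (intro allI impI notI)
    fix a b assume a: "adj G U a" "adj G W b" "a \<notin> Vs" "b \<notin> Vs" "a \<noteq> W" "b \<noteq> U" "adj G a b"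
    have "a \<noteq> U" "b \<noteq> W" "a \<noteq> b" using adj_ne[OF wf simp] a by blast+
    moreover have "a \<in> verts G" "b \<in> verts G" using adj_verts[OF wf simp] a by blast+
    moreover have "adj G b W" using adj_sym[OF wf simp a(2)] .
    ultimately have "gpath G [U,a,b,W] \<and> set [U,a,b,W] \<inter> Vs = {} \<and> hd [U,a,b,W] = U \<and> last [U,a,b,W] = W \<and> length [U,a,b,W] \<le> 4"
      using u w uw a by (simp add: gpath4)
    then show False using P[rule_format, of "[U,a,b,W]"] by simp
  qed
  ultimately show "(\<forall>a. adj G U a \<longrightarrow> a \<notin> Vs \<longrightarrow> adj G a W \<longrightarrow> facial G [U, A, B, W, a]) \<and> NoP3 G U W Vs" by blast
next
  assume R: "(\<forall>a. adj G U a \<longrightarrow> a \<notin> Vs \<longrightarrow> adj G a W \<longrightarrow> facial G [U, A, B, W, a]) \<and> NoP3 G U W Vs"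
  show "\<forall>ps. gpath G ps \<and> set ps \<inter> Vs = {} \<and> hd ps = U \<and> last ps = W \<and> length ps \<le> 4 \<longrightarrow>
            length ps = 3 \<and> facial G [U, A, B, W, ps ! 1]"
  proof (intro allI impI)
    fix ps assume pp: "gpath G ps \<and> set ps \<inter> Vs = {} \<and> hd ps = U \<and> last ps = W \<and> length ps \<le> 4"
    then have p: "gpath G ps" "set ps \<inter> Vs = {}" "hd ps = U" "last ps = W" "length ps \<le> 4" by blast+
    have "ps \<noteq> []" using p unfolding gpath_def by blast
    then have lc: "(\<exists>a. ps = [a]) \<or> (\<exists>a b. ps = [a,b]) \<or> (\<exists>a b c. ps = [a,b,c]) \<or> (\<exists>a b c e. ps = [a,b,c,e])"
      using p(5) by (rule list_cases4)
    consider (c1) a where "ps = [a]" | (c2) a b where "ps = [a,b]" | (c3) a b c where "ps = [a,b,c]"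
      | (c4) a b c e where "ps = [a,b,c,e]" using lc by blast
    then show "length ps = 3 \<and> facial G [U, A, B, W, ps ! 1]"
    proof cases
      case c1 then have False using p uw by simp
      then show ?thesis ..
    next
      case (c2 a b) then have "gpath G [U,W]" using p by simp
      then have False using uw by (simp add: gpath2)
      then show ?thesis ..
    next
      case (c3 a b c)
      then have g: "gpath G [U,b,W]" "b \<notin> Vs" "ps = [U,b,W]" using p by auto
      then have "adj G U b" "adj G b W" by (simp_all add: gpath3)
      then show ?thesis using R g(2,3) by simp
    next
      case (c4 a b c e)
      then have g: "gpath G [U,b,c,W]" "b \<notin> Vs" "c \<notin> Vs" using p by auto
      then have gg: "distinct [U,b,c,W] \<and> adj G U b \<and> adj G b c \<and> adj G c W" by (simp add: gpath4)
      then have "adj G W c" "b \<noteq> W" "c \<noteq> U" using adj_sym[OF wf simp] by auto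
      then have False using R g(2,3) gg unfolding NoP3_def by blast
      then show ?thesis ..
    qed
  qed
qed


lemma pair4: assumes "distinct [x1,x2,x3,x4]"
  shows "(\<forall>a\<in>{x1, x2, x3, x4}. \<forall>b\<in>{x1, x2, x3, x4}. \<not> adj G a b) \<longleftrightarrow>
    (\<not> adj G x1 x2 \<and> \<not> adj G x1 x3 \<and> \<not> adj G x1 x4 \<and> \<not> adj G x2 x3 \<and> \<not> adj G x2 x4 \<and> \<not> adj G x3 x4)"
  using adj_sym[OF wf simp] adj_irrefl[OF wf simp] by auto

lemma pen_core: assumes f: "facial G [V1,V2,V3,V4,V5]"
  and x: "adj G V1 x1" "x1 \<noteq> V5" "x1 \<noteq> V2" "adj G V2 x2" "x2 \<noteq> V1" "x2 \<noteq> V3"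
         "adj G V3 x3" "x3 \<noteq> V2" "x3 \<noteq> V4" "adj G V4 x4" "x4 \<noteq> V3" "x4 \<noteq> V5"
  shows "(distinct [x1, x2, x3, x4] \<and>
        (\<forall>a\<in>{x1, x2, x3, x4}. \<forall>b\<in>{x1, x2, x3, x4}. \<not> adj G a b) \<and>
        \<not> (\<exists>ps. gpath G ps \<and> set ps \<inter> {V1, V2, V3, V4} = {} \<and>
               hd ps = x2 \<and> last ps = V5 \<and> length ps \<le> 4) \<and>
        (\<forall>ps. gpath G ps \<and> set ps \<inter> {V1, V2, V3, V4} = {} \<and>
               hd ps = x3 \<and> last ps = x4 \<and> length ps \<le> 4 \<longrightarrow>
               length ps = 3 \<and> facial G [x3, V3, V4, x4, ps ! 1]) \<and>
        small G V5 \<and> small G x1 \<and> small G x2 \<and> small G x3 \<and> small G x4 \<and>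
        (no_big_nb G V5 \<or> no_big_nb G x2) \<and>
        (no_big_nb G x3 \<or> no_big_nb G x4)) \<longleftrightarrow> PenX G V1 V2 V3 V4 V5 x1 x2 x3 x4"
proof -
  have a: "adj G V1 V2" "adj G V2 V3" "adj G V3 V4" "adj G V4 V5" "adj G V5 V1" using facial5_adj[OF wf simp tf f] by auto
  have ds: "distinct [V1,V2,V3,V4,V5]" using f unfolding facial_def by blast
  have sy: "adj G u w \<Longrightarrow> adj G w u" for u w using adj_sym[OF wf simp] by blast
  have x2o: "x2 \<notin> {V1,V2,V3,V4}"
  proof -
    have "x2 \<noteq> V2" using adj_ne[OF wf simp x(4)] by auto
    moreover have "x2 \<noteq> V4"
    proof
      assume "x2 = V4" then show False using tri[OF wf simp tf, of V2 V4 V3] x(4) sy a by blast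
    qed
    ultimately show ?thesis using x by auto
  qed
  have x3o: "x3 \<notin> {V1,V2,V3,V4}"
  proof -
    have "x3 \<noteq> V3" using adj_ne[OF wf simp x(7)] by auto
    moreover have "x3 \<noteq> V1"
    proof
      assume "x3 = V1" then show False using tri[OF wf simp tf, of V1 V2 V3] x(7) sy a by blast
    qed
    ultimately show ?thesis using x by auto
  qed
  have x4o: "x4 \<notin> {V1,V2,V3,V4}"
  proof -
    have "x4 \<noteq> V4" using adj_ne[OF wf simp x(10)] by auto
    moreover have "x4 \<noteq> V1"
    proof
      assume "x4 = V1" then show False using tri[OF wf simp tf, of V4 V5 V1] x(10) sy a by blast
    qed
    moreover have "x4 \<noteq> V2"
    proof
      assume "x4 = V2" then show False using tri[OF wf simp tf, of V2 V3 V4] x(10) sy a by blast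
    qed
    ultimately show ?thesis using x by auto
  qed
  have v5o: "V5 \<notin> {V1,V2,V3,V4}" using ds by auto
  have vv: "x2 \<in> verts G" "x3 \<in> verts G" "x4 \<in> verts G" "V5 \<in> verts G"
    using adj_verts[OF wf simp] x a by blast+
  note e1 = np2[OF vv(1) x2o vv(4) v5o]
  have e2: "x3 \<noteq> x4 \<Longrightarrow> \<not> adj G x3 x4 \<Longrightarrow>
     (\<forall>ps. gpath G ps \<and> set ps \<inter> {V1, V2, V3, V4} = {} \<and> hd ps = x3 \<and> last ps = x4 \<and> length ps \<le> 4 \<longrightarrow>
            length ps = 3 \<and> facial G [x3, V3, V4, x4, ps ! 1]) \<longleftrightarrow> Q3a G x3 V3 V4 x4 {V1, V2, V3, V4} \<and> NoP3 G x3 x4 {V1, V2, V3, V4}"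
    using p3[OF vv(2) x3o vv(3) x4o] unfolding Q3a_def by blast
  show ?thesis
  proof
    assume L: "distinct [x1, x2, x3, x4] \<and>
        (\<forall>a\<in>{x1, x2, x3, x4}. \<forall>b\<in>{x1, x2, x3, x4}. \<not> adj G a b) \<and>
        \<not> (\<exists>ps. gpath G ps \<and> set ps \<inter> {V1, V2, V3, V4} = {} \<and>
               hd ps = x2 \<and> last ps = V5 \<and> length ps \<le> 4) \<and>
        (\<forall>ps. gpath G ps \<and> set ps \<inter> {V1, V2, V3, V4} = {} \<and>
               hd ps = x3 \<and> last ps = x4 \<and> length ps \<le> 4 \<longrightarrow>
               length ps = 3 \<and> facial G [x3, V3, V4, x4, ps ! 1]) \<and>
        small G V5 \<and> small G x1 \<and> small G x2 \<and> small G x3 \<and> small G x4 \<and>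
        (no_big_nb G V5 \<or> no_big_nb G x2) \<and>
        (no_big_nb G x3 \<or> no_big_nb G x4)"
    then have d: "distinct [x1, x2, x3, x4]" by blast
    have pw: "\<not> adj G x1 x2 \<and> \<not> adj G x1 x3 \<and> \<not> adj G x1 x4 \<and> \<not> adj G x2 x3 \<and> \<not> adj G x2 x4 \<and> \<not> adj G x3 x4"
      using L pair4[OF d] by blast
    have n2: "x2 \<noteq> V5 \<and> \<not> adj G x2 V5 \<and> NoAdjOut G x2 V5 {V1, V2, V3, V4} \<and> NoP3 G x2 V5 {V1, V2, V3, V4}"
      using L e1 by blast
    have n3: "Q3a G x3 V3 V4 x4 {V1, V2, V3, V4} \<and> NoP3 G x3 x4 {V1, V2, V3, V4}"
      using L e2 d pw by auto
    show "PenX G V1 V2 V3 V4 V5 x1 x2 x3 x4" unfolding PenX_def using L x pw n2 n3 by blast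
  next
    assume R: "PenX G V1 V2 V3 V4 V5 x1 x2 x3 x4"
    then have d: "distinct [x1, x2, x3, x4]" unfolding PenX_def by blast
    have pw: "\<not> adj G x1 x2 \<and> \<not> adj G x1 x3 \<and> \<not> adj G x1 x4 \<and> \<not> adj G x2 x3 \<and> \<not> adj G x2 x4 \<and> \<not> adj G x3 x4"
      using R unfolding PenX_def by blast
    have n2: "\<not> (\<exists>ps. gpath G ps \<and> set ps \<inter> {V1, V2, V3, V4} = {} \<and> hd ps = x2 \<and> last ps = V5 \<and> length ps \<le> 4)"
      using R e1 unfolding PenX_def by blast
    have n3: "\<forall>ps. gpath G ps \<and> set ps \<inter> {V1, V2, V3, V4} = {} \<and> hd ps = x3 \<and> last ps = x4 \<and> length ps \<le> 4 \<longrightarrow>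
               length ps = 3 \<and> facial G [x3, V3, V4, x4, ps ! 1]"
      using R e2 d pw unfolding PenX_def by auto
    have pw': "\<forall>a\<in>{x1, x2, x3, x4}. \<forall>b\<in>{x1, x2, x3, x4}. \<not> adj G a b" using pw pair4[OF d] by blast
    show "distinct [x1, x2, x3, x4] \<and>
        (\<forall>a\<in>{x1, x2, x3, x4}. \<forall>b\<in>{x1, x2, x3, x4}. \<not> adj G a b) \<and>
        \<not> (\<exists>ps. gpath G ps \<and> set ps \<inter> {V1, V2, V3, V4} = {} \<and>
               hd ps = x2 \<and> last ps = V5 \<and> length ps \<le> 4) \<and>
        (\<forall>ps. gpath G ps \<and> set ps \<inter> {V1, V2, V3, V4} = {} \<and>
               hd ps = x3 \<and> last ps = x4 \<and> length ps \<le> 4 \<longrightarrow>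
               length ps = 3 \<and> facial G [x3, V3, V4, x4, ps ! 1]) \<and>
        small G V5 \<and> small G x1 \<and> small G x2 \<and> small G x3 \<and> small G x4 \<and>
        (no_big_nb G V5 \<or> no_big_nb G x2) \<and>
        (no_big_nb G x3 \<or> no_big_nb G x4)"
      using d pw' n2 n3 R unfolding PenX_def by blast
  qed
qed


lemma sp_split: "(other_nb G V1 V5 V2 x1 \<and> other_nb G V2 V1 V3 x2 \<and>
        other_nb G V3 V2 V4 x3 \<and> other_nb G V4 V3 V5 x4 \<and>
        distinct [x1, x2, x3, x4] \<and>
        (\<forall>a\<in>{x1, x2, x3, x4}. \<forall>b\<in>{x1, x2, x3, x4}. \<not> adj G a b) \<and>
        \<not> (\<exists>ps. gpath G ps \<and> set ps \<inter> {V1, V2, V3, V4} = {} \<and>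
               hd ps = x2 \<and> last ps = V5 \<and> length ps \<le> 4) \<and>
        (\<forall>ps. gpath G ps \<and> set ps \<inter> {V1, V2, V3, V4} = {} \<and>
               hd ps = x3 \<and> last ps = x4 \<and> length ps \<le> 4 \<longrightarrow>
               length ps = 3 \<and> facial G [x3, V3, V4, x4, ps ! 1]) \<and>
        small G V1 \<and> small G V2 \<and> small G V3 \<and> small G V4 \<and> small G V5 \<and>
        small G x1 \<and> small G x2 \<and> small G x3 \<and> small G x4 \<and>
        (no_big_nb G V5 \<or> no_big_nb G x2) \<and>
        (no_big_nb G x3 \<or> no_big_nb G x4)) \<longleftrightarrow>
   (other_nb G V1 V5 V2 x1 \<and> other_nb G V2 V1 V3 x2 \<and> other_nb G V3 V2 V4 x3 \<and> other_nb G V4 V3 V5 x4 \<and>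
    (small G V1 \<and> small G V2 \<and> small G V3 \<and> small G V4) \<and> (distinct [x1, x2, x3, x4] \<and>
        (\<forall>a\<in>{x1, x2, x3, x4}. \<forall>b\<in>{x1, x2, x3, x4}. \<not> adj G a b) \<and>
        \<not> (\<exists>ps. gpath G ps \<and> set ps \<inter> {V1, V2, V3, V4} = {} \<and>
               hd ps = x2 \<and> last ps = V5 \<and> length ps \<le> 4) \<and>
        (\<forall>ps. gpath G ps \<and> set ps \<inter> {V1, V2, V3, V4} = {} \<and>
               hd ps = x3 \<and> last ps = x4 \<and> length ps \<le> 4 \<longrightarrow>
               length ps = 3 \<and> facial G [x3, V3, V4, x4, ps ! 1]) \<and>
        small G V5 \<and> small G x1 \<and> small G x2 \<and> small G x3 \<and> small G x4 \<and>
        (no_big_nb G V5 \<or> no_big_nb G x2) \<and>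
        (no_big_nb G x3 \<or> no_big_nb G x4)))"
  by (simp only: conj_assoc conj_commute conj_left_commute)

lemma pen_graph: assumes f: "facial G [V1,V2,V3,V4,V5]" and dg: "deg G V1 = 3"
  shows "secure_pentagram G V1 V2 V3 V4 V5 \<longleftrightarrow> deg G V2 = 3 \<and> deg G V3 = 3 \<and> deg G V4 = 3 \<and>
     (\<exists>x1. adj G V1 x1 \<and> (\<exists>x2. adj G V2 x2 \<and> (\<exists>x3. adj G V3 x3 \<and> (\<exists>x4. adj G V4 x4 \<and>
        PenX G V1 V2 V3 V4 V5 x1 x2 x3 x4))))"
proof (cases "deg G V2 = 3 \<and> deg G V3 = 3 \<and> deg G V4 = 3")
  case False then show ?thesis unfolding secure_pentagram_def pentagram_def by blast
next
  case True
  have pe: "pentagram G V1 V2 V3 V4 V5" unfolding pentagram_def using f dg True by blast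
  have sm: "small G V1 \<and> small G V2 \<and> small G V3 \<and> small G V4" using dg True unfolding small_def by simp
  have x: "(other_nb G V1 V5 V2 x1 \<and> other_nb G V2 V1 V3 x2 \<and> other_nb G V3 V2 V4 x3 \<and> other_nb G V4 V3 V5 x4 \<and>
    (small G V1 \<and> small G V2 \<and> small G V3 \<and> small G V4) \<and> (distinct [x1, x2, x3, x4] \<and>
        (\<forall>a\<in>{x1, x2, x3, x4}. \<forall>b\<in>{x1, x2, x3, x4}. \<not> adj G a b) \<and>
        \<not> (\<exists>ps. gpath G ps \<and> set ps \<inter> {V1, V2, V3, V4} = {} \<and>
               hd ps = x2 \<and> last ps = V5 \<and> length ps \<le> 4) \<and>
        (\<forall>ps. gpath G ps \<and> set ps \<inter> {V1, V2, V3, V4} = {} \<and>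
               hd ps = x3 \<and> last ps = x4 \<and> length ps \<le> 4 \<longrightarrow>
               length ps = 3 \<and> facial G [x3, V3, V4, x4, ps ! 1]) \<and>
        small G V5 \<and> small G x1 \<and> small G x2 \<and> small G x3 \<and> small G x4 \<and>
        (no_big_nb G V5 \<or> no_big_nb G x2) \<and>
        (no_big_nb G x3 \<or> no_big_nb G x4))) \<longleftrightarrow>
    (adj G V1 x1 \<and> adj G V2 x2 \<and> adj G V3 x3 \<and> adj G V4 x4 \<and> PenX G V1 V2 V3 V4 V5 x1 x2 x3 x4)" for x1 x2 x3 x4
  proof
    assume h: "other_nb G V1 V5 V2 x1 \<and> other_nb G V2 V1 V3 x2 \<and> other_nb G V3 V2 V4 x3 \<and> other_nb G V4 V3 V5 x4 \<and>
      (small G V1 \<and> small G V2 \<and> small G V3 \<and> small G V4) \<and> (distinct [x1, x2, x3, x4] \<and>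
        (\<forall>a\<in>{x1, x2, x3, x4}. \<forall>b\<in>{x1, x2, x3, x4}. \<not> adj G a b) \<and>
        \<not> (\<exists>ps. gpath G ps \<and> set ps \<inter> {V1, V2, V3, V4} = {} \<and>
               hd ps = x2 \<and> last ps = V5 \<and> length ps \<le> 4) \<and>
        (\<forall>ps. gpath G ps \<and> set ps \<inter> {V1, V2, V3, V4} = {} \<and>
               hd ps = x3 \<and> last ps = x4 \<and> length ps \<le> 4 \<longrightarrow>
               length ps = 3 \<and> facial G [x3, V3, V4, x4, ps ! 1]) \<and>
        small G V5 \<and> small G x1 \<and> small G x2 \<and> small G x3 \<and> small G x4 \<and>
        (no_big_nb G V5 \<or> no_big_nb G x2) \<and>
        (no_big_nb G x3 \<or> no_big_nb G x4))"
    then have ox: "adj G V1 x1" "x1 \<noteq> V5" "x1 \<noteq> V2" "adj G V2 x2" "x2 \<noteq> V1" "x2 \<noteq> V3"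
         "adj G V3 x3" "x3 \<noteq> V2" "x3 \<noteq> V4" "adj G V4 x4" "x4 \<noteq> V3" "x4 \<noteq> V5"
      unfolding other_nb_def by blast+
    from h have c: "distinct [x1, x2, x3, x4] \<and>
        (\<forall>a\<in>{x1, x2, x3, x4}. \<forall>b\<in>{x1, x2, x3, x4}. \<not> adj G a b) \<and>
        \<not> (\<exists>ps. gpath G ps \<and> set ps \<inter> {V1, V2, V3, V4} = {} \<and>
               hd ps = x2 \<and> last ps = V5 \<and> length ps \<le> 4) \<and>
        (\<forall>ps. gpath G ps \<and> set ps \<inter> {V1, V2, V3, V4} = {} \<and>
               hd ps = x3 \<and> last ps = x4 \<and> length ps \<le> 4 \<longrightarrow>
               length ps = 3 \<and> facial G [x3, V3, V4, x4, ps ! 1]) \<and>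
        small G V5 \<and> small G x1 \<and> small G x2 \<and> small G x3 \<and> small G x4 \<and>
        (no_big_nb G V5 \<or> no_big_nb G x2) \<and>
        (no_big_nb G x3 \<or> no_big_nb G x4)" by (elim conjE) (intro conjI; assumption)
    show "adj G V1 x1 \<and> adj G V2 x2 \<and> adj G V3 x3 \<and> adj G V4 x4 \<and> PenX G V1 V2 V3 V4 V5 x1 x2 x3 x4"
      using ox pen_core[OF f ox, THEN iffD1, OF c] by blast
  next
    assume h: "adj G V1 x1 \<and> adj G V2 x2 \<and> adj G V3 x3 \<and> adj G V4 x4 \<and> PenX G V1 V2 V3 V4 V5 x1 x2 x3 x4"
    then have p: "PenX G V1 V2 V3 V4 V5 x1 x2 x3 x4" by blast
    have ox: "adj G V1 x1" "x1 \<noteq> V5" "x1 \<noteq> V2" "adj G V2 x2" "x2 \<noteq> V1" "x2 \<noteq> V3"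
         "adj G V3 x3" "x3 \<noteq> V2" "x3 \<noteq> V4" "adj G V4 x4" "x4 \<noteq> V3" "x4 \<noteq> V5"
      using h p unfolding PenX_def by blast+
    have c: "distinct [x1, x2, x3, x4] \<and>
        (\<forall>a\<in>{x1, x2, x3, x4}. \<forall>b\<in>{x1, x2, x3, x4}. \<not> adj G a b) \<and>
        \<not> (\<exists>ps. gpath G ps \<and> set ps \<inter> {V1, V2, V3, V4} = {} \<and>
               hd ps = x2 \<and> last ps = V5 \<and> length ps \<le> 4) \<and>
        (\<forall>ps. gpath G ps \<and> set ps \<inter> {V1, V2, V3, V4} = {} \<and>
               hd ps = x3 \<and> last ps = x4 \<and> length ps \<le> 4 \<longrightarrow>
               length ps = 3 \<and> facial G [x3, V3, V4, x4, ps ! 1]) \<and>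
        small G V5 \<and> small G x1 \<and> small G x2 \<and> small G x3 \<and> small G x4 \<and>
        (no_big_nb G V5 \<or> no_big_nb G x2) \<and>
        (no_big_nb G x3 \<or> no_big_nb G x4)" using pen_core[OF f ox, THEN iffD2, OF p] .
    have o: "other_nb G V1 V5 V2 x1 \<and> other_nb G V2 V1 V3 x2 \<and> other_nb G V3 V2 V4 x3 \<and> other_nb G V4 V3 V5 x4"
      using ox unfolding other_nb_def by blast
    show "other_nb G V1 V5 V2 x1 \<and> other_nb G V2 V1 V3 x2 \<and> other_nb G V3 V2 V4 x3 \<and> other_nb G V4 V3 V5 x4 \<and>
      (small G V1 \<and> small G V2 \<and> small G V3 \<and> small G V4) \<and> (distinct [x1, x2, x3, x4] \<and>
        (\<forall>a\<in>{x1, x2, x3, x4}. \<forall>b\<in>{x1, x2, x3, x4}. \<not> adj G a b) \<and>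
        \<not> (\<exists>ps. gpath G ps \<and> set ps \<inter> {V1, V2, V3, V4} = {} \<and>
               hd ps = x2 \<and> last ps = V5 \<and> length ps \<le> 4) \<and>
        (\<forall>ps. gpath G ps \<and> set ps \<inter> {V1, V2, V3, V4} = {} \<and>
               hd ps = x3 \<and> last ps = x4 \<and> length ps \<le> 4 \<longrightarrow>
               length ps = 3 \<and> facial G [x3, V3, V4, x4, ps ! 1]) \<and>
        small G V5 \<and> small G x1 \<and> small G x2 \<and> small G x3 \<and> small G x4 \<and>
        (no_big_nb G V5 \<or> no_big_nb G x2) \<and>
        (no_big_nb G x3 \<or> no_big_nb G x4))"
      using o sm c by (intro conjI) (elim conjE; assumption)+
  qed
  have "secure_pentagram G V1 V2 V3 V4 V5 \<longleftrightarrow> (\<exists>x1 x2 x3 x4. adj G V1 x1 \<and> adj G V2 x2 \<and> adj G V3 x3 \<and> adj G V4 x4 \<and> PenX G V1 V2 V3 V4 V5 x1 x2 x3 x4)"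
    unfolding secure_pentagram_def sp_split x using pe by simp
  then show ?thesis using True by blast
qed

end

definition notinF :: "dterm \<Rightarrow> dterm \<Rightarrow> dterm \<Rightarrow> dterm \<Rightarrow> dterm \<Rightarrow> form" where
  "notinF a r1 r2 r3 r4 = conjL [Neg (EqV a r1), Neg (EqV a r2), Neg (EqV a r3), Neg (EqV a r4)]"
definition adjE :: "dterm \<Rightarrow> dterm \<Rightarrow> form" where
  "adjE a b = Disj (adjF a b) (adjF b a)"
definition q2aF :: "dterm \<Rightarrow> dterm \<Rightarrow> dterm \<Rightarrow> dterm \<Rightarrow> dterm \<Rightarrow> dterm \<Rightarrow> form" where
  "q2aF u w r1 r2 r3 r4 = alll 60 (\<lambda>m. impF (notinF (nbt m u) r1 r2 r3 r4) (Neg (adjE (nbt m u) w)))"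
definition pathF :: "dterm \<Rightarrow> dterm \<Rightarrow> dterm \<Rightarrow> dterm \<Rightarrow> dterm \<Rightarrow> dterm \<Rightarrow> form" where
  "pathF u w r1 r2 r3 r4 = alll 60 (\<lambda>m. alll 60 (\<lambda>n. impF
     (conjL [notinF (nbt m u) r1 r2 r3 r4, notinF (nbt n w) r1 r2 r3 r4, Neg (EqV (nbt m u) w), Neg (EqV (nbt n w) u)])
     (Neg (adjE (nbt m u) (nbt n w)))))"
definition q3aF :: "dterm \<Rightarrow> dterm \<Rightarrow> dterm \<Rightarrow> dterm \<Rightarrow> dterm \<Rightarrow> dterm \<Rightarrow> dterm \<Rightarrow> dterm \<Rightarrow> form" where
  "q3aF x3 r3 r4 x4 r1 r2 r3' r4' = alll 60 (\<lambda>m. impF (Conj (notinF (nbt m x3) r1 r2 r3' r4') (adjE (nbt m x3) x4))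
      (facialF [x3, r3, r4, x4, nbt m x3]))"

definition penGuard :: "dterm \<Rightarrow> dterm \<Rightarrow> dterm \<Rightarrow> dterm \<Rightarrow> dterm \<Rightarrow> dterm \<Rightarrow> dterm \<Rightarrow> dterm \<Rightarrow> dterm \<Rightarrow> form" where
  "penGuard x1 x2 x3 x4 r1 r2 r3 r4 r5 = conjL [Neg (EqV x1 r5), Neg (EqV x1 r2), Neg (EqV x2 r1), Neg (EqV x2 r3),
     Neg (EqV x3 r2), Neg (EqV x3 r4), Neg (EqV x4 r3), Neg (EqV x4 r5), distF [x1, x2, x3, x4],
     smallF r5, smallF x1, smallF x2, smallF x3, smallF x4]"
definition penRest :: "dterm \<Rightarrow> dterm \<Rightarrow> dterm \<Rightarrow> dterm \<Rightarrow> dterm \<Rightarrow> dterm \<Rightarrow> dterm \<Rightarrow> dterm \<Rightarrow> dterm \<Rightarrow> form" where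
  "penRest x1 x2 x3 x4 r1 r2 r3 r4 r5 = conjL [Neg (adjE x1 x2), Neg (adjE x1 x3), Neg (adjE x1 x4), Neg (adjE x2 x3),
     Neg (adjE x2 x4), Neg (adjE x3 x4), Disj (nobigF r5) (nobigF x2), Disj (nobigF x3) (nobigF x4),
     Neg (EqV x2 r5), Neg (adjE x2 r5), q2aF x2 r5 r1 r2 r3 r4, pathF x2 r5 r1 r2 r3 r4,
     q3aF x3 r3 r4 x4 r1 r2 r3 r4, pathF x3 x4 r1 r2 r3 r4]"
definition penBody :: "dterm \<Rightarrow> dterm \<Rightarrow> dterm \<Rightarrow> dterm \<Rightarrow> dterm \<Rightarrow> dterm \<Rightarrow> dterm \<Rightarrow> dterm \<Rightarrow> dterm \<Rightarrow> form" where
  "penBody x1 x2 x3 x4 r1 r2 r3 r4 r5 = Conj (penGuard x1 x2 x3 x4 r1 r2 r3 r4 r5) (penRest x1 x2 x3 x4 r1 r2 r3 r4 r5)"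

definition penR :: "dterm \<Rightarrow> dterm \<Rightarrow> dterm \<Rightarrow> dterm \<Rightarrow> dterm \<Rightarrow> form" where
  "penR r1 r2 r3 r4 r5 = conjL [deg3F r2, deg3F r3, deg3F r4,
     exl 60 (\<lambda>k1. exl 60 (\<lambda>k2. exl 60 (\<lambda>k3. exl 60 (\<lambda>k4.
       penBody (nbt k1 r1) (nbt k2 r2) (nbt k3 r3) (nbt k4 r4) r1 r2 r3 r4 r5))))]"

abbreviation vt :: "('v,'d) rotsys \<Rightarrow> 'd \<Rightarrow> dterm \<Rightarrow> 'v" where "vt G d t \<equiv> tail G (evt G d t)"

lemma evf_notinF[simp]: "evf G d (notinF a r1 r2 r3 r4) \<longleftrightarrow> vt G d a \<notin> {vt G d r1, vt G d r2, vt G d r3, vt G d r4}"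
  unfolding notinF_def by auto

context fixes G :: "('v,'d) rotsys" assumes wf: "wf_rotsys G" and simp: "simple_rotsys G"
   and tf: "triangle_free G" begin

lemma adjE_exact: assumes d: "d \<in> darts G" and s: "small G (vt G d a) \<or> small G (vt G d b)"
  shows "evf G d (adjE a b) \<longleftrightarrow> adj G (vt G d a) (vt G d b)"
proof -
  have ea: "evt G d a \<in> darts G" and eb: "evt G d b \<in> darts G" using evt_in[OF wf simp d] by auto
  have "evf G d (adjE a b) \<longleftrightarrow> adjS G (evt G d a) (vt G d b) \<or> adjS G (evt G d b) (vt G d a)"
    unfolding adjE_def by simp
  moreover have "adjS G (evt G d a) (vt G d b) \<Longrightarrow> adj G (vt G d a) (vt G d b)" using adjS_sound[OF wf simp tf ea] by blast
  moreover have "adjS G (evt G d b) (vt G d a) \<Longrightarrow> adj G (vt G d a) (vt G d b)" using adjS_sound[OF wf simp tf eb] adj_sym[OF wf simp] by blast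
  moreover have "adj G (vt G d a) (vt G d b) \<Longrightarrow> adjS G (evt G d a) (vt G d b) \<or> adjS G (evt G d b) (vt G d a)"
    using s adjS_iff[OF wf simp tf ea] adjS_iff[OF wf simp tf eb] adj_sym[OF wf simp] by blast
  ultimately show ?thesis by blast
qed

lemma nbt_props: assumes d: "d \<in> darts G"
  shows "evt G d (nbt m u) \<in> darts G" "vt G d (nbt m u) = head G (sk G m (evt G d u))"
        "adj G (vt G d u) (vt G d (nbt m u))"
proof -
  have e: "evt G d u \<in> darts G" using evt_in[OF wf simp d] .
  show "evt G d (nbt m u) \<in> darts G" using sk_in[OF wf e] wf_twin[OF wf] by simp
  show "vt G d (nbt m u) = head G (sk G m (evt G d u))" by simp
  show "adj G (vt G d u) (vt G d (nbt m u))" using sk_in[OF wf e] head_adj[OF wf simp] by (metis evt_nbt)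
qed

lemma q2a_sem: assumes d: "d \<in> darts G" and s: "small G (vt G d u)" "small G (vt G d w)"
  shows "evf G d (q2aF u w r1 r2 r3 r4) \<longleftrightarrow> NoAdjOut G (vt G d u) (vt G d w) {vt G d r1, vt G d r2, vt G d r3, vt G d r4}"
proof -
  let ?Vs = "{vt G d r1, vt G d r2, vt G d r3, vt G d r4}"
  have e: "evt G d u \<in> darts G" using evt_in[OF wf simp d] .
  have "evf G d (q2aF u w r1 r2 r3 r4) \<longleftrightarrow> (\<forall>m<60. vt G d (nbt m u) \<notin> ?Vs \<longrightarrow> \<not> adj G (vt G d (nbt m u)) (vt G d w))"
    unfolding q2aF_def using adjE_exact[OF d] s(2) by simp
  also have "\<dots> \<longleftrightarrow> (\<forall>m<60. head G (sk G m (evt G d u)) \<notin> ?Vs \<longrightarrow> \<not> adj G (head G (sk G m (evt G d u))) (vt G d w))"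
    by simp
  also have "\<dots> \<longleftrightarrow> NoAdjOut G (vt G d u) (vt G d w) ?Vs"
    unfolding NoAdjOut_def using nbq_all[OF wf simp tf e, of "\<lambda>a. a \<notin> ?Vs \<longrightarrow> \<not> adj G a (vt G d w)"] s(1)
    unfolding small_def by simp
  finally show ?thesis .
qed

lemma path_sem: assumes d: "d \<in> darts G" and s: "small G (vt G d u)" "small G (vt G d w)"
  and nb: "no_big_nb G (vt G d u) \<or> no_big_nb G (vt G d w)"
  shows "evf G d (pathF u w r1 r2 r3 r4) \<longleftrightarrow> NoP3 G (vt G d u) (vt G d w) {vt G d r1, vt G d r2, vt G d r3, vt G d r4}"
proof -
  let ?Vs = "{vt G d r1, vt G d r2, vt G d r3, vt G d r4}"
  define \<Phi> where "\<Phi> a b \<longleftrightarrow> (a \<notin> ?Vs \<and> b \<notin> ?Vs \<and> a \<noteq> vt G d w \<and> b \<noteq> vt G d u \<longrightarrow> \<not> adj G a b)" for a b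
  have eu: "evt G d u \<in> darts G" and ew: "evt G d w \<in> darts G" using evt_in[OF wf simp d] by auto
  have pt: "evf G d (adjE (nbt m u) (nbt n w)) \<longleftrightarrow> adj G (vt G d (nbt m u)) (vt G d (nbt n w))" for m n
  proof (rule adjE_exact[OF d])
    show "small G (vt G d (nbt m u)) \<or> small G (vt G d (nbt n w))"
      using nb nbt_props(3)[OF d] unfolding no_big_nb_def big_def small_def by (meson not_le)
  qed
  have "evf G d (pathF u w r1 r2 r3 r4) \<longleftrightarrow> (\<forall>m<60. \<forall>n<60. \<Phi> (head G (sk G m (evt G d u))) (head G (sk G n (evt G d w))))"
    unfolding pathF_def \<Phi>_def using pt by (simp del: evt_nbt_d)
  also have "\<dots> \<longleftrightarrow> (\<forall>m<60. \<forall>b. adj G (vt G d w) b \<longrightarrow> \<Phi> (head G (sk G m (evt G d u))) b)"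
  proof -
    have "(\<forall>n<60. \<Phi> (head G (sk G m (evt G d u))) (head G (sk G n (evt G d w)))) \<longleftrightarrow>
          (\<forall>b. adj G (vt G d w) b \<longrightarrow> \<Phi> (head G (sk G m (evt G d u))) b)" for m
      using nbq_all[OF wf simp tf ew, of "\<Phi> (head G (sk G m (evt G d u)))"] s(2) unfolding small_def by simp
    then show ?thesis by simp
  qed
  also have "\<dots> \<longleftrightarrow> (\<forall>a. adj G (vt G d u) a \<longrightarrow> (\<forall>b. adj G (vt G d w) b \<longrightarrow> \<Phi> a b))"
    using nbq_all[OF wf simp tf eu, of "\<lambda>a. \<forall>b. adj G (vt G d w) b \<longrightarrow> \<Phi> a b"] s(1) unfolding small_def by simp
  also have "\<dots> \<longleftrightarrow> NoP3 G (vt G d u) (vt G d w) ?Vs"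
    unfolding NoP3_def \<Phi>_def by blast
  finally show ?thesis .
qed

lemma q3a_sem: assumes d: "d \<in> darts G" and s: "small G (vt G d x3)" "small G (vt G d x4)"
  shows "evf G d (q3aF x3 r3 r4 x4 r1 r2 r3 r4) \<longleftrightarrow> Q3a G (vt G d x3) (vt G d r3) (vt G d r4) (vt G d x4) {vt G d r1, vt G d r2, vt G d r3, vt G d r4}"
proof -
  let ?Vs = "{vt G d r1, vt G d r2, vt G d r3, vt G d r4}"
  have e: "evt G d x3 \<in> darts G" using evt_in[OF wf simp d] .
  have sm0: "small G (vt G d ([x3, r3, r4, x4, nbt m x3] ! 0))" for m using s(1) by simp
  have "evf G d (q3aF x3 r3 r4 x4 r1 r2 r3 r4) \<longleftrightarrow> (\<forall>m<60. vt G d (nbt m x3) \<notin> ?Vs \<and> adj G (vt G d (nbt m x3)) (vt G d x4) \<longrightarrow>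
       facial G [vt G d x3, vt G d r3, vt G d r4, vt G d x4, vt G d (nbt m x3)])"
    unfolding q3aF_def using adjE_exact[OF d] s(2) evf_facialF[OF wf simp d sm0] by (simp del: evt_nbt_d)
  also have "\<dots> \<longleftrightarrow> (\<forall>m<60. head G (sk G m (evt G d x3)) \<notin> ?Vs \<longrightarrow> adj G (head G (sk G m (evt G d x3))) (vt G d x4) \<longrightarrow>
       facial G [vt G d x3, vt G d r3, vt G d r4, vt G d x4, head G (sk G m (evt G d x3))])"
    by (simp only: evt_nbt_d tail_twin) blast
  also have "\<dots> \<longleftrightarrow> Q3a G (vt G d x3) (vt G d r3) (vt G d r4) (vt G d x4) ?Vs"
    unfolding Q3a_def using nbq_all[OF wf simp tf e, of "\<lambda>a. a \<notin> ?Vs \<longrightarrow> adj G a (vt G d x4) \<longrightarrow>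
       facial G [vt G d x3, vt G d r3, vt G d r4, vt G d x4, a]"] s(1) unfolding small_def by simp
  finally show ?thesis .
qed


lemma pen_body_gen: assumes d: "d \<in> darts G"
  shows "evf G d (penBody x1 x2 x3 x4 r1 r2 r3 r4 r5) \<longleftrightarrow>
    PenX G (vt G d r1) (vt G d r2) (vt G d r3) (vt G d r4) (vt G d r5) (vt G d x1) (vt G d x2) (vt G d x3) (vt G d x4)"
proof -
  let ?V1 = "vt G d r1" let ?V2 = "vt G d r2" let ?V3 = "vt G d r3" let ?V4 = "vt G d r4" let ?V5 = "vt G d r5"
  let ?X1 = "vt G d x1" let ?X2 = "vt G d x2" let ?X3 = "vt G d x3" let ?X4 = "vt G d x4"
  let ?Vs = "{?V1, ?V2, ?V3, ?V4}"
  have g: "evf G d (penGuard x1 x2 x3 x4 r1 r2 r3 r4 r5) \<longleftrightarrow>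
    (?X1 \<noteq> ?V5 \<and> ?X1 \<noteq> ?V2 \<and> ?X2 \<noteq> ?V1 \<and> ?X2 \<noteq> ?V3 \<and> ?X3 \<noteq> ?V2 \<and> ?X3 \<noteq> ?V4 \<and> ?X4 \<noteq> ?V3 \<and> ?X4 \<noteq> ?V5 \<and>
     distinct [?X1, ?X2, ?X3, ?X4] \<and> small G ?V5 \<and> small G ?X1 \<and> small G ?X2 \<and> small G ?X3 \<and> small G ?X4)"
    unfolding penGuard_def using evf_smallF[OF wf simp d] by (simp add: evf_distF del: evt_nbt_d)
  show ?thesis
  proof (cases "evf G d (penGuard x1 x2 x3 x4 r1 r2 r3 r4 r5)")
    case False
    then have "\<not> (?X1 \<noteq> ?V5 \<and> ?X1 \<noteq> ?V2 \<and> ?X2 \<noteq> ?V1 \<and> ?X2 \<noteq> ?V3 \<and> ?X3 \<noteq> ?V2 \<and> ?X3 \<noteq> ?V4 \<and> ?X4 \<noteq> ?V3 \<and> ?X4 \<noteq> ?V5 \<and>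
     distinct [?X1, ?X2, ?X3, ?X4] \<and> small G ?V5 \<and> small G ?X1 \<and> small G ?X2 \<and> small G ?X3 \<and> small G ?X4)"
      using g by blast
    then show ?thesis unfolding penBody_def PenX_def evf.simps using False by blast
  next
    case True
    then have sm: "small G ?V5" "small G ?X1" "small G ?X2" "small G ?X3" "small G ?X4" using g by blast+
    have ae: "evf G d (adjE a b) \<longleftrightarrow> adj G (vt G d a) (vt G d b)" if "small G (vt G d a)" for a b
      using adjE_exact[OF d] that by blast
    have r: "evf G d (penRest x1 x2 x3 x4 r1 r2 r3 r4 r5) \<longleftrightarrow>
      (\<not> adj G ?X1 ?X2 \<and> \<not> adj G ?X1 ?X3 \<and> \<not> adj G ?X1 ?X4 \<and> \<not> adj G ?X2 ?X3 \<and> \<not> adj G ?X2 ?X4 \<and> \<not> adj G ?X3 ?X4 \<and>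
       (no_big_nb G ?V5 \<or> no_big_nb G ?X2) \<and> (no_big_nb G ?X3 \<or> no_big_nb G ?X4) \<and>
       ?X2 \<noteq> ?V5 \<and> \<not> adj G ?X2 ?V5 \<and> NoAdjOut G ?X2 ?V5 ?Vs \<and> evf G d (pathF x2 r5 r1 r2 r3 r4) \<and>
       Q3a G ?X3 ?V3 ?V4 ?X4 ?Vs \<and> evf G d (pathF x3 x4 r1 r2 r3 r4))"
      unfolding penRest_def using ae[OF sm(2)] ae[OF sm(3)] ae[OF sm(4)] evf_nobigF[OF wf simp d] sm
        q2a_sem[OF d sm(3) sm(1)] q3a_sem[OF d sm(4) sm(5)] by (simp del: evt_nbt_d)
    show ?thesis
    proof (cases "(no_big_nb G ?V5 \<or> no_big_nb G ?X2) \<and> (no_big_nb G ?X3 \<or> no_big_nb G ?X4)")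
      case False then show ?thesis unfolding penBody_def PenX_def evf.simps r by blast
    next
      case nb: True
      have p1: "evf G d (pathF x2 r5 r1 r2 r3 r4) \<longleftrightarrow> NoP3 G ?X2 ?V5 ?Vs"
        using path_sem[OF d sm(3) sm(1)] nb by blast
      have p2: "evf G d (pathF x3 x4 r1 r2 r3 r4) \<longleftrightarrow> NoP3 G ?X3 ?X4 ?Vs"
        using path_sem[OF d sm(4) sm(5)] nb by blast
      show ?thesis unfolding penBody_def PenX_def evf.simps r p1 p2 g by blast
    qed
  qed
qed


lemma pen_form: assumes d: "d \<in> darts G" and dg1: "deg G (vt G d r1) = 3"
  shows "evf G d (penR r1 r2 r3 r4 r5) \<longleftrightarrow> deg G (vt G d r2) = 3 \<and> deg G (vt G d r3) = 3 \<and> deg G (vt G d r4) = 3 \<and>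
     (\<exists>x1. adj G (vt G d r1) x1 \<and> (\<exists>x2. adj G (vt G d r2) x2 \<and> (\<exists>x3. adj G (vt G d r3) x3 \<and> (\<exists>x4. adj G (vt G d r4) x4 \<and>
        PenX G (vt G d r1) (vt G d r2) (vt G d r3) (vt G d r4) (vt G d r5) x1 x2 x3 x4))))"
proof (cases "deg G (vt G d r2) = 3 \<and> deg G (vt G d r3) = 3 \<and> deg G (vt G d r4) = 3")
  case False then show ?thesis unfolding penR_def using evf_deg3F[OF wf simp d] by auto
next
  case True
  let ?P = "PenX G (vt G d r1) (vt G d r2) (vt G d r3) (vt G d r4) (vt G d r5)"
  have e: "evt G d r1 \<in> darts G" "evt G d r2 \<in> darts G" "evt G d r3 \<in> darts G" "evt G d r4 \<in> darts G"
    using evt_in[OF wf simp d] by auto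
  have dg: "deg G (tail G (evt G d r1)) \<le> 60" "deg G (tail G (evt G d r2)) \<le> 60"
     "deg G (tail G (evt G d r3)) \<le> 60" "deg G (tail G (evt G d r4)) \<le> 60" using dg1 True by auto
  have s0: "evf G d (penR r1 r2 r3 r4 r5) \<longleftrightarrow> (\<exists>k1<60. \<exists>k2<60. \<exists>k3<60. \<exists>k4<60.
     ?P (head G (sk G k1 (evt G d r1))) (head G (sk G k2 (evt G d r2))) (head G (sk G k3 (evt G d r3))) (head G (sk G k4 (evt G d r4))))"
    unfolding penR_def using evf_deg3F[OF wf simp d] True pen_body_gen[OF d] by (simp del: evt_nbt_d)
  have s4: "(\<exists>k4<60. ?P a b c (head G (sk G k4 (evt G d r4)))) \<longleftrightarrow> (\<exists>x4. adj G (vt G d r4) x4 \<and> ?P a b c x4)" for a b c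
    using nbq_ex[OF wf simp tf e(4) dg(4), of "?P a b c"] by simp
  have s3: "(\<exists>k3<60. \<exists>x4. adj G (vt G d r4) x4 \<and> ?P a b (head G (sk G k3 (evt G d r3))) x4) \<longleftrightarrow>
      (\<exists>x3. adj G (vt G d r3) x3 \<and> (\<exists>x4. adj G (vt G d r4) x4 \<and> ?P a b x3 x4))" for a b
    using nbq_ex[OF wf simp tf e(3) dg(3), of "\<lambda>x3. \<exists>x4. adj G (vt G d r4) x4 \<and> ?P a b x3 x4"] by simp
  have s2: "(\<exists>k2<60. \<exists>x3. adj G (vt G d r3) x3 \<and> (\<exists>x4. adj G (vt G d r4) x4 \<and> ?P a (head G (sk G k2 (evt G d r2))) x3 x4)) \<longleftrightarrow>
      (\<exists>x2. adj G (vt G d r2) x2 \<and> (\<exists>x3. adj G (vt G d r3) x3 \<and> (\<exists>x4. adj G (vt G d r4) x4 \<and> ?P a x2 x3 x4)))" for a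
    using nbq_ex[OF wf simp tf e(2) dg(2), of "\<lambda>x2. \<exists>x3. adj G (vt G d r3) x3 \<and> (\<exists>x4. adj G (vt G d r4) x4 \<and> ?P a x2 x3 x4)"] by simp
  have s1: "(\<exists>k1<60. \<exists>x2. adj G (vt G d r2) x2 \<and> (\<exists>x3. adj G (vt G d r3) x3 \<and> (\<exists>x4. adj G (vt G d r4) x4 \<and> ?P (head G (sk G k1 (evt G d r1))) x2 x3 x4))) \<longleftrightarrow>
      (\<exists>x1. adj G (vt G d r1) x1 \<and> (\<exists>x2. adj G (vt G d r2) x2 \<and> (\<exists>x3. adj G (vt G d r3) x3 \<and> (\<exists>x4. adj G (vt G d r4) x4 \<and> ?P x1 x2 x3 x4))))"
    using nbq_ex[OF wf simp tf e(1) dg(1), of "\<lambda>x1. \<exists>x2. adj G (vt G d r2) x2 \<and> (\<exists>x3. adj G (vt G d r3) x3 \<and> (\<exists>x4. adj G (vt G d r4) x4 \<and> ?P x1 x2 x3 x4))"] by simp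
  show ?thesis unfolding s0 s4 s3 s2 s1 using True by blast
qed

end

definition bT :: "nat \<Rightarrow> dterm" where "bT i = scn i St"

definition tetW :: "bool \<Rightarrow> nat \<Rightarrow> form" where
  "tetW ori i = Conj (EqD (phn 4 (bT i)) (bT i)) (Conj (distF [bT i, wrt ori 4 1 (bT i), wrt ori 4 2 (bT i), wrt ori 4 3 (bT i)]) (tetR (bT i) (wrt ori 4 1 (bT i)) (wrt ori 4 2 (bT i)) (wrt ori 4 3 (bT i))))"
definition tetF :: form where "tetF = exl 60 (\<lambda>i. Disj (tetW True i) (tetW False i))"

definition octW :: "bool \<Rightarrow> nat \<Rightarrow> form" where
  "octW ori i = Conj (EqD (phn 4 (bT i)) (bT i)) (Conj (distF [bT i, wrt ori 4 1 (bT i), wrt ori 4 2 (bT i), wrt ori 4 3 (bT i)]) (octR (bT i) (wrt ori 4 1 (bT i)) (wrt ori 4 2 (bT i)) (wrt ori 4 3 (bT i))))"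
definition octF :: form where "octF = exl 60 (\<lambda>i. Disj (octW True i) (octW False i))"

definition penW :: "bool \<Rightarrow> nat \<Rightarrow> form" where
  "penW ori i = Conj (EqD (phn 5 (bT i)) (bT i)) (Conj (distF [bT i, wrt ori 5 1 (bT i), wrt ori 5 2 (bT i), wrt ori 5 3 (bT i), wrt ori 5 4 (bT i)]) (penR (bT i) (wrt ori 5 1 (bT i)) (wrt ori 5 2 (bT i)) (wrt ori 5 3 (bT i)) (wrt ori 5 4 (bT i))))"
definition penF :: form where "penF = exl 60 (\<lambda>i. Disj (penW True i) (penW False i))"

definition decW :: "bool \<Rightarrow> nat \<Rightarrow> form" where
  "decW ori i = Conj (EqD (phn 5 (bT i)) (bT i)) (Conj (distF [bT i, wrt ori 5 1 (bT i), wrt ori 5 2 (bT i), wrt ori 5 3 (bT i), wrt ori 5 4 (bT i)]) (decR (bT i) (wrt ori 5 1 (bT i)) (wrt ori 5 2 (bT i)) (wrt ori 5 3 (bT i)) (wrt ori 5 4 (bT i))))"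
definition decF :: form where "decF = exl 60 (\<lambda>i. Disj (decW True i) (decW False i))"

definition hexW :: "bool \<Rightarrow> nat \<Rightarrow> form" where
  "hexW ori i = Conj (EqD (phn 6 (bT i)) (bT i)) (Conj (distF [bT i, wrt ori 6 1 (bT i), wrt ori 6 2 (bT i), wrt ori 6 3 (bT i), wrt ori 6 4 (bT i), wrt ori 6 5 (bT i)]) (hexR (bT i) (wrt ori 6 1 (bT i)) (wrt ori 6 2 (bT i)) (wrt ori 6 3 (bT i)) (wrt ori 6 4 (bT i)) (wrt ori 6 5 (bT i))))"
definition hexF :: form where "hexF = exl 60 (\<lambda>i. Disj (hexW True i) (hexW False i))"

context fixes G :: "('v,'d) rotsys" assumes wf: "wf_rotsys G" and simp: "simple_rotsys G"
   and tf: "triangle_free G" begin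

lemma iff_trans2: "(A \<longleftrightarrow> C) \<Longrightarrow> (B \<longleftrightarrow> C) \<Longrightarrow> (A \<longleftrightarrow> B)" by blast

lemma tet_pw: assumes d: "d \<in> darts G" and f: "facial G [vt G d r1, vt G d r2, vt G d r3, vt G d r4]" and dg: "deg G (vt G d r1) = 3"
  shows "evf G d (tetR r1 r2 r3 r4) \<longleftrightarrow> secure_tetragram G (vt G d r1) (vt G d r2) (vt G d r3) (vt G d r4)"
  by (rule iff_trans2[OF tet_form[OF wf simp tf d f dg] tet_graph[OF wf simp tf f dg]])
lemma oct_pw: assumes d: "d \<in> darts G" and f: "facial G [vt G d r1, vt G d r2, vt G d r3, vt G d r4]" and dg: "deg G (vt G d r1) = 3"
  shows "evf G d (octR r1 r2 r3 r4) \<longleftrightarrow> secure_octagram G (vt G d r1) (vt G d r2) (vt G d r3) (vt G d r4)"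
  by (rule iff_trans2[OF oct_form[OF wf simp tf d] oct_graph[OF wf simp tf f dg]])
lemma pen_pw: assumes d: "d \<in> darts G" and f: "facial G [vt G d r1, vt G d r2, vt G d r3, vt G d r4, vt G d r5]" and dg: "deg G (vt G d r1) = 3"
  shows "evf G d (penR r1 r2 r3 r4 r5) \<longleftrightarrow> secure_pentagram G (vt G d r1) (vt G d r2) (vt G d r3) (vt G d r4) (vt G d r5)"
  by (rule iff_trans2[OF pen_form[OF wf simp tf d dg] pen_graph[OF wf simp tf f dg]])
lemma dec_pw: assumes d: "d \<in> darts G" and f: "facial G [vt G d r1, vt G d r2, vt G d r3, vt G d r4, vt G d r5]" and dg: "deg G (vt G d r1) = 3"
  shows "evf G d (decR r1 r2 r3 r4 r5) \<longleftrightarrow> secure_decagram G (vt G d r1) (vt G d r2) (vt G d r3) (vt G d r4) (vt G d r5)"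
  by (rule iff_trans2[OF dec_form[OF wf simp tf d dg] dec_graph[OF wf simp tf f dg]])
lemma hex_pw: assumes d: "d \<in> darts G" and f: "facial G [vt G d r1, vt G d r2, vt G d r3, vt G d r4, vt G d r5, vt G d r6]" and dg: "deg G (vt G d r1) = 3"
  shows "evf G d (hexR r1 r2 r3 r4 r5 r6) \<longleftrightarrow> secure_hexagram G (vt G d r1) (vt G d r2) (vt G d r3) (vt G d r4) (vt G d r5) (vt G d r6)"
  by (rule iff_trans2[OF hex_form[OF wf simp tf d f dg] hex_graph[OF wf simp tf f dg]])


lemma tet_fac: "secure_tetragram G v1 v2 v3 v4 \<Longrightarrow> facial G [v1, v2, v3, v4]"
  unfolding secure_tetragram_def tetragram_def by blast

lemma tet_all: assumes d: "d \<in> darts G" and dg: "deg G (tail G d) = 3"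
  shows "evf G d tetF \<longleftrightarrow> (\<exists>v2 v3 v4. secure_tetragram G (tail G d) v2 v3 v4)"
proof -
  have dg60: "deg G (tail G d) \<le> 60" using dg by simp
  have tsk: "tail G (sk G i d) = tail G d" for i using sk_in[OF wf d] by simp
  have pw: "evf G d (tetW ori i) \<longleftrightarrow> (phi G ^^ 4) (sk G i d) = sk G i d \<and> distinct [tail G d, tail G (wr G ori 4 1 (sk G i d)), tail G (wr G ori 4 2 (sk G i d)), tail G (wr G ori 4 3 (sk G i d))] \<and>
      secure_tetragram G (tail G d) (tail G (wr G ori 4 1 (sk G i d))) (tail G (wr G ori 4 2 (sk G i d))) (tail G (wr G ori 4 3 (sk G i d)))" if i: "i < 60" for i ori
  proof (cases "(phi G ^^ 4) (sk G i d) = sk G i d \<and> distinct [tail G d, tail G (wr G ori 4 1 (sk G i d)), tail G (wr G ori 4 2 (sk G i d)), tail G (wr G ori 4 3 (sk G i d))]")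
    case False then show ?thesis unfolding tetW_def bT_def by (auto simp add: evf_distF tsk)
  next
    case True
    have fi: "facial G [tail G d, tail G (wr G ori 4 1 (sk G i d)), tail G (wr G ori 4 2 (sk G i d)), tail G (wr G ori 4 3 (sk G i d))] \<longleftrightarrow> (4::nat) \<ge> 3 \<and> distinct [tail G d, tail G (wr G ori 4 1 (sk G i d)), tail G (wr G ori 4 2 (sk G i d)), tail G (wr G ori 4 3 (sk G i d))] \<and>
      (\<exists>i'<60. \<exists>ori'. (phi G ^^ 4) (sk G i' d) = sk G i' d \<and>
        (\<forall>j. 1 \<le> j \<and> j < 4 \<longrightarrow> tail G (wr G ori' 4 j (sk G i' d)) = [tail G d, tail G (wr G ori 4 1 (sk G i d)), tail G (wr G ori 4 2 (sk G i d)), tail G (wr G ori 4 3 (sk G i d))] ! j))"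
      by (rule facial_iff[OF wf simp d dg60]) simp_all
    have fac: "facial G [tail G d, tail G (wr G ori 4 1 (sk G i d)), tail G (wr G ori 4 2 (sk G i d)), tail G (wr G ori 4 3 (sk G i d))]" unfolding fi
      apply (intro conjI)
        apply simp
      using True apply simp
      apply (rule exI[of _ i])
      apply (intro conjI)
      using i apply simp
      apply (rule exI[of _ ori])
      apply (intro conjI)
      using True apply simp
      apply (rule all_1_4[OF wf simp, THEN iffD2])
      by simp
    have f': "facial G [vt G d (bT i), vt G d (wrt ori 4 1 (bT i)), vt G d (wrt ori 4 2 (bT i)), vt G d (wrt ori 4 3 (bT i))]" using fac by (simp add: bT_def tsk)
    have dg': "deg G (vt G d (bT i)) = 3" using dg by (simp add: bT_def tsk)
    show ?thesis using tet_pw[OF d f' dg'] True unfolding tetW_def by (simp add: bT_def tsk evf_distF)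
  qed
  have "evf G d tetF \<longleftrightarrow> (\<exists>i<60. \<exists>ori. evf G d (tetW ori i))"
    unfolding tetF_def by (simp add: ex_bool_eq)
  also have "\<dots> \<longleftrightarrow> (\<exists>i<60. \<exists>ori. (phi G ^^ 4) (sk G i d) = sk G i d \<and> distinct [tail G d, tail G (wr G ori 4 1 (sk G i d)), tail G (wr G ori 4 2 (sk G i d)), tail G (wr G ori 4 3 (sk G i d))] \<and>
      secure_tetragram G (tail G d) (tail G (wr G ori 4 1 (sk G i d))) (tail G (wr G ori 4 2 (sk G i d))) (tail G (wr G ori 4 3 (sk G i d))))"
    using pw by blast
  also have "\<dots> \<longleftrightarrow> (\<exists>v2 v3 v4. facial G [tail G d, v2, v3, v4] \<and> secure_tetragram G (tail G d) v2 v3 v4)"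
    using ex4[OF wf simp d dg60, of "secure_tetragram G (tail G d)"] by simp
  also have "\<dots> \<longleftrightarrow> (\<exists>v2 v3 v4. secure_tetragram G (tail G d) v2 v3 v4)"
    using tet_fac by blast
  finally show ?thesis .
qed

lemma oct_fac: "secure_octagram G v1 v2 v3 v4 \<Longrightarrow> facial G [v1, v2, v3, v4]"
  unfolding secure_octagram_def octagram_def tetragram_def by blast

lemma oct_all: assumes d: "d \<in> darts G" and dg: "deg G (tail G d) = 3"
  shows "evf G d octF \<longleftrightarrow> (\<exists>v2 v3 v4. secure_octagram G (tail G d) v2 v3 v4)"
proof -
  have dg60: "deg G (tail G d) \<le> 60" using dg by simp
  have tsk: "tail G (sk G i d) = tail G d" for i using sk_in[OF wf d] by simp
  have pw: "evf G d (octW ori i) \<longleftrightarrow> (phi G ^^ 4) (sk G i d) = sk G i d \<and> distinct [tail G d, tail G (wr G ori 4 1 (sk G i d)), tail G (wr G ori 4 2 (sk G i d)), tail G (wr G ori 4 3 (sk G i d))] \<and>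
      secure_octagram G (tail G d) (tail G (wr G ori 4 1 (sk G i d))) (tail G (wr G ori 4 2 (sk G i d))) (tail G (wr G ori 4 3 (sk G i d)))" if i: "i < 60" for i ori
  proof (cases "(phi G ^^ 4) (sk G i d) = sk G i d \<and> distinct [tail G d, tail G (wr G ori 4 1 (sk G i d)), tail G (wr G ori 4 2 (sk G i d)), tail G (wr G ori 4 3 (sk G i d))]")
    case False then show ?thesis unfolding octW_def bT_def by (auto simp add: evf_distF tsk)
  next
    case True
    have fi: "facial G [tail G d, tail G (wr G ori 4 1 (sk G i d)), tail G (wr G ori 4 2 (sk G i d)), tail G (wr G ori 4 3 (sk G i d))] \<longleftrightarrow> (4::nat) \<ge> 3 \<and> distinct [tail G d, tail G (wr G ori 4 1 (sk G i d)), tail G (wr G ori 4 2 (sk G i d)), tail G (wr G ori 4 3 (sk G i d))] \<and>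
      (\<exists>i'<60. \<exists>ori'. (phi G ^^ 4) (sk G i' d) = sk G i' d \<and>
        (\<forall>j. 1 \<le> j \<and> j < 4 \<longrightarrow> tail G (wr G ori' 4 j (sk G i' d)) = [tail G d, tail G (wr G ori 4 1 (sk G i d)), tail G (wr G ori 4 2 (sk G i d)), tail G (wr G ori 4 3 (sk G i d))] ! j))"
      by (rule facial_iff[OF wf simp d dg60]) simp_all
    have fac: "facial G [tail G d, tail G (wr G ori 4 1 (sk G i d)), tail G (wr G ori 4 2 (sk G i d)), tail G (wr G ori 4 3 (sk G i d))]" unfolding fi
      apply (intro conjI)
        apply simp
      using True apply simp
      apply (rule exI[of _ i])
      apply (intro conjI)
      using i apply simp
      apply (rule exI[of _ ori])
      apply (intro conjI)
      using True apply simp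
      apply (rule all_1_4[OF wf simp, THEN iffD2])
      by simp
    have f': "facial G [vt G d (bT i), vt G d (wrt ori 4 1 (bT i)), vt G d (wrt ori 4 2 (bT i)), vt G d (wrt ori 4 3 (bT i))]" using fac by (simp add: bT_def tsk)
    have dg': "deg G (vt G d (bT i)) = 3" using dg by (simp add: bT_def tsk)
    show ?thesis using oct_pw[OF d f' dg'] True unfolding octW_def by (simp add: bT_def tsk evf_distF)
  qed
  have "evf G d octF \<longleftrightarrow> (\<exists>i<60. \<exists>ori. evf G d (octW ori i))"
    unfolding octF_def by (simp add: ex_bool_eq)
  also have "\<dots> \<longleftrightarrow> (\<exists>i<60. \<exists>ori. (phi G ^^ 4) (sk G i d) = sk G i d \<and> distinct [tail G d, tail G (wr G ori 4 1 (sk G i d)), tail G (wr G ori 4 2 (sk G i d)), tail G (wr G ori 4 3 (sk G i d))] \<and>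
      secure_octagram G (tail G d) (tail G (wr G ori 4 1 (sk G i d))) (tail G (wr G ori 4 2 (sk G i d))) (tail G (wr G ori 4 3 (sk G i d))))"
    using pw by blast
  also have "\<dots> \<longleftrightarrow> (\<exists>v2 v3 v4. facial G [tail G d, v2, v3, v4] \<and> secure_octagram G (tail G d) v2 v3 v4)"
    using ex4[OF wf simp d dg60, of "secure_octagram G (tail G d)"] by simp
  also have "\<dots> \<longleftrightarrow> (\<exists>v2 v3 v4. secure_octagram G (tail G d) v2 v3 v4)"
    using oct_fac by blast
  finally show ?thesis .
qed

lemma pen_fac: "secure_pentagram G v1 v2 v3 v4 v5 \<Longrightarrow> facial G [v1, v2, v3, v4, v5]"
  unfolding secure_pentagram_def pentagram_def by blast

lemma pen_all: assumes d: "d \<in> darts G" and dg: "deg G (tail G d) = 3"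
  shows "evf G d penF \<longleftrightarrow> (\<exists>v2 v3 v4 v5. secure_pentagram G (tail G d) v2 v3 v4 v5)"
proof -
  have dg60: "deg G (tail G d) \<le> 60" using dg by simp
  have tsk: "tail G (sk G i d) = tail G d" for i using sk_in[OF wf d] by simp
  have pw: "evf G d (penW ori i) \<longleftrightarrow> (phi G ^^ 5) (sk G i d) = sk G i d \<and> distinct [tail G d, tail G (wr G ori 5 1 (sk G i d)), tail G (wr G ori 5 2 (sk G i d)), tail G (wr G ori 5 3 (sk G i d)), tail G (wr G ori 5 4 (sk G i d))] \<and>
      secure_pentagram G (tail G d) (tail G (wr G ori 5 1 (sk G i d))) (tail G (wr G ori 5 2 (sk G i d))) (tail G (wr G ori 5 3 (sk G i d))) (tail G (wr G ori 5 4 (sk G i d)))" if i: "i < 60" for i ori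
  proof (cases "(phi G ^^ 5) (sk G i d) = sk G i d \<and> distinct [tail G d, tail G (wr G ori 5 1 (sk G i d)), tail G (wr G ori 5 2 (sk G i d)), tail G (wr G ori 5 3 (sk G i d)), tail G (wr G ori 5 4 (sk G i d))]")
    case False then show ?thesis unfolding penW_def bT_def by (auto simp add: evf_distF tsk)
  next
    case True
    have fi: "facial G [tail G d, tail G (wr G ori 5 1 (sk G i d)), tail G (wr G ori 5 2 (sk G i d)), tail G (wr G ori 5 3 (sk G i d)), tail G (wr G ori 5 4 (sk G i d))] \<longleftrightarrow> (5::nat) \<ge> 3 \<and> distinct [tail G d, tail G (wr G ori 5 1 (sk G i d)), tail G (wr G ori 5 2 (sk G i d)), tail G (wr G ori 5 3 (sk G i d)), tail G (wr G ori 5 4 (sk G i d))] \<and>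
      (\<exists>i'<60. \<exists>ori'. (phi G ^^ 5) (sk G i' d) = sk G i' d \<and>
        (\<forall>j. 1 \<le> j \<and> j < 5 \<longrightarrow> tail G (wr G ori' 5 j (sk G i' d)) = [tail G d, tail G (wr G ori 5 1 (sk G i d)), tail G (wr G ori 5 2 (sk G i d)), tail G (wr G ori 5 3 (sk G i d)), tail G (wr G ori 5 4 (sk G i d))] ! j))"
      by (rule facial_iff[OF wf simp d dg60]) simp_all
    have fac: "facial G [tail G d, tail G (wr G ori 5 1 (sk G i d)), tail G (wr G ori 5 2 (sk G i d)), tail G (wr G ori 5 3 (sk G i d)), tail G (wr G ori 5 4 (sk G i d))]" unfolding fi
      apply (intro conjI)
        apply simp
      using True apply simp
      apply (rule exI[of _ i])
      apply (intro conjI)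
      using i apply simp
      apply (rule exI[of _ ori])
      apply (intro conjI)
      using True apply simp
      apply (rule all_1_5[OF wf simp, THEN iffD2])
      by simp
    have f': "facial G [vt G d (bT i), vt G d (wrt ori 5 1 (bT i)), vt G d (wrt ori 5 2 (bT i)), vt G d (wrt ori 5 3 (bT i)), vt G d (wrt ori 5 4 (bT i))]" using fac by (simp add: bT_def tsk)
    have dg': "deg G (vt G d (bT i)) = 3" using dg by (simp add: bT_def tsk)
    show ?thesis using pen_pw[OF d f' dg'] True unfolding penW_def by (simp add: bT_def tsk evf_distF)
  qed
  have "evf G d penF \<longleftrightarrow> (\<exists>i<60. \<exists>ori. evf G d (penW ori i))"
    unfolding penF_def by (simp add: ex_bool_eq)
  also have "\<dots> \<longleftrightarrow> (\<exists>i<60. \<exists>ori. (phi G ^^ 5) (sk G i d) = sk G i d \<and> distinct [tail G d, tail G (wr G ori 5 1 (sk G i d)), tail G (wr G ori 5 2 (sk G i d)), tail G (wr G ori 5 3 (sk G i d)), tail G (wr G ori 5 4 (sk G i d))] \<and>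
      secure_pentagram G (tail G d) (tail G (wr G ori 5 1 (sk G i d))) (tail G (wr G ori 5 2 (sk G i d))) (tail G (wr G ori 5 3 (sk G i d))) (tail G (wr G ori 5 4 (sk G i d))))"
    using pw by blast
  also have "\<dots> \<longleftrightarrow> (\<exists>v2 v3 v4 v5. facial G [tail G d, v2, v3, v4, v5] \<and> secure_pentagram G (tail G d) v2 v3 v4 v5)"
    using ex5[OF wf simp d dg60, of "secure_pentagram G (tail G d)"] by simp
  also have "\<dots> \<longleftrightarrow> (\<exists>v2 v3 v4 v5. secure_pentagram G (tail G d) v2 v3 v4 v5)"
    using pen_fac by blast
  finally show ?thesis .
qed

lemma dec_fac: "secure_decagram G v1 v2 v3 v4 v5 \<Longrightarrow> facial G [v1, v2, v3, v4, v5]"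
  unfolding secure_decagram_def decagram_def pentagram_def by blast

lemma dec_all: assumes d: "d \<in> darts G" and dg: "deg G (tail G d) = 3"
  shows "evf G d decF \<longleftrightarrow> (\<exists>v2 v3 v4 v5. secure_decagram G (tail G d) v2 v3 v4 v5)"
proof -
  have dg60: "deg G (tail G d) \<le> 60" using dg by simp
  have tsk: "tail G (sk G i d) = tail G d" for i using sk_in[OF wf d] by simp
  have pw: "evf G d (decW ori i) \<longleftrightarrow> (phi G ^^ 5) (sk G i d) = sk G i d \<and> distinct [tail G d, tail G (wr G ori 5 1 (sk G i d)), tail G (wr G ori 5 2 (sk G i d)), tail G (wr G ori 5 3 (sk G i d)), tail G (wr G ori 5 4 (sk G i d))] \<and>
      secure_decagram G (tail G d) (tail G (wr G ori 5 1 (sk G i d))) (tail G (wr G ori 5 2 (sk G i d))) (tail G (wr G ori 5 3 (sk G i d))) (tail G (wr G ori 5 4 (sk G i d)))" if i: "i < 60" for i ori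
  proof (cases "(phi G ^^ 5) (sk G i d) = sk G i d \<and> distinct [tail G d, tail G (wr G ori 5 1 (sk G i d)), tail G (wr G ori 5 2 (sk G i d)), tail G (wr G ori 5 3 (sk G i d)), tail G (wr G ori 5 4 (sk G i d))]")
    case False then show ?thesis unfolding decW_def bT_def by (auto simp add: evf_distF tsk)
  next
    case True
    have fi: "facial G [tail G d, tail G (wr G ori 5 1 (sk G i d)), tail G (wr G ori 5 2 (sk G i d)), tail G (wr G ori 5 3 (sk G i d)), tail G (wr G ori 5 4 (sk G i d))] \<longleftrightarrow> (5::nat) \<ge> 3 \<and> distinct [tail G d, tail G (wr G ori 5 1 (sk G i d)), tail G (wr G ori 5 2 (sk G i d)), tail G (wr G ori 5 3 (sk G i d)), tail G (wr G ori 5 4 (sk G i d))] \<and>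
      (\<exists>i'<60. \<exists>ori'. (phi G ^^ 5) (sk G i' d) = sk G i' d \<and>
        (\<forall>j. 1 \<le> j \<and> j < 5 \<longrightarrow> tail G (wr G ori' 5 j (sk G i' d)) = [tail G d, tail G (wr G ori 5 1 (sk G i d)), tail G (wr G ori 5 2 (sk G i d)), tail G (wr G ori 5 3 (sk G i d)), tail G (wr G ori 5 4 (sk G i d))] ! j))"
      by (rule facial_iff[OF wf simp d dg60]) simp_all
    have fac: "facial G [tail G d, tail G (wr G ori 5 1 (sk G i d)), tail G (wr G ori 5 2 (sk G i d)), tail G (wr G ori 5 3 (sk G i d)), tail G (wr G ori 5 4 (sk G i d))]" unfolding fi
      apply (intro conjI)
        apply simp
      using True apply simp
      apply (rule exI[of _ i])
      apply (intro conjI)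
      using i apply simp
      apply (rule exI[of _ ori])
      apply (intro conjI)
      using True apply simp
      apply (rule all_1_5[OF wf simp, THEN iffD2])
      by simp
    have f': "facial G [vt G d (bT i), vt G d (wrt ori 5 1 (bT i)), vt G d (wrt ori 5 2 (bT i)), vt G d (wrt ori 5 3 (bT i)), vt G d (wrt ori 5 4 (bT i))]" using fac by (simp add: bT_def tsk)
    have dg': "deg G (vt G d (bT i)) = 3" using dg by (simp add: bT_def tsk)
    show ?thesis using dec_pw[OF d f' dg'] True unfolding decW_def by (simp add: bT_def tsk evf_distF)
  qed
  have "evf G d decF \<longleftrightarrow> (\<exists>i<60. \<exists>ori. evf G d (decW ori i))"
    unfolding decF_def by (simp add: ex_bool_eq)
  also have "\<dots> \<longleftrightarrow> (\<exists>i<60. \<exists>ori. (phi G ^^ 5) (sk G i d) = sk G i d \<and> distinct [tail G d, tail G (wr G ori 5 1 (sk G i d)), tail G (wr G ori 5 2 (sk G i d)), tail G (wr G ori 5 3 (sk G i d)), tail G (wr G ori 5 4 (sk G i d))] \<and>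
      secure_decagram G (tail G d) (tail G (wr G ori 5 1 (sk G i d))) (tail G (wr G ori 5 2 (sk G i d))) (tail G (wr G ori 5 3 (sk G i d))) (tail G (wr G ori 5 4 (sk G i d))))"
    using pw by blast
  also have "\<dots> \<longleftrightarrow> (\<exists>v2 v3 v4 v5. facial G [tail G d, v2, v3, v4, v5] \<and> secure_decagram G (tail G d) v2 v3 v4 v5)"
    using ex5[OF wf simp d dg60, of "secure_decagram G (tail G d)"] by simp
  also have "\<dots> \<longleftrightarrow> (\<exists>v2 v3 v4 v5. secure_decagram G (tail G d) v2 v3 v4 v5)"
    using dec_fac by blast
  finally show ?thesis .
qed

lemma hex_fac: "secure_hexagram G v1 v2 v3 v4 v5 v6 \<Longrightarrow> facial G [v1, v2, v3, v4, v5, v6]"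
  unfolding secure_hexagram_def hexagram_def by blast

lemma hex_all: assumes d: "d \<in> darts G" and dg: "deg G (tail G d) = 3"
  shows "evf G d hexF \<longleftrightarrow> (\<exists>v2 v3 v4 v5 v6. secure_hexagram G (tail G d) v2 v3 v4 v5 v6)"
proof -
  have dg60: "deg G (tail G d) \<le> 60" using dg by simp
  have tsk: "tail G (sk G i d) = tail G d" for i using sk_in[OF wf d] by simp
  have pw: "evf G d (hexW ori i) \<longleftrightarrow> (phi G ^^ 6) (sk G i d) = sk G i d \<and> distinct [tail G d, tail G (wr G ori 6 1 (sk G i d)), tail G (wr G ori 6 2 (sk G i d)), tail G (wr G ori 6 3 (sk G i d)), tail G (wr G ori 6 4 (sk G i d)), tail G (wr G ori 6 5 (sk G i d))] \<and>
      secure_hexagram G (tail G d) (tail G (wr G ori 6 1 (sk G i d))) (tail G (wr G ori 6 2 (sk G i d))) (tail G (wr G ori 6 3 (sk G i d))) (tail G (wr G ori 6 4 (sk G i d))) (tail G (wr G ori 6 5 (sk G i d)))" if i: "i < 60" for i ori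
  proof (cases "(phi G ^^ 6) (sk G i d) = sk G i d \<and> distinct [tail G d, tail G (wr G ori 6 1 (sk G i d)), tail G (wr G ori 6 2 (sk G i d)), tail G (wr G ori 6 3 (sk G i d)), tail G (wr G ori 6 4 (sk G i d)), tail G (wr G ori 6 5 (sk G i d))]")
    case False then show ?thesis unfolding hexW_def bT_def by (auto simp add: evf_distF tsk)
  next
    case True
    have fi: "facial G [tail G d, tail G (wr G ori 6 1 (sk G i d)), tail G (wr G ori 6 2 (sk G i d)), tail G (wr G ori 6 3 (sk G i d)), tail G (wr G ori 6 4 (sk G i d)), tail G (wr G ori 6 5 (sk G i d))] \<longleftrightarrow> (6::nat) \<ge> 3 \<and> distinct [tail G d, tail G (wr G ori 6 1 (sk G i d)), tail G (wr G ori 6 2 (sk G i d)), tail G (wr G ori 6 3 (sk G i d)), tail G (wr G ori 6 4 (sk G i d)), tail G (wr G ori 6 5 (sk G i d))] \<and>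
      (\<exists>i'<60. \<exists>ori'. (phi G ^^ 6) (sk G i' d) = sk G i' d \<and>
        (\<forall>j. 1 \<le> j \<and> j < 6 \<longrightarrow> tail G (wr G ori' 6 j (sk G i' d)) = [tail G d, tail G (wr G ori 6 1 (sk G i d)), tail G (wr G ori 6 2 (sk G i d)), tail G (wr G ori 6 3 (sk G i d)), tail G (wr G ori 6 4 (sk G i d)), tail G (wr G ori 6 5 (sk G i d))] ! j))"
      by (rule facial_iff[OF wf simp d dg60]) simp_all
    have fac: "facial G [tail G d, tail G (wr G ori 6 1 (sk G i d)), tail G (wr G ori 6 2 (sk G i d)), tail G (wr G ori 6 3 (sk G i d)), tail G (wr G ori 6 4 (sk G i d)), tail G (wr G ori 6 5 (sk G i d))]" unfolding fi
      apply (intro conjI)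
        apply simp
      using True apply simp
      apply (rule exI[of _ i])
      apply (intro conjI)
      using i apply simp
      apply (rule exI[of _ ori])
      apply (intro conjI)
      using True apply simp
      apply (rule all_1_6[OF wf simp, THEN iffD2])
      by simp
    have f': "facial G [vt G d (bT i), vt G d (wrt ori 6 1 (bT i)), vt G d (wrt ori 6 2 (bT i)), vt G d (wrt ori 6 3 (bT i)), vt G d (wrt ori 6 4 (bT i)), vt G d (wrt ori 6 5 (bT i))]" using fac by (simp add: bT_def tsk)
    have dg': "deg G (vt G d (bT i)) = 3" using dg by (simp add: bT_def tsk)
    show ?thesis using hex_pw[OF d f' dg'] True unfolding hexW_def by (simp add: bT_def tsk evf_distF)
  qed
  have "evf G d hexF \<longleftrightarrow> (\<exists>i<60. \<exists>ori. evf G d (hexW ori i))"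
    unfolding hexF_def by (simp add: ex_bool_eq)
  also have "\<dots> \<longleftrightarrow> (\<exists>i<60. \<exists>ori. (phi G ^^ 6) (sk G i d) = sk G i d \<and> distinct [tail G d, tail G (wr G ori 6 1 (sk G i d)), tail G (wr G ori 6 2 (sk G i d)), tail G (wr G ori 6 3 (sk G i d)), tail G (wr G ori 6 4 (sk G i d)), tail G (wr G ori 6 5 (sk G i d))] \<and>
      secure_hexagram G (tail G d) (tail G (wr G ori 6 1 (sk G i d))) (tail G (wr G ori 6 2 (sk G i d))) (tail G (wr G ori 6 3 (sk G i d))) (tail G (wr G ori 6 4 (sk G i d))) (tail G (wr G ori 6 5 (sk G i d))))"
    using pw by blast
  also have "\<dots> \<longleftrightarrow> (\<exists>v2 v3 v4 v5 v6. facial G [tail G d, v2, v3, v4, v5, v6] \<and> secure_hexagram G (tail G d) v2 v3 v4 v5 v6)"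
    using ex6[OF wf simp d dg60, of "secure_hexagram G (tail G d)"] by simp
  also have "\<dots> \<longleftrightarrow> (\<exists>v2 v3 v4 v5 v6. secure_hexagram G (tail G d) v2 v3 v4 v5 v6)"
    using hex_fac by blast
  finally show ?thesis .
qed

end

definition monoF :: form where "monoF = Disj (EqD (scn 1 St) St) (EqD (scn 2 St) St)"
definition PhiF :: form where
  "PhiF = Disj monoF (Conj (deg3F St) (Disj tetF (Disj octF (Disj penF (Disj decF hexF)))))"

context fixes G :: "('v,'d) rotsys" assumes wf: "wf_rotsys G" and simp: "simple_rotsys G"
   and tf: "triangle_free G" begin

lemma mono_iff: assumes d: "d \<in> darts G"
  shows "evf G d monoF \<longleftrightarrow> deg G (tail G d) \<le> 2"
proof -
  have "evf G d monoF \<longleftrightarrow> (sk G 1 d = d \<or> sk G 2 d = d)" unfolding monoF_def by simp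
  also have "\<dots> \<longleftrightarrow> deg G (tail G d) \<le> 2"
    unfolding deg_le_iff[OF wf d]
  proof
    assume "sk G 1 d = d \<or> sk G 2 d = d"
    then show "\<exists>k>0. k \<le> 2 \<and> sk G k d = d"
    proof
      assume "sk G 1 d = d" then show ?thesis by (intro exI[of _ 1]) simp
    next
      assume "sk G 2 d = d" then show ?thesis by (intro exI[of _ 2]) simp
    qed
  next
    assume "\<exists>k>0. k \<le> 2 \<and> sk G k d = d"
    then obtain k where "k>0" "k \<le> 2" "sk G k d = d" by blast
    moreover have "k = 1 \<or> k = 2" using calculation by linarith
    ultimately show "sk G 1 d = d \<or> sk G 2 d = d" by blast
  qed
  finally show ?thesis .
qed

lemma main_equiv: assumes d: "d \<in> darts G"
  shows "evf G d PhiF \<longleftrightarrow> has_secure_multigram G (tail G d)"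
proof -
  have vv: "tail G d \<in> verts G" using wf_twin[OF wf d] by blast
  have mono: "monogram G (tail G d) \<longleftrightarrow> deg G (tail G d) \<le> 2" unfolding monogram_def using vv by blast
  have d3: "evf G d (deg3F St) \<longleftrightarrow> deg G (tail G d) = 3" using evf_deg3F[OF wf simp d, of St] by simp
  have others: "((\<exists>v2 v3 v4. secure_tetragram G (tail G d) v2 v3 v4) \<or>
     (\<exists>v2 v3 v4. secure_octagram G (tail G d) v2 v3 v4) \<or>
     (\<exists>v2 v3 v4 v5. secure_pentagram G (tail G d) v2 v3 v4 v5) \<or>
     (\<exists>v2 v3 v4 v5. secure_decagram G (tail G d) v2 v3 v4 v5) \<or>
     (\<exists>v2 v3 v4 v5 v6. secure_hexagram G (tail G d) v2 v3 v4 v5 v6)) \<Longrightarrow> deg G (tail G d) = 3"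
    unfolding secure_tetragram_def secure_octagram_def octagram_def secure_pentagram_def pentagram_def
      secure_decagram_def decagram_def secure_hexagram_def by blast
  show ?thesis
  proof (cases "deg G (tail G d) = 3")
    case True
    show ?thesis unfolding PhiF_def has_secure_multigram_def evf.simps mono_iff[OF d] mono d3
      tet_all[OF wf simp tf d True] oct_all[OF wf simp tf d True] pen_all[OF wf simp tf d True]
      dec_all[OF wf simp tf d True] hex_all[OF wf simp tf d True] using True by simp
  next
    case False
    show ?thesis unfolding PhiF_def has_secure_multigram_def evf.simps mono_iff[OF d] mono d3
      using False others by blast
  qed
qed

end

theorem lemma4p2:
  "\<exists>T :: qtree. \<forall>(G :: ('v, 'd) rotsys) v ds.
     plane_rotsys G \<and> triangle_free G \<and> v \<in> verts G \<and> start_state G v ds \<longrightarrow>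
     (run G T ds \<longleftrightarrow> has_secure_multigram G v)"
proof (intro exI allI impI)
  fix G :: "('v, 'd) rotsys" and v ds
  assume H: "plane_rotsys G \<and> triangle_free G \<and> v \<in> verts G \<and> start_state G v ds"
  have wf: "wf_rotsys G" and sp: "simple_rotsys G" using H unfolding plane_rotsys_def by blast+
  have tf: "triangle_free G" and vv: "v \<in> verts G" and ss: "start_state G v ds" using H by blast+
  show "run G (IsNil (Leaf True) (cf PhiF 1 (\<lambda>_. Leaf True) (\<lambda>_. Leaf False))) ds \<longleftrightarrow> has_secure_multigram G v"
  proof (cases "ds = []")
    case True
    then have nd: "\<forall>d\<in>darts G. tail G d \<noteq> v" using ss unfolding start_state_def by auto
    have e: "{d \<in> darts G. tail G d = v} = {}" using nd by blast
    have "deg G v = 0" unfolding deg_def e by simp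
    then have "monogram G v" unfolding monogram_def using vv by simp
    then show ?thesis using True unfolding has_secure_multigram_def by simp
  next
    case False
    then obtain d where d: "d \<in> darts G" "tail G d = v" "ds = [d]" using ss unfolding start_state_def by auto
    have "run G (IsNil (Leaf True) (cf PhiF 1 (\<lambda>_. Leaf True) (\<lambda>_. Leaf False))) ds = evf G d PhiF"
      using d(3) compile_single by simp
    also have "\<dots> \<longleftrightarrow> has_secure_multigram G v" using main_equiv[OF wf sp tf d(1)] d(2) by simp
    finally show ?thesis .
  qed
qed

end
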